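(* Let $(C,\chi)$ be a Hopf heap and let $\mathrm{Tn}^r C\subseteq\mathrm{End}_{\mathbb{F}}(C)$ be the linear span of all right translations $\tau_a^b$, $a,b\in C$. (1) $\mathrm{Tn}^r C$ is a bialgebra with multiplication the opposite composition, i.e. $\tau_a^b\tau_c^d=\tau_c^d\circ\tau_a^b=\tau_a^{[b,c,d]}$, identity $\mathrm{id}_C$, and (well-defined) coproduct and counit $\Delta(\tau_a^b)=\sum\tau_{a_{(2)}}^{b_{(1)}}\otimes\tau_{a_{(1)}}^{b_{(2)}}$, $\varepsilon(\tau_a^b)=\varepsilon(a)\varepsilon(b)$. (2) If $(C,\chi)$ admits a Grunspan map $\vartheta$, then $\mathrm{Tn}^r C$ is a Hopf algebra with antipode $S(\tau_a^b)=\tau_b^{\vartheta(a)}$. (3) If $f:C\to D$ is a morphism of Hopf heaps, then $\mathrm{Tn}^r f:\mathrm{Tn}^r C\to\mathrm{Tn}^r D$, $\tau_a^b\mapsto\tau_{f(a)}^{f(b)}$, is a (well-defined) bialgebra map, and a Hopf algebra map when both have Grunspan maps. (4) $C\mapsto\mathrm{Tn}^r C$, $f\mapsto\mathrm{Tn}^r f$ is a functor from Hopf heaps to bialgebras (from Hopf heaps with Grunspan maps to Hopf algebras).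
   Context: Work over a field $\mathbb{F}$; coalgebras are coassociative, counital, nonzero, with Sweedler notation; $C^{\mathrm{co}}$ is the co-opposite coalgebra. A Hopf heap is a coalgebra $C$ with a coalgebra map $\chi:C\otimes C^{\mathrm{co}}\otimes C\to C$, $a\otimes b\otimes c\mapsto[a,b,c]$, such that $[[a,b,c],d,e]=[a,b,[c,d,e]]$ and $\sum[c_{(1)},c_{(2)},a]=\sum[a,c_{(1)},c_{(2)}]=\varepsilon(c)a$. A morphism of Hopf heaps is a coalgebra map $f$ with $f([a,b,c])=[f(a),f(b),f(c)]$. The right $(a,b)$-translation is $\tau_a^b:C\to C$, $c\mapsto[c,a,b]$. A Grunspan map is a coalgebra map $\vartheta:C\to C$ with $[[a,b,\vartheta(c)],d,e]=[a,[d,c,b],e]$ for all $a,b,c,d,e$. *)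

theory Defs
  imports Main "HOL-Library.Function_Algebras"
begin

text \<open>A vector space over the field 'k is realised as a subspace of the
function space 'z => 'k (pointwise operations, from Function_Algebras).
The tensor product of two such subspaces U, W is realised as the span of the
functions tens u w in ('z * 'y => 'k); the natural map from the abstract tensor
product into this function space is injective, so this is a faithful model.
An element t of U (x) W is handled through its representations
t = sum of tens u_i w_i with u_i in U, w_i in W (Sweedler notation).\<close>

definition sc :: "'k::field \<Rightarrow> ('z \<Rightarrow> 'k) \<Rightarrow> ('z \<Rightarrow> 'k)" where
  "sc c v = (\<lambda>x. c * v x)"

definition subspace :: "('z \<Rightarrow> 'k::field) set \<Rightarrow> bool" where
  "subspace V \<longleftrightarrow> 0 \<in> V \<and> (\<forall>u\<in>V. \<forall>w\<in>V. u + w \<in> V) \<and> (\<forall>c. \<forall>u\<in>V. sc c u \<in> V)"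

definition span :: "('z \<Rightarrow> 'k::field) set \<Rightarrow> ('z \<Rightarrow> 'k) set" where
  "span G = {v. \<exists>ps. set (map snd ps) \<subseteq> G \<and> v = sum_list (map (\<lambda>(c,g). sc c g) ps)}"

definition lin :: "('z \<Rightarrow> 'k::field) set \<Rightarrow> (('z \<Rightarrow> 'k) \<Rightarrow> ('y \<Rightarrow> 'k)) \<Rightarrow> bool" where
  "lin V f \<longleftrightarrow> (\<forall>u\<in>V. \<forall>w\<in>V. f (u + w) = f u + f w) \<and> (\<forall>c. \<forall>u\<in>V. f (sc c u) = sc c (f u))"

definition linf :: "('z \<Rightarrow> 'k::field) set \<Rightarrow> (('z \<Rightarrow> 'k) \<Rightarrow> 'k) \<Rightarrow> bool" where
  "linf V f \<longleftrightarrow> (\<forall>u\<in>V. \<forall>w\<in>V. f (u + w) = f u + f w) \<and> (\<forall>c. \<forall>u\<in>V. f (sc c u) = c * f u)"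

definition tens :: "('z \<Rightarrow> 'k::times) \<Rightarrow> ('y \<Rightarrow> 'k) \<Rightarrow> ('z \<times> 'y \<Rightarrow> 'k)" where
  "tens u w = (\<lambda>(x,y). u x * w y)"

definition trep :: "('z \<Rightarrow> 'k) set \<Rightarrow> ('y \<Rightarrow> 'k) set \<Rightarrow> ('z \<times> 'y \<Rightarrow> 'k::field)
    \<Rightarrow> (('z \<Rightarrow> 'k) \<times> ('y \<Rightarrow> 'k)) list \<Rightarrow> bool" where
  "trep U W t ps \<longleftrightarrow> set ps \<subseteq> U \<times> W \<and> t = sum_list (map (\<lambda>(u,w). tens u w) ps)"

definition reassoc :: "('x \<times> ('y \<times> 'z) \<Rightarrow> 'k) \<Rightarrow> (('x \<times> 'y) \<times> 'z \<Rightarrow> 'k)" where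
  "reassoc t = (\<lambda>((x,y),z). t (x,(y,z)))"

definition coalgebra :: "('z \<Rightarrow> 'k::field) set \<Rightarrow> (('z \<Rightarrow> 'k) \<Rightarrow> ('z \<times> 'z \<Rightarrow> 'k))
    \<Rightarrow> (('z \<Rightarrow> 'k) \<Rightarrow> 'k) \<Rightarrow> bool" where
  "coalgebra V Dl ep \<longleftrightarrow> subspace V \<and> V \<noteq> {0} \<and> lin V Dl \<and> linf V ep \<and>
    (\<forall>a\<in>V. \<exists>ps. trep V V (Dl a) ps) \<and>
    (\<forall>a\<in>V. \<forall>ps. trep V V (Dl a) ps \<longrightarrow>
        sum_list (map (\<lambda>(u,w). tens (Dl u) w) ps)
          = reassoc (sum_list (map (\<lambda>(u,w). tens u (Dl w)) ps))
      \<and> sum_list (map (\<lambda>(u,w). sc (ep u) w) ps) = a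
      \<and> sum_list (map (\<lambda>(u,w). sc (ep w) u) ps) = a)"

definition bialgebra :: "('z \<Rightarrow> 'k::field) set \<Rightarrow> (('z \<Rightarrow> 'k) \<Rightarrow> ('z \<Rightarrow> 'k) \<Rightarrow> ('z \<Rightarrow> 'k))
    \<Rightarrow> ('z \<Rightarrow> 'k) \<Rightarrow> (('z \<Rightarrow> 'k) \<Rightarrow> ('z \<times> 'z \<Rightarrow> 'k)) \<Rightarrow> (('z \<Rightarrow> 'k) \<Rightarrow> 'k) \<Rightarrow> bool" where
  "bialgebra A m u Dl ep \<longleftrightarrow> coalgebra A Dl ep \<and> u \<in> A \<and>
    (\<forall>a\<in>A. \<forall>b\<in>A. m a b \<in> A) \<and>
    (\<forall>b\<in>A. lin A (\<lambda>a. m a b)) \<and> (\<forall>a\<in>A. lin A (m a)) \<and>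
    (\<forall>a\<in>A. \<forall>b\<in>A. \<forall>c\<in>A. m (m a b) c = m a (m b c)) \<and>
    (\<forall>a\<in>A. m u a = a \<and> m a u = a) \<and>
    Dl u = tens u u \<and> ep u = 1 \<and>
    (\<forall>a\<in>A. \<forall>b\<in>A. ep (m a b) = ep a * ep b \<and>
       (\<forall>ps qs. trep A A (Dl a) ps \<longrightarrow> trep A A (Dl b) qs \<longrightarrow>
          Dl (m a b) = sum_list (map (\<lambda>(a1,a2). sum_list (map (\<lambda>(b1,b2).
                          tens (m a1 b1) (m a2 b2)) qs)) ps)))"

definition hopf_algebra :: "('z \<Rightarrow> 'k::field) set \<Rightarrow> (('z \<Rightarrow> 'k) \<Rightarrow> ('z \<Rightarrow> 'k) \<Rightarrow> ('z \<Rightarrow> 'k))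
    \<Rightarrow> ('z \<Rightarrow> 'k) \<Rightarrow> (('z \<Rightarrow> 'k) \<Rightarrow> ('z \<times> 'z \<Rightarrow> 'k)) \<Rightarrow> (('z \<Rightarrow> 'k) \<Rightarrow> 'k)
    \<Rightarrow> (('z \<Rightarrow> 'k) \<Rightarrow> ('z \<Rightarrow> 'k)) \<Rightarrow> bool" where
  "hopf_algebra A m u Dl ep S \<longleftrightarrow> bialgebra A m u Dl ep \<and> lin A S \<and> (\<forall>a\<in>A. S a \<in> A) \<and>
    (\<forall>a\<in>A. \<forall>ps. trep A A (Dl a) ps \<longrightarrow>
        sum_list (map (\<lambda>(x,y). m (S x) y) ps) = sc (ep a) u
      \<and> sum_list (map (\<lambda>(x,y). m x (S y)) ps) = sc (ep a) u)"

definition bialg_map :: "('z \<Rightarrow> 'k::field) set \<Rightarrow> (('z \<Rightarrow> 'k) \<Rightarrow> ('z \<Rightarrow> 'k) \<Rightarrow> ('z \<Rightarrow> 'k))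
    \<Rightarrow> ('z \<Rightarrow> 'k) \<Rightarrow> (('z \<Rightarrow> 'k) \<Rightarrow> ('z \<times> 'z \<Rightarrow> 'k)) \<Rightarrow> (('z \<Rightarrow> 'k) \<Rightarrow> 'k)
    \<Rightarrow> ('w \<Rightarrow> 'k) set \<Rightarrow> (('w \<Rightarrow> 'k) \<Rightarrow> ('w \<Rightarrow> 'k) \<Rightarrow> ('w \<Rightarrow> 'k))
    \<Rightarrow> ('w \<Rightarrow> 'k) \<Rightarrow> (('w \<Rightarrow> 'k) \<Rightarrow> ('w \<times> 'w \<Rightarrow> 'k)) \<Rightarrow> (('w \<Rightarrow> 'k) \<Rightarrow> 'k)
    \<Rightarrow> (('z \<Rightarrow> 'k) \<Rightarrow> ('w \<Rightarrow> 'k)) \<Rightarrow> bool" where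
  "bialg_map A m u Dl ep B m' u' Dl' ep' \<phi> \<longleftrightarrow> lin A \<phi> \<and> \<phi> ` A \<subseteq> B \<and>
    (\<forall>a\<in>A. \<forall>b\<in>A. \<phi> (m a b) = m' (\<phi> a) (\<phi> b)) \<and> \<phi> u = u' \<and>
    (\<forall>a\<in>A. ep' (\<phi> a) = ep a \<and>
       (\<forall>ps. trep A A (Dl a) ps \<longrightarrow> Dl' (\<phi> a) = sum_list (map (\<lambda>(x,y). tens (\<phi> x) (\<phi> y)) ps)))"

text \<open>The coalgebra C is modelled, via a chosen basis 'a, as the space FS of
finitely supported functions 'a => 'k.  The heap map chi is given by its
values [a,b,c] = br a b c on pure tensors (a trilinear map).\<close>

definition FS :: "('a \<Rightarrow> 'k::zero) set" where
  "FS = {v. finite {x. v x \<noteq> 0}}"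

definition hopf_heap :: "(('a \<Rightarrow> 'k::field) \<Rightarrow> ('a \<times> 'a \<Rightarrow> 'k)) \<Rightarrow> (('a \<Rightarrow> 'k) \<Rightarrow> 'k)
    \<Rightarrow> (('a \<Rightarrow> 'k) \<Rightarrow> ('a \<Rightarrow> 'k) \<Rightarrow> ('a \<Rightarrow> 'k) \<Rightarrow> ('a \<Rightarrow> 'k)) \<Rightarrow> bool" where
  "hopf_heap Dl ep br \<longleftrightarrow> coalgebra FS Dl ep \<and>
    (\<forall>a\<in>FS. \<forall>b\<in>FS. \<forall>c\<in>FS. br a b c \<in> FS) \<and>
    (\<forall>b\<in>FS. \<forall>c\<in>FS. lin FS (\<lambda>a. br a b c)) \<and>
    (\<forall>a\<in>FS. \<forall>c\<in>FS. lin FS (\<lambda>b. br a b c)) \<and>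
    (\<forall>a\<in>FS. \<forall>b\<in>FS. lin FS (\<lambda>c. br a b c)) \<and>
    (\<forall>a\<in>FS. \<forall>b\<in>FS. \<forall>c\<in>FS. ep (br a b c) = ep a * ep b * ep c \<and>
       (\<forall>ps qs rs. trep FS FS (Dl a) ps \<longrightarrow> trep FS FS (Dl b) qs \<longrightarrow> trep FS FS (Dl c) rs \<longrightarrow>
          Dl (br a b c) = sum_list (map (\<lambda>(a1,a2). sum_list (map (\<lambda>(b1,b2).
              sum_list (map (\<lambda>(c1,c2). tens (br a1 b2 c1) (br a2 b1 c2)) rs)) qs)) ps))) \<and>
    (\<forall>a\<in>FS. \<forall>b\<in>FS. \<forall>c\<in>FS. \<forall>d\<in>FS. \<forall>e\<in>FS. br (br a b c) d e = br a b (br c d e)) \<and>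
    (\<forall>a\<in>FS. \<forall>c\<in>FS. \<forall>ps. trep FS FS (Dl c) ps \<longrightarrow>
        sum_list (map (\<lambda>(c1,c2). br c1 c2 a) ps) = sc (ep c) a
      \<and> sum_list (map (\<lambda>(c1,c2). br a c1 c2) ps) = sc (ep c) a)"

definition coalg_map :: "(('a \<Rightarrow> 'k::field) \<Rightarrow> ('a \<times> 'a \<Rightarrow> 'k)) \<Rightarrow> (('a \<Rightarrow> 'k) \<Rightarrow> 'k)
    \<Rightarrow> (('b \<Rightarrow> 'k) \<Rightarrow> ('b \<times> 'b \<Rightarrow> 'k)) \<Rightarrow> (('b \<Rightarrow> 'k) \<Rightarrow> 'k)
    \<Rightarrow> (('a \<Rightarrow> 'k) \<Rightarrow> ('b \<Rightarrow> 'k)) \<Rightarrow> bool" where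
  "coalg_map Dl ep Dl' ep' f \<longleftrightarrow> lin FS f \<and> f ` FS \<subseteq> FS \<and>
    (\<forall>a\<in>FS. ep' (f a) = ep a \<and>
       (\<forall>ps. trep FS FS (Dl a) ps \<longrightarrow> Dl' (f a) = sum_list (map (\<lambda>(u,w). tens (f u) (f w)) ps)))"

definition heap_morph :: "(('a \<Rightarrow> 'k::field) \<Rightarrow> ('a \<times> 'a \<Rightarrow> 'k)) \<Rightarrow> (('a \<Rightarrow> 'k) \<Rightarrow> 'k)
    \<Rightarrow> (('a \<Rightarrow> 'k) \<Rightarrow> ('a \<Rightarrow> 'k) \<Rightarrow> ('a \<Rightarrow> 'k) \<Rightarrow> ('a \<Rightarrow> 'k))
    \<Rightarrow> (('b \<Rightarrow> 'k) \<Rightarrow> ('b \<times> 'b \<Rightarrow> 'k)) \<Rightarrow> (('b \<Rightarrow> 'k) \<Rightarrow> 'k)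
    \<Rightarrow> (('b \<Rightarrow> 'k) \<Rightarrow> ('b \<Rightarrow> 'k) \<Rightarrow> ('b \<Rightarrow> 'k) \<Rightarrow> ('b \<Rightarrow> 'k))
    \<Rightarrow> (('a \<Rightarrow> 'k) \<Rightarrow> ('b \<Rightarrow> 'k)) \<Rightarrow> bool" where
  "heap_morph Dl ep br Dl' ep' br' f \<longleftrightarrow> coalg_map Dl ep Dl' ep' f \<and>
    (\<forall>a\<in>FS. \<forall>b\<in>FS. \<forall>c\<in>FS. f (br a b c) = br' (f a) (f b) (f c))"

definition grunspan :: "(('a \<Rightarrow> 'k::field) \<Rightarrow> ('a \<times> 'a \<Rightarrow> 'k)) \<Rightarrow> (('a \<Rightarrow> 'k) \<Rightarrow> 'k)
    \<Rightarrow> (('a \<Rightarrow> 'k) \<Rightarrow> ('a \<Rightarrow> 'k) \<Rightarrow> ('a \<Rightarrow> 'k) \<Rightarrow> ('a \<Rightarrow> 'k))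
    \<Rightarrow> (('a \<Rightarrow> 'k) \<Rightarrow> ('a \<Rightarrow> 'k)) \<Rightarrow> bool" where
  "grunspan Dl ep br \<theta> \<longleftrightarrow> coalg_map Dl ep Dl ep \<theta> \<and>
    (\<forall>a\<in>FS. \<forall>b\<in>FS. \<forall>c\<in>FS. \<forall>d\<in>FS. \<forall>e\<in>FS. br (br a b (\<theta> c)) d e = br a (br d c b) e)"

text \<open>An endomorphism g of C is represented by the function (c,x) |-> (g c) x
for c in C, and 0 for c outside C.\<close>

definition end_of :: "(('a \<Rightarrow> 'k) \<Rightarrow> ('a \<Rightarrow> 'k)) \<Rightarrow> (('a \<Rightarrow> 'k) \<times> 'a \<Rightarrow> 'k::zero)" where
  "end_of g = (\<lambda>(c,x). if c \<in> FS then g c x else 0)"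

definition app :: "(('a \<Rightarrow> 'k) \<times> 'a \<Rightarrow> 'k) \<Rightarrow> ('a \<Rightarrow> 'k) \<Rightarrow> ('a \<Rightarrow> 'k)" where
  "app F c = (\<lambda>x. F (c,x))"

definition tau :: "(('a \<Rightarrow> 'k) \<Rightarrow> ('a \<Rightarrow> 'k) \<Rightarrow> ('a \<Rightarrow> 'k) \<Rightarrow> ('a \<Rightarrow> 'k))
    \<Rightarrow> ('a \<Rightarrow> 'k) \<Rightarrow> ('a \<Rightarrow> 'k) \<Rightarrow> (('a \<Rightarrow> 'k) \<times> 'a \<Rightarrow> 'k::zero)" where
  "tau br a b = end_of (\<lambda>c. br c a b)"

definition Tn :: "(('a \<Rightarrow> 'k) \<Rightarrow> ('a \<Rightarrow> 'k) \<Rightarrow> ('a \<Rightarrow> 'k) \<Rightarrow> ('a \<Rightarrow> 'k))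
    \<Rightarrow> (('a \<Rightarrow> 'k) \<times> 'a \<Rightarrow> 'k::field) set" where
  "Tn br = span {tau br a b | a b. a \<in> FS \<and> b \<in> FS}"

definition tn_mult :: "(('a \<Rightarrow> 'k) \<times> 'a \<Rightarrow> 'k::zero) \<Rightarrow> (('a \<Rightarrow> 'k) \<times> 'a \<Rightarrow> 'k)
    \<Rightarrow> (('a \<Rightarrow> 'k) \<times> 'a \<Rightarrow> 'k)" where
  "tn_mult F G = end_of (\<lambda>c. app G (app F c))"

definition tn_unit :: "(('a \<Rightarrow> 'k) \<times> 'a \<Rightarrow> 'k::zero)" where
  "tn_unit = end_of (\<lambda>c. c)"

definition tn_struct :: "(('a \<Rightarrow> 'k) \<Rightarrow> ('a \<Rightarrow> 'k) \<Rightarrow> ('a \<Rightarrow> 'k) \<Rightarrow> ('a \<Rightarrow> 'k))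
    \<Rightarrow> (('a \<Rightarrow> 'k::field) \<Rightarrow> ('a \<times> 'a \<Rightarrow> 'k)) \<Rightarrow> (('a \<Rightarrow> 'k) \<Rightarrow> 'k)
    \<Rightarrow> ((('a \<Rightarrow> 'k) \<times> 'a \<Rightarrow> 'k) \<Rightarrow> (((('a \<Rightarrow> 'k) \<times> 'a) \<times> (('a \<Rightarrow> 'k) \<times> 'a)) \<Rightarrow> 'k))
    \<Rightarrow> ((('a \<Rightarrow> 'k) \<times> 'a \<Rightarrow> 'k) \<Rightarrow> 'k) \<Rightarrow> bool" where
  "tn_struct br Dl ep DT eT \<longleftrightarrow> lin (Tn br) DT \<and> linf (Tn br) eT \<and>
    (\<forall>a\<in>FS. \<forall>b\<in>FS. eT (tau br a b) = ep a * ep b \<and>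
      (\<forall>ps qs. trep FS FS (Dl a) ps \<longrightarrow> trep FS FS (Dl b) qs \<longrightarrow>
         DT (tau br a b) = sum_list (map (\<lambda>(a1,a2). sum_list (map (\<lambda>(b1,b2).
              tens (tau br a2 b1) (tau br a1 b2)) qs)) ps)))"

definition tn_antipode :: "(('a \<Rightarrow> 'k) \<Rightarrow> ('a \<Rightarrow> 'k) \<Rightarrow> ('a \<Rightarrow> 'k) \<Rightarrow> ('a \<Rightarrow> 'k))
    \<Rightarrow> (('a \<Rightarrow> 'k) \<Rightarrow> ('a \<Rightarrow> 'k))
    \<Rightarrow> ((('a \<Rightarrow> 'k) \<times> 'a \<Rightarrow> 'k::field) \<Rightarrow> (('a \<Rightarrow> 'k) \<times> 'a \<Rightarrow> 'k)) \<Rightarrow> bool" where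
  "tn_antipode br \<theta> S \<longleftrightarrow> lin (Tn br) S \<and>
    (\<forall>a\<in>FS. \<forall>b\<in>FS. S (tau br a b) = tau br b (\<theta> a))"

definition tn_map :: "(('a \<Rightarrow> 'k) \<Rightarrow> ('a \<Rightarrow> 'k) \<Rightarrow> ('a \<Rightarrow> 'k) \<Rightarrow> ('a \<Rightarrow> 'k))
    \<Rightarrow> (('b \<Rightarrow> 'k) \<Rightarrow> ('b \<Rightarrow> 'k) \<Rightarrow> ('b \<Rightarrow> 'k) \<Rightarrow> ('b \<Rightarrow> 'k))
    \<Rightarrow> (('a \<Rightarrow> 'k) \<Rightarrow> ('b \<Rightarrow> 'k))
    \<Rightarrow> ((('a \<Rightarrow> 'k) \<times> 'a \<Rightarrow> 'k::field) \<Rightarrow> (('b \<Rightarrow> 'k) \<times> 'b \<Rightarrow> 'k)) \<Rightarrow> bool" where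
  "tn_map br br' f \<Phi> \<longleftrightarrow> lin (Tn br) \<Phi> \<and>
    (\<forall>a\<in>FS. \<forall>b\<in>FS. \<Phi> (tau br a b) = tau br' (f a) (f b))"

end

theory Submission
  imports Defs
begin


lemma sc_apply: "sc c v x = c * v x" by (simp add: sc_def)
lemma sum_list_apply: "sum_list xs x = sum_list (map (\<lambda>f. f x) xs)"
  by (induction xs) auto
lemma sum_list_map_apply: "sum_list (map g xs) x = sum_list (map (\<lambda>y. g y x) xs)"
  by (induction xs) auto
lemma tens_apply[simp]: "tens u w (x,y) = u x * w y" by (simp add: tens_def)

lemma sum_list_cmult: "sum_list (map (\<lambda>x. c * f x) xs) = (c::'k::field) * sum_list (map f xs)"
  by (induction xs) (auto simp: algebra_simps)
lemma sum_list_multc: "sum_list (map (\<lambda>x. f x * c) xs) = sum_list (map f xs) * (c::'k::field)"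
  by (induction xs) (auto simp: algebra_simps)
lemma sum_list_addf: "sum_list (map (\<lambda>x. f x + g x) xs) = sum_list (map f xs) + sum_list (map g xs)"
  for f g :: "_ \<Rightarrow> 'b::ab_group_add"
  by (induction xs) (auto simp: algebra_simps)
lemma sum_list_neg: "sum_list (map (\<lambda>x. - f x) xs) = - sum_list (map f xs)"
  for f :: "_ \<Rightarrow> 'b::ab_group_add"
  by (induction xs) (auto simp: algebra_simps)
lemma sum_list_swap: "sum_list (map (\<lambda>x. sum_list (map (\<lambda>y. f x y) ys)) xs)
   = sum_list (map (\<lambda>y. sum_list (map (\<lambda>x. f x y) xs)) ys)"
  for f :: "_ \<Rightarrow> _ \<Rightarrow> 'b::ab_group_add"
  by (induction xs) (auto simp: sum_list_addf)

lemma subspace_zero: "subspace V \<Longrightarrow> 0 \<in> V" by (simp add: subspace_def)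
lemma subspace_add: "subspace V \<Longrightarrow> u \<in> V \<Longrightarrow> w \<in> V \<Longrightarrow> u + w \<in> V" by (simp add: subspace_def)
lemma subspace_sc: "subspace V \<Longrightarrow> u \<in> V \<Longrightarrow> sc c u \<in> V" by (simp add: subspace_def)
lemma sc_neg: "sc (- c) v = - sc c v" by (rule ext) (simp add: sc_apply)
lemma sc_m1: "sc (-1) u = - u" by (auto simp: sc_def)
lemma subspace_neg: "subspace V \<Longrightarrow> u \<in> V \<Longrightarrow> - u \<in> V"
  by (metis sc_m1 subspace_sc)
lemma subspace_diff: "subspace V \<Longrightarrow> u \<in> V \<Longrightarrow> w \<in> V \<Longrightarrow> u - w \<in> V"
  by (metis diff_conv_add_uminus subspace_add subspace_neg)
lemma subspace_sum_list: "subspace V \<Longrightarrow> (\<And>x. x \<in> set xs \<Longrightarrow> g x \<in> V) \<Longrightarrow> sum_list (map g xs) \<in> V"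
  by (induction xs) (auto simp: subspace_zero subspace_add)

lemma lin_add: "lin V f \<Longrightarrow> u \<in> V \<Longrightarrow> w \<in> V \<Longrightarrow> f (u + w) = f u + f w" by (simp add: lin_def)
lemma lin_sc: "lin V f \<Longrightarrow> u \<in> V \<Longrightarrow> f (sc c u) = sc c (f u)" by (simp add: lin_def)
lemma lin_zero: "subspace V \<Longrightarrow> lin V f \<Longrightarrow> f 0 = 0"
proof -
  assume s: "subspace V" and l: "lin V f"
  have "f (sc 0 0) = sc 0 (f 0)" by (rule lin_sc[OF l subspace_zero[OF s]])
  moreover have "sc 0 (0::'a \<Rightarrow> 'b) = 0" by (rule ext) (simp add: sc_def)
  moreover have "sc 0 (f 0) = 0" by (rule ext) (simp add: sc_def)
  ultimately show ?thesis by simp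
qed
lemma lin_neg: "lin V f \<Longrightarrow> u \<in> V \<Longrightarrow> f (- u) = - f u"
  using lin_sc[of V f u "-1"] by (simp add: sc_m1)
lemma lin_diff: "subspace V \<Longrightarrow> lin V f \<Longrightarrow> u \<in> V \<Longrightarrow> w \<in> V \<Longrightarrow> f (u - w) = f u - f w"
  using lin_add[of V f u "-w"] lin_neg[of V f w] subspace_neg[of V w] by simp
lemma lin_sum_list: "subspace V \<Longrightarrow> lin V f \<Longrightarrow> (\<And>x. x \<in> set xs \<Longrightarrow> g x \<in> V)
   \<Longrightarrow> f (sum_list (map g xs)) = sum_list (map (\<lambda>x. f (g x)) xs)"
  by (induction xs) (auto simp: lin_zero lin_add subspace_sum_list)

lemma linf_add: "linf V f \<Longrightarrow> u \<in> V \<Longrightarrow> w \<in> V \<Longrightarrow> f (u + w) = f u + f w" by (simp add: linf_def)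
lemma linf_sc: "linf V f \<Longrightarrow> u \<in> V \<Longrightarrow> f (sc c u) = c * f u" by (simp add: linf_def)
lemma linf_zero: "subspace V \<Longrightarrow> linf V f \<Longrightarrow> f 0 = 0"
proof -
  assume s: "subspace V" and l: "linf V f"
  have "f (sc 0 0) = 0 * f 0" using l s by (simp add: linf_sc subspace_zero)
  moreover have "sc 0 (0::'a \<Rightarrow> 'b) = 0" by (rule ext) (simp add: sc_def)
  ultimately show ?thesis by simp
qed
lemma linf_sum_list: "subspace V \<Longrightarrow> linf V f \<Longrightarrow> (\<And>x. x \<in> set xs \<Longrightarrow> g x \<in> V)
   \<Longrightarrow> f (sum_list (map g xs)) = sum_list (map (\<lambda>x. f (g x)) xs)"
  by (induction xs) (auto simp: linf_zero linf_add subspace_sum_list)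

definition bil :: "('z \<Rightarrow> 'k::field) set \<Rightarrow> ('y \<Rightarrow> 'k) set \<Rightarrow> (('z \<Rightarrow> 'k) \<Rightarrow> ('y \<Rightarrow> 'k) \<Rightarrow> ('v \<Rightarrow> 'k)) \<Rightarrow> bool"
  where "bil U W F \<longleftrightarrow> (\<forall>w\<in>W. lin U (\<lambda>u. F u w)) \<and> (\<forall>u\<in>U. lin W (\<lambda>w. F u w))"

lemma tens_rep_zero_aux:
  fixes F :: "('z \<Rightarrow> 'k::field) \<Rightarrow> ('y \<Rightarrow> 'k) \<Rightarrow> ('v \<Rightarrow> 'k)"
  assumes sU: "subspace U" and sW: "subspace W" and b: "bil U W F"
  shows "length ps = n \<Longrightarrow> set ps \<subseteq> U \<times> W \<Longrightarrow> sum_list (map (\<lambda>(u,w). tens u w) ps) = 0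
     \<Longrightarrow> sum_list (map (\<lambda>(u,w). F u w) ps) = 0"
proof (induction n arbitrary: ps)
  case 0 then show ?case by simp
next
  case (Suc n)
  then obtain u w rest where ps: "ps = (u,w) # rest" and lr: "length rest = n"
    by (cases ps) auto
  have uU: "u \<in> U" and wW: "w \<in> W" and rU: "set rest \<subseteq> U \<times> W" using Suc.prems ps by auto
  have linl: "\<And>w. w \<in> W \<Longrightarrow> lin U (\<lambda>u. F u w)" and linr: "\<And>u. u \<in> U \<Longrightarrow> lin W (F u)"
    using b by (auto simp: bil_def)
  have tot: "tens u w + sum_list (map (\<lambda>(u,w). tens u w) rest) = 0"
    using Suc.prems(3) unfolding ps by (simp only: list.map sum_list.Cons prod.case)
  show ?case
  proof (cases "w = 0")
    case True
    have "tens u w = 0" using True by (auto simp: tens_def)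
    then have "sum_list (map (\<lambda>(u,w). tens u w) rest) = 0" using tot by simp
    then have "sum_list (map (\<lambda>(u,w). F u w) rest) = 0" using Suc.IH lr rU by blast
    moreover have "F u w = 0" using True lin_zero[OF sW linr[OF uU]] by simp
    ultimately show ?thesis using ps by simp
  next
    case False
    then obtain y0 where y0: "w y0 \<noteq> 0" by (auto simp: fun_eq_iff)
    define cf where "cf = (\<lambda>wi::'y\<Rightarrow>'k. wi y0 / w y0)"
    have ueq: "u = - sum_list (map (\<lambda>(ui,wi). sc (cf wi) ui) rest)"
    proof
      fix x
      have "(tens u w + sum_list (map (\<lambda>(u,w). tens u w) rest)) (x,y0) = 0" using tot by simp
      then have "u x * w y0 + sum_list (map (\<lambda>(ui,wi). ui x * wi y0) rest) = 0"
        by (simp add: case_prod_unfold sum_list_map_apply sc_apply)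
      then have "u x * w y0 = - sum_list (map (\<lambda>(ui,wi). ui x * wi y0) rest)"
        by (simp add: eq_neg_iff_add_eq_0)
      then have "u x = - sum_list (map (\<lambda>(ui,wi). ui x * wi y0) rest) / w y0"
        using y0 by (simp add: field_simps)
      also have "\<dots> = - sum_list (map (\<lambda>(ui,wi). cf wi * ui x) rest)"
        unfolding cf_def using y0 by (induction rest) (auto simp: field_simps)
      finally show "u x = (- sum_list (map (\<lambda>(ui,wi). sc (cf wi) ui) rest)) x"
        by (simp add: case_prod_unfold sum_list_map_apply sc_apply)
    qed
    define rest' where "rest' = map (\<lambda>(ui,wi). (ui, wi + sc (- cf wi) w)) rest"
    have lr': "length rest' = n" using lr by (simp add: rest'_def)
    have rU': "set rest' \<subseteq> U \<times> W" using rU wW sW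
      by (auto simp: rest'_def subspace_add subspace_sc)
    have z': "sum_list (map (\<lambda>(u,w). tens u w) rest') = 0"
    proof
      fix xy :: "'z \<times> 'y"
      obtain x y where xy: "xy = (x,y)" by fastforce
      have "(tens u w + sum_list (map (\<lambda>(u,w). tens u w) rest)) (x,y) = 0" using tot by simp
      then have A: "u x * w y + sum_list (map (\<lambda>(ui,wi). ui x * wi y) rest) = 0"
        by (simp add: case_prod_unfold sum_list_map_apply sc_apply)
      have "u x = - sum_list (map (\<lambda>(ui,wi). cf wi * ui x) rest)"
        using fun_cong[OF ueq, of x] by (simp add: case_prod_unfold sum_list_map_apply sc_apply)
      moreover have "sum_list (map (\<lambda>(ui,wi). cf wi * ui x) rest) * w y = sum_list (map (\<lambda>(ui,wi). cf wi * ui x * w y) rest)"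
        by (induction rest) (auto simp: algebra_simps)
      ultimately have B: "u x * w y = - sum_list (map (\<lambda>(ui,wi). cf wi * ui x * w y) rest)"
        by simp
      have "sum_list (map (\<lambda>(u,w). tens u w) rest') (x,y)
          = sum_list (map (\<lambda>(ui,wi). ui x * wi y - cf wi * ui x * w y) rest)"
        unfolding rest'_def by (induction rest) (auto simp: algebra_simps sc_apply)
      also have "\<dots> = sum_list (map (\<lambda>(ui,wi). ui x * wi y) rest) - sum_list (map (\<lambda>(ui,wi). cf wi * ui x * w y) rest)"
        by (induction rest) (auto simp: algebra_simps)
      also have "\<dots> = 0" using A B by (simp add: algebra_simps)
      finally show "sum_list (map (\<lambda>(u,w). tens u w) rest') xy = 0 xy" using xy by simp
    qed
    have IH: "sum_list (map (\<lambda>(u,w). F u w) rest') = 0" using Suc.IH[OF lr' rU' z'] .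
    have restU: "\<And>p. p \<in> set rest \<Longrightarrow> fst p \<in> U \<and> snd p \<in> W" using rU by auto
    have e1: "sum_list (map (\<lambda>(u,w). F u w) rest') =
        sum_list (map (\<lambda>(ui,wi). F ui wi + sc (- cf wi) (F ui w)) rest)"
    proof -
      have trm: "\<And>p. p \<in> set rest \<Longrightarrow> ((\<lambda>(u,w). F u w) \<circ> (\<lambda>(ui,wi). (ui, wi + sc (- cf wi) w))) p
           = (\<lambda>(ui,wi). F ui wi + sc (- cf wi) (F ui w)) p"
      proof -
        fix p assume p: "p \<in> set rest"
        obtain ui wi where pe: "p = (ui,wi)" by fastforce
        have ui: "ui \<in> U" and wi: "wi \<in> W" using restU[OF p] pe by auto
        have "F ui (wi + sc (- cf wi) w) = F ui wi + F ui (sc (- cf wi) w)"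
          by (rule lin_add[OF linr[OF ui] wi subspace_sc[OF sW wW]])
        also have "F ui (sc (- cf wi) w) = sc (- cf wi) (F ui w)"
          by (rule lin_sc[OF linr[OF ui] wW])
        finally have eq: "F ui (wi + sc (- cf wi) w) = F ui wi + sc (- cf wi) (F ui w)" .
        show "?thesis p" unfolding pe comp_apply prod.case using eq .
      qed
      show ?thesis unfolding rest'_def map_map
        by (rule arg_cong[where f=sum_list], rule map_cong[OF refl], rule trm)
    qed
    have e2: "F u w = - sum_list (map (\<lambda>(ui,wi). sc (cf wi) (F ui w)) rest)"
    proof -
      have "F u w = F (- sum_list (map (\<lambda>(ui,wi). sc (cf wi) ui) rest)) w" using ueq by simp
      also have "\<dots> = - F (sum_list (map (\<lambda>(ui,wi). sc (cf wi) ui) rest)) w"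
      proof -
        have mem: "sum_list (map (\<lambda>(ui,wi). sc (cf wi) ui) rest) \<in> U"
          by (rule subspace_sum_list[OF sU]) (use restU sU in \<open>auto simp: subspace_sc\<close>)
        show ?thesis using lin_neg[OF linl[OF wW] mem] by simp
      qed
      also have "F (sum_list (map (\<lambda>(ui,wi). sc (cf wi) ui) rest)) w
          = sum_list (map (\<lambda>p. F ((\<lambda>(ui,wi). sc (cf wi) ui) p) w) rest)"
        by (rule lin_sum_list[OF sU linl[OF wW]]) (use restU sU in \<open>auto simp: subspace_sc split: prod.splits\<close>)
      also have "\<dots> = sum_list (map (\<lambda>(ui,wi). sc (cf wi) (F ui w)) rest)"
      proof (rule arg_cong[where f=sum_list], rule map_cong[OF refl])
        fix p assume p: "p \<in> set rest"
        obtain ui wi where pe: "p = (ui,wi)" by fastforce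
        have ui: "ui \<in> U" using restU[OF p] pe by auto
        have eq: "F (sc (cf wi) ui) w = sc (cf wi) (F ui w)" by (rule lin_sc[OF linl[OF wW] ui])
        show "F ((\<lambda>(ui,wi). sc (cf wi) ui) p) w = (\<lambda>(ui,wi). sc (cf wi) (F ui w)) p"
          unfolding pe prod.case using eq .
      qed
      finally show ?thesis .
    qed
    have s1: "sum_list (map (\<lambda>(ui,wi). F ui wi + sc (- cf wi) (F ui w)) rest)
       = sum_list (map (\<lambda>(ui,wi). F ui wi) rest) - sum_list (map (\<lambda>(ui,wi). sc (cf wi) (F ui w)) rest)"
      by (induction rest) (simp_all add: sc_neg algebra_simps split: prod.splits)
    have "sum_list (map (\<lambda>(u,w). F u w) ps) = F u w + sum_list (map (\<lambda>(ui,wi). F ui wi) rest)"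
      unfolding ps by (simp only: list.map sum_list.Cons prod.case)
    also have "\<dots> = 0" using e2 s1 e1 IH by simp
    finally show ?thesis .
  qed
qed


lemma tens_add_l: "tens (u + u') w = tens u w + tens u' w" for u :: "'z \<Rightarrow> 'k::field"
  by (rule ext) (auto simp: tens_def algebra_simps)
lemma tens_add_r: "tens u (w + w') = tens u w + tens u w'" for u :: "'z \<Rightarrow> 'k::field"
  by (rule ext) (auto simp: tens_def algebra_simps)
lemma tens_sc_l: "tens (sc c u) w = sc c (tens u w)" by (rule ext) (auto simp: tens_def sc_def)
lemma tens_sc_r: "tens u (sc c w) = sc c (tens u w)" by (rule ext) (auto simp: tens_def sc_def)
lemma tens_neg_r: "tens u (- w) = - tens u w" for u :: "'z \<Rightarrow> 'k::field"
  by (rule ext) (auto simp: tens_def)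
lemma tens_zero_l: "tens 0 w = 0" for w :: "'z \<Rightarrow> 'k::field"
  by (rule ext) (auto simp: tens_def)
lemma tens_zero_r: "tens u 0 = 0" for u :: "'z \<Rightarrow> 'k::field"
  by (rule ext) (auto simp: tens_def)
lemma sc_sum_list: "sc c (sum_list (map f xs)) = sum_list (map (\<lambda>x. sc c (f x)) xs)"
  by (induction xs) (auto simp: sc_def fun_eq_iff algebra_simps)
lemma sc_add: "sc c (u + w) = sc c u + sc c w" by (rule ext) (simp add: sc_apply algebra_simps)
lemma sc_add_l: "sc (c + d) u = sc c u + sc d u" by (rule ext) (simp add: sc_apply algebra_simps)
lemma sc_sc: "sc c (sc d u) = sc (c * d) u" by (rule ext) (simp add: sc_apply algebra_simps)
lemma sc_one: "sc 1 u = u" by (rule ext) (simp add: sc_apply)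
lemma sc_zero_l: "sc 0 u = 0" by (rule ext) (simp add: sc_apply)
lemma sc_zero_r: "sc c 0 = 0" by (rule ext) (simp add: sc_apply)

lemma sum_list_concat_map: "sum_list (map f (concat (map g xs))) = sum_list (map (\<lambda>x. sum_list (map f (g x))) xs)"
  by (induction xs) auto

lemma sum_list_map_sc: "(\<And>x. x \<in> set xs \<Longrightarrow> g x = sc c (f x)) \<Longrightarrow> sum_list (map g xs) = sc c (sum_list (map f xs))"
  by (induction xs) (simp_all add: sc_add sc_zero_r)
lemma sum_list_map_neg: "(\<And>x. x \<in> set xs \<Longrightarrow> g x = - f x) \<Longrightarrow> sum_list (map g xs) = - sum_list (map f xs)"
  for f :: "_ \<Rightarrow> 'b::ab_group_add"
  by (induction xs) (simp_all add: algebra_simps)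

lemma bilI: "(\<And>w. w \<in> W \<Longrightarrow> lin U (\<lambda>u. F u w)) \<Longrightarrow> (\<And>u. u \<in> U \<Longrightarrow> lin W (\<lambda>w. F u w)) \<Longrightarrow> bil U W F"
  by (auto simp: bil_def)
lemma bil_l: "bil U W F \<Longrightarrow> w \<in> W \<Longrightarrow> lin U (\<lambda>u. F u w)" by (auto simp: bil_def)
lemma bil_r: "bil U W F \<Longrightarrow> u \<in> U \<Longrightarrow> lin W (\<lambda>w. F u w)" by (auto simp: bil_def)

lemma tens_rep_eq:
  fixes F :: "('z \<Rightarrow> 'k::field) \<Rightarrow> ('y \<Rightarrow> 'k) \<Rightarrow> ('v \<Rightarrow> 'k)"
  assumes sU: "subspace U" and sW: "subspace W" and b: "bil U W F"
    and ps: "set ps \<subseteq> U \<times> W" and qs: "set qs \<subseteq> U \<times> W"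
    and eq: "sum_list (map (\<lambda>(u,w). tens u w) ps) = sum_list (map (\<lambda>(u,w). tens u w) qs)"
  shows "sum_list (map (\<lambda>(u,w). F u w) ps) = sum_list (map (\<lambda>(u,w). F u w) qs)"
proof -
  define qs' where "qs' = map (\<lambda>(u,w). (u, - w)) qs"
  have s1: "set (ps @ qs') \<subseteq> U \<times> W" using ps qs sW by (auto simp: qs'_def subspace_neg)
  have n1: "sum_list (map (\<lambda>(u,w). tens u w) qs') = - sum_list (map (\<lambda>(u,w). tens u w) qs)"
    unfolding qs'_def by (induction qs) (auto simp: tens_neg_r)
  have "sum_list (map (\<lambda>(u,w). tens u w) (ps @ qs')) = 0" using eq n1 by simp
  then have z: "sum_list (map (\<lambda>(u,w). F u w) (ps @ qs')) = 0"
    using tens_rep_zero_aux[OF sU sW b refl s1] by blast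
  have n2: "sum_list (map (\<lambda>(u,w). F u w) qs') = - sum_list (map (\<lambda>(u,w). F u w) qs)"
    unfolding qs'_def map_map
  proof (rule sum_list_map_neg)
    fix p assume p: "p \<in> set qs"
    obtain u w where pe: "p = (u,w)" by fastforce
    have "u \<in> U" "w \<in> W" using qs p pe by auto
    then have fe: "F u (- w) = - F u w" using lin_neg[OF bil_r[OF b]] by blast
    show "((\<lambda>(u,w). F u w) \<circ> (\<lambda>(u,w). (u, - w))) p = - (\<lambda>(u,w). F u w) p"
      unfolding pe comp_apply prod.case fe ..
  qed
  show ?thesis using z n2 by (simp add: algebra_simps)
qed

definition RF :: "('z \<Rightarrow> 'k::field) set \<Rightarrow> (('z \<Rightarrow> 'k) \<Rightarrow> ('z \<times> 'z \<Rightarrow> 'k))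
   \<Rightarrow> (('z \<Rightarrow> 'k) \<Rightarrow> ('z \<Rightarrow> 'k) \<Rightarrow> ('v \<Rightarrow> 'k)) \<Rightarrow> ('z \<Rightarrow> 'k) \<Rightarrow> ('v \<Rightarrow> 'k)" where
  "RF V D F a = sum_list (map (\<lambda>(u,w). F u w) (SOME ps. trep V V (D a) ps))"

lemma trep_same:
  assumes "subspace V" "bil V V F" "trep V V t ps" "trep V V t qs"
  shows "sum_list (map (\<lambda>(u,w). F u w) ps) = sum_list (map (\<lambda>(u,w). F u w) qs)"
  using assms tens_rep_eq[of V V F ps qs] by (auto simp: trep_def)

lemma RF_rep:
  assumes "subspace V" "bil V V F" "trep V V (D a) ps"
  shows "RF V D F a = sum_list (map (\<lambda>(u,w). F u w) ps)"
proof -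
  have "trep V V (D a) (SOME ps. trep V V (D a) ps)" using assms(3) by (rule someI)
  then show ?thesis unfolding RF_def using trep_same assms by blast
qed

lemma trep_append: "trep U W t ps \<Longrightarrow> trep U W t' qs \<Longrightarrow> trep U W (t + t') (ps @ qs)"
  by (auto simp: trep_def)
lemma trep_scale: "subspace U \<Longrightarrow> trep U W t ps \<Longrightarrow> trep U W (sc c t) (map (\<lambda>(u,w). (sc c u, w)) ps)"
  unfolding trep_def
proof (elim conjE, intro conjI)
  assume "subspace U" "set ps \<subseteq> U \<times> W" "t = sum_list (map (\<lambda>(u,w). tens u w) ps)"
  then show "set (map (\<lambda>(u,w). (sc c u, w)) ps) \<subseteq> U \<times> W" by (auto simp: subspace_sc)
  show "sc c t = sum_list (map (\<lambda>(u,w). tens u w) (map (\<lambda>(u,w). (sc c u, w)) ps))"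
    using \<open>t = _\<close> by (simp add: sc_sum_list o_def case_prod_unfold tens_sc_l)
qed

lemma RF_lin:
  assumes sV: "subspace V" and lD: "lin V D" and ex: "\<And>a. a \<in> V \<Longrightarrow> \<exists>ps. trep V V (D a) ps"
    and b: "bil V V F"
  shows "lin V (RF V D F)"
  unfolding lin_def
proof (intro conjI ballI allI)
  fix u w assume u: "u \<in> V" and w: "w \<in> V"
  obtain pu pw where pu: "trep V V (D u) pu" and pw: "trep V V (D w) pw" using ex u w by blast
  have "trep V V (D (u + w)) (pu @ pw)" using trep_append[OF pu pw] lin_add[OF lD u w] by simp
  then show "RF V D F (u + w) = RF V D F u + RF V D F w"
    using RF_rep[OF sV b] pu pw by simp
next
  fix c u assume u: "u \<in> V"
  obtain pu where pu: "trep V V (D u) pu" using ex u by blast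
  have r: "trep V V (D (sc c u)) (map (\<lambda>(u,w). (sc c u, w)) pu)"
    using trep_scale[OF sV pu] lin_sc[OF lD u] by simp
  have "sum_list (map (\<lambda>(u,w). F u w) (map (\<lambda>(u,w). (sc c u, w)) pu))
      = sc c (sum_list (map (\<lambda>(u,w). F u w) pu))"
    unfolding map_map
  proof (rule sum_list_map_sc)
    fix p assume p: "p \<in> set pu"
    obtain x y where pe: "p = (x,y)" by fastforce
    have "x \<in> V" "y \<in> V" using pu p pe by (auto simp: trep_def)
    then have fe: "F (sc c x) y = sc c (F x y)" using lin_sc[OF bil_l[OF b]] by blast
    show "((\<lambda>(u,w). F u w) \<circ> (\<lambda>(u,w). (sc c u, w))) p = sc c ((\<lambda>(u,w). F u w) p)"
      unfolding pe comp_apply prod.case fe ..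
  qed
  then show "RF V D F (sc c u) = sc c (RF V D F u)"
    using RF_rep[of V F D "sc c u", OF sV b r] RF_rep[of V F D u, OF sV b pu] by simp
qed


lemma sum_list_zero: "sum_list (map (\<lambda>x. 0) xs) = (0::'b::monoid_add)"
  by (induction xs) auto

lemma lin_idI: "lin V (\<lambda>x. x)" by (simp add: lin_def)

locale hheap =
  fixes Dl :: "('a \<Rightarrow> 'k::field) \<Rightarrow> ('a \<times> 'a \<Rightarrow> 'k)" and ep :: "('a \<Rightarrow> 'k) \<Rightarrow> 'k"
    and br :: "('a \<Rightarrow> 'k) \<Rightarrow> ('a \<Rightarrow> 'k) \<Rightarrow> ('a \<Rightarrow> 'k) \<Rightarrow> ('a \<Rightarrow> 'k)"
  assumes H: "hopf_heap Dl ep br"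
begin

lemma coal: "coalgebra FS Dl ep" using H by (simp add: hopf_heap_def)
lemma sFS: "subspace (FS :: ('a \<Rightarrow> 'k) set)" using coal by (simp add: coalgebra_def)
lemma FS_nz: "(FS :: ('a \<Rightarrow> 'k) set) \<noteq> {0}" using coal by (simp add: coalgebra_def)
lemma linDl: "lin FS Dl" using coal by (simp add: coalgebra_def)
lemma linep: "linf FS ep" using coal by (simp add: coalgebra_def)
lemma exrep: "a \<in> FS \<Longrightarrow> \<exists>ps. trep FS FS (Dl a) ps" using coal by (simp add: coalgebra_def)
lemma coassoc_ax: "a \<in> FS \<Longrightarrow> trep FS FS (Dl a) ps \<Longrightarrow>
   sum_list (map (\<lambda>(u,w). tens (Dl u) w) ps) = reassoc (sum_list (map (\<lambda>(u,w). tens u (Dl w)) ps))"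
  using coal by (simp add: coalgebra_def)
lemma counit_ax: "a \<in> FS \<Longrightarrow> trep FS FS (Dl a) ps \<Longrightarrow>
   sum_list (map (\<lambda>(u,w). sc (ep u) w) ps) = a \<and> sum_list (map (\<lambda>(u,w). sc (ep w) u) ps) = a"
  using coal by (simp add: coalgebra_def)
lemma br_FS: "a \<in> FS \<Longrightarrow> b \<in> FS \<Longrightarrow> c \<in> FS \<Longrightarrow> br a b c \<in> FS"
  using H by (simp add: hopf_heap_def)
lemma br_lin1: "b \<in> FS \<Longrightarrow> c \<in> FS \<Longrightarrow> lin FS (\<lambda>a. br a b c)"
  using H by (simp add: hopf_heap_def)
lemma br_lin2: "a \<in> FS \<Longrightarrow> c \<in> FS \<Longrightarrow> lin FS (\<lambda>b. br a b c)"
  using H by (simp add: hopf_heap_def)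
lemma br_lin3: "a \<in> FS \<Longrightarrow> b \<in> FS \<Longrightarrow> lin FS (\<lambda>c. br a b c)"
  using H by (simp add: hopf_heap_def)
lemma ep_br: "a \<in> FS \<Longrightarrow> b \<in> FS \<Longrightarrow> c \<in> FS \<Longrightarrow> ep (br a b c) = ep a * ep b * ep c"
  using H by (simp add: hopf_heap_def)
lemma Dl_br: "a \<in> FS \<Longrightarrow> b \<in> FS \<Longrightarrow> c \<in> FS \<Longrightarrow> trep FS FS (Dl a) ps \<Longrightarrow> trep FS FS (Dl b) qs
   \<Longrightarrow> trep FS FS (Dl c) rs \<Longrightarrow>
   Dl (br a b c) = sum_list (map (\<lambda>(a1,a2). sum_list (map (\<lambda>(b1,b2).
              sum_list (map (\<lambda>(c1,c2). tens (br a1 b2 c1) (br a2 b1 c2)) rs)) qs)) ps)"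
  using H by (simp add: hopf_heap_def)
lemma br_assoc: "a \<in> FS \<Longrightarrow> b \<in> FS \<Longrightarrow> c \<in> FS \<Longrightarrow> d \<in> FS \<Longrightarrow> e \<in> FS \<Longrightarrow>
   br (br a b c) d e = br a b (br c d e)"
  using H by (simp add: hopf_heap_def)
lemma hcounit_ax: "a \<in> FS \<Longrightarrow> c \<in> FS \<Longrightarrow> trep FS FS (Dl c) ps \<Longrightarrow>
        sum_list (map (\<lambda>(c1,c2). br c1 c2 a) ps) = sc (ep c) a
      \<and> sum_list (map (\<lambda>(c1,c2). br a c1 c2) ps) = sc (ep c) a"
  using H by (simp add: hopf_heap_def)

definition sw :: "('a \<Rightarrow> 'k) \<Rightarrow> (('a \<Rightarrow> 'k) \<times> ('a \<Rightarrow> 'k)) list" where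
  "sw a = (SOME ps. trep FS FS (Dl a) ps)"

definition SW :: "('a \<Rightarrow> 'k) \<Rightarrow> (('a \<Rightarrow> 'k) \<Rightarrow> ('a \<Rightarrow> 'k) \<Rightarrow> ('v \<Rightarrow> 'k)) \<Rightarrow> ('v \<Rightarrow> 'k)" where
  "SW a F = sum_list (map (\<lambda>(u,w). F u w) (sw a))"

lemma sw_rep: "a \<in> FS \<Longrightarrow> trep FS FS (Dl a) (sw a)"
  unfolding sw_def using exrep by (metis someI)
lemma sw_FS: "a \<in> FS \<Longrightarrow> p \<in> set (sw a) \<Longrightarrow> fst p \<in> FS \<and> snd p \<in> FS"
  using sw_rep by (fastforce simp: trep_def)
lemma SW_RF: "SW a F = RF FS Dl F a" by (simp add: SW_def RF_def sw_def)

lemma SW_rep: "bil FS FS F \<Longrightarrow> trep FS FS (Dl a) ps \<Longrightarrow> SW a F = sum_list (map (\<lambda>(u,w). F u w) ps)"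
  unfolding SW_RF by (rule RF_rep[OF sFS])

lemma SW_lin_a: "bil FS FS F \<Longrightarrow> lin FS (\<lambda>a. SW a F)"
  unfolding SW_RF using RF_lin[OF sFS linDl exrep] by blast

lemma SW_cong: assumes a: "a \<in> FS" and e: "\<And>u w. u \<in> FS \<Longrightarrow> w \<in> FS \<Longrightarrow> F u w = G u w"
  shows "SW a F = SW a G"
  unfolding SW_def
proof (rule arg_cong[where f=sum_list], rule map_cong[OF refl])
  fix p assume "p \<in> set (sw a)"
  then show "(\<lambda>(u,w). F u w) p = (\<lambda>(u,w). G u w) p" using sw_FS[OF a] e by (auto split: prod.splits)
qed

lemma SW_add: "SW a (\<lambda>u w. F u w + G u w) = SW a F + SW a G"
  unfolding SW_def case_prod_unfold by (rule sum_list_addf)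

lemma SW_zero: "SW a (\<lambda>u w. 0) = 0"
  unfolding SW_def case_prod_unfold by (rule sum_list_zero)

lemma SW_sc: "SW a (\<lambda>u w. sc c (F u w)) = sc c (SW a F)"
  unfolding SW_def by (rule sum_list_map_sc) (auto split: prod.splits)

lemma SW_swap: "SW a (\<lambda>u w. SW b (\<lambda>x y. F u w x y)) = SW b (\<lambda>x y. SW a (\<lambda>u w. F u w x y))"
  unfolding SW_def case_prod_unfold by (rule sum_list_swap)

lemma SW_mem: "subspace V \<Longrightarrow> a \<in> FS \<Longrightarrow> (\<And>u w. u \<in> FS \<Longrightarrow> w \<in> FS \<Longrightarrow> F u w \<in> V) \<Longrightarrow> SW a F \<in> V"
  unfolding SW_def by (rule subspace_sum_list) (auto dest: sw_FS split: prod.splits)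

lemma SW_map: "subspace V \<Longrightarrow> lin V L \<Longrightarrow> a \<in> FS \<Longrightarrow> (\<And>u w. u \<in> FS \<Longrightarrow> w \<in> FS \<Longrightarrow> F u w \<in> V) \<Longrightarrow>
   L (SW a F) = SW a (\<lambda>u w. L (F u w))"
  unfolding SW_def by (subst lin_sum_list[of V L]) (auto dest: sw_FS simp: case_prod_unfold)

lemma SW_mapf: "subspace V \<Longrightarrow> linf V L \<Longrightarrow> a \<in> FS \<Longrightarrow> (\<And>u w. u \<in> FS \<Longrightarrow> w \<in> FS \<Longrightarrow> F u w \<in> V) \<Longrightarrow>
   L (SW a F) = sum_list (map (\<lambda>(u,w). L (F u w)) (sw a))"
  unfolding SW_def by (subst linf_sum_list[of V L]) (auto dest: sw_FS simp: case_prod_unfold)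

lemma counit1: "a \<in> FS \<Longrightarrow> subspace V \<Longrightarrow> lin FS H \<Longrightarrow> (\<And>x. x \<in> FS \<Longrightarrow> H x \<in> V) \<Longrightarrow> SW a (\<lambda>u w. sc (ep u) (H w)) = H a"
proof -
  assume a: "a \<in> FS" and V: "subspace V" and H: "lin FS H" and HV: "\<And>x. x \<in> FS \<Longrightarrow> H x \<in> V"
  have "H a = H (SW a (\<lambda>u w. sc (ep u) w))"
    using counit_ax[OF a sw_rep[OF a]] by (simp add: SW_def)
  also have "\<dots> = SW a (\<lambda>u w. H (sc (ep u) w))"
    by (rule SW_map[OF sFS H a]) (simp add: subspace_sc[OF sFS])
  also have "\<dots> = SW a (\<lambda>u w. sc (ep u) (H w))"
    by (rule SW_cong[OF a]) (simp add: lin_sc[OF H])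
  finally show ?thesis by simp
qed

lemma counit2: "a \<in> FS \<Longrightarrow> lin FS H \<Longrightarrow> SW a (\<lambda>u w. sc (ep w) (H u)) = H a"
proof -
  assume a: "a \<in> FS" and H: "lin FS H"
  have "H a = H (SW a (\<lambda>u w. sc (ep w) u))"
    using counit_ax[OF a sw_rep[OF a]] by (simp add: SW_def)
  also have "\<dots> = SW a (\<lambda>u w. H (sc (ep w) u))"
    by (rule SW_map[OF sFS H a]) (simp add: subspace_sc[OF sFS])
  also have "\<dots> = SW a (\<lambda>u w. sc (ep w) (H u))"
    by (rule SW_cong[OF a]) (simp add: lin_sc[OF H])
  finally show ?thesis by simp
qed

lemma hcounit1: "a \<in> FS \<Longrightarrow> c \<in> FS \<Longrightarrow> lin FS H \<Longrightarrow> SW c (\<lambda>c1 c2. H (br c1 c2 a)) = sc (ep c) (H a)"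
proof -
  assume a: "a \<in> FS" and c: "c \<in> FS" and H: "lin FS H"
  have "sc (ep c) (H a) = H (sc (ep c) a)" by (simp add: lin_sc[OF H a])
  also have "sc (ep c) a = SW c (\<lambda>c1 c2. br c1 c2 a)"
    using hcounit_ax[OF a c sw_rep[OF c]] by (simp add: SW_def)
  also have "H \<dots> = SW c (\<lambda>c1 c2. H (br c1 c2 a))"
    by (rule SW_map[OF sFS H c]) (simp add: br_FS a)
  finally show ?thesis by simp
qed

lemma hcounit2: "a \<in> FS \<Longrightarrow> c \<in> FS \<Longrightarrow> lin FS H \<Longrightarrow> SW c (\<lambda>c1 c2. H (br a c1 c2)) = sc (ep c) (H a)"
proof -
  assume a: "a \<in> FS" and c: "c \<in> FS" and H: "lin FS H"
  have "sc (ep c) (H a) = H (sc (ep c) a)" by (simp add: lin_sc[OF H a])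
  also have "sc (ep c) a = SW c (\<lambda>c1 c2. br a c1 c2)"
    using hcounit_ax[OF a c sw_rep[OF c]] by (simp add: SW_def)
  also have "H \<dots> = SW c (\<lambda>c1 c2. H (br a c1 c2))"
    by (rule SW_map[OF sFS H c]) (simp add: br_FS a)
  finally show ?thesis by simp
qed

lemma SW_br: "bil FS FS F \<Longrightarrow> a \<in> FS \<Longrightarrow> b \<in> FS \<Longrightarrow> c \<in> FS \<Longrightarrow>
  SW (br a b c) F = SW a (\<lambda>a1 a2. SW b (\<lambda>b1 b2. SW c (\<lambda>c1 c2. F (br a1 b2 c1) (br a2 b1 c2))))"
proof -
  assume F: "bil FS FS F" and a: "a \<in> FS" and b: "b \<in> FS" and c: "c \<in> FS"
  define L where "L = concat (map (\<lambda>(a1,a2). concat (map (\<lambda>(b1,b2).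
     map (\<lambda>(c1,c2). (br a1 b2 c1, br a2 b1 c2)) (sw c)) (sw b))) (sw a))"
  have "trep FS FS (Dl (br a b c)) L"
    unfolding trep_def
  proof
    show "set L \<subseteq> FS \<times> FS"
    proof
      fix p assume "p \<in> set L"
      then obtain a1 a2 b1 b2 c1 c2 where "(a1,a2) \<in> set (sw a)" "(b1,b2) \<in> set (sw b)" "(c1,c2) \<in> set (sw c)"
        and p: "p = (br a1 b2 c1, br a2 b1 c2)" unfolding L_def by auto
      then show "p \<in> FS \<times> FS" using sw_FS[OF a] sw_FS[OF b] sw_FS[OF c] by (force intro!: br_FS)
    qed
    show "Dl (br a b c) = sum_list (map (\<lambda>(u,w). tens u w) L)"
      unfolding Dl_br[OF a b c sw_rep[OF a] sw_rep[OF b] sw_rep[OF c]] L_def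
      by (simp add: sum_list_concat_map case_prod_unfold o_def)
  qed
  then have "SW (br a b c) F = sum_list (map (\<lambda>(u,w). F u w) L)" by (rule SW_rep[OF F])
  also have "\<dots> = SW a (\<lambda>a1 a2. SW b (\<lambda>b1 b2. SW c (\<lambda>c1 c2. F (br a1 b2 c1) (br a2 b1 c2))))"
    unfolding L_def SW_def by (simp add: sum_list_concat_map case_prod_unfold o_def)
  finally show ?thesis .
qed

end


lemma reassoc_add: "reassoc (f + g) = reassoc f + reassoc g" by (rule ext) (auto simp: reassoc_def split: prod.splits)
lemma reassoc_zero: "reassoc 0 = 0" by (rule ext) (auto simp: reassoc_def split: prod.splits)
lemma reassoc_sum: "reassoc (sum_list (map f xs)) = sum_list (map (\<lambda>x. reassoc (f x)) xs)"
  by (induction xs) (simp_all only: list.map sum_list.Nil sum_list.Cons reassoc_add reassoc_zero)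
lemma reassoc_tens: "reassoc (tens u (tens v w)) = tens (tens u v) w"
  for u :: "'z \<Rightarrow> 'k::field"
  by (rule ext) (auto simp: reassoc_def tens_def mult.assoc split: prod.splits)
lemma tens_sum_r: "tens u (sum_list (map f xs)) = sum_list (map (\<lambda>x. tens u (f x)) xs)" for u :: "'z \<Rightarrow> 'k::field"
  by (induction xs) (simp_all only: list.map sum_list.Nil sum_list.Cons tens_add_r tens_zero_r)
lemma tens_sum_l: "tens (sum_list (map f xs)) w = sum_list (map (\<lambda>x. tens (f x) w) xs)" for w :: "'z \<Rightarrow> 'k::field"
  by (induction xs) (simp_all only: list.map sum_list.Nil sum_list.Cons tens_add_l tens_zero_l)

definition tril :: "('z \<Rightarrow> 'k::field) set \<Rightarrow> (('z \<Rightarrow> 'k) \<Rightarrow> ('z \<Rightarrow> 'k) \<Rightarrow> ('z \<Rightarrow> 'k) \<Rightarrow> ('v \<Rightarrow> 'k)) \<Rightarrow> bool" where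
  "tril V G \<longleftrightarrow> (\<forall>y\<in>V. \<forall>z\<in>V. lin V (\<lambda>x. G x y z)) \<and> (\<forall>x\<in>V. \<forall>z\<in>V. lin V (\<lambda>y. G x y z))
     \<and> (\<forall>x\<in>V. \<forall>y\<in>V. lin V (\<lambda>z. G x y z))"

lemma trilI: "(\<And>y z. y \<in> V \<Longrightarrow> z \<in> V \<Longrightarrow> lin V (\<lambda>x. G x y z)) \<Longrightarrow> (\<And>x z. x \<in> V \<Longrightarrow> z \<in> V \<Longrightarrow> lin V (\<lambda>y. G x y z))
   \<Longrightarrow> (\<And>x y. x \<in> V \<Longrightarrow> y \<in> V \<Longrightarrow> lin V (\<lambda>z. G x y z)) \<Longrightarrow> tril V G"
  by (simp add: tril_def)

context hheap begin

definition T2 :: "('a \<times> 'a \<Rightarrow> 'k) set" where "T2 = {t. \<exists>ps. trep FS FS t ps}"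

lemma sT2: "subspace T2"
  unfolding subspace_def T2_def
proof (intro conjI ballI allI; (elim CollectE exE)?)
  show "0 \<in> {t. \<exists>ps. trep FS FS t ps}" by (rule CollectI, rule exI[of _ "[]"]) (simp add: trep_def)
next
  fix u w :: "'a \<times> 'a \<Rightarrow> 'k" and ps qs assume "trep FS FS u ps" "trep FS FS w qs"
  then show "u + w \<in> {t. \<exists>ps. trep FS FS t ps}" using trep_append by blast
next
  fix c and u :: "'a \<times> 'a \<Rightarrow> 'k" and ps assume "trep FS FS u ps"
  then show "sc c u \<in> {t. \<exists>ps. trep FS FS t ps}" using trep_scale[OF sFS] by blast
qed

definition Gh :: "(('a \<Rightarrow> 'k) \<Rightarrow> ('a \<Rightarrow> 'k) \<Rightarrow> ('a \<Rightarrow> 'k) \<Rightarrow> ('v \<Rightarrow> 'k)) \<Rightarrow> ('a \<times> 'a \<Rightarrow> 'k) \<Rightarrow> ('a \<Rightarrow> 'k) \<Rightarrow> ('v \<Rightarrow> 'k)" where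
  "Gh G t w = sum_list (map (\<lambda>(u1,u2). G u1 u2 w) (SOME ps. trep FS FS t ps))"

lemma Gh_rep: assumes G: "tril FS G" and w: "w \<in> FS" and ps: "trep FS FS t ps"
  shows "Gh G t w = sum_list (map (\<lambda>(u1,u2). G u1 u2 w) ps)"
proof -
  have b: "bil FS FS (\<lambda>u1 u2. G u1 u2 w)" using G w by (auto simp: tril_def bil_def)
  have "trep FS FS t (SOME ps. trep FS FS t ps)" using ps by (rule someI)
  then show ?thesis unfolding Gh_def using trep_same[OF sFS b _ ps] by blast
qed

lemma Gh_bil: assumes G: "tril FS G" shows "bil T2 FS (Gh G)"
proof (rule bilI)
  fix w :: "'a \<Rightarrow> 'k" assume w: "w \<in> FS"
  have b: "bil FS FS (\<lambda>u1 u2. G u1 u2 w)" using G w by (auto simp: tril_def bil_def)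
  show "lin T2 (\<lambda>t. Gh G t w)" unfolding lin_def
  proof (intro conjI ballI allI)
    fix t t' :: "'a \<times> 'a \<Rightarrow> 'k" assume "t \<in> T2" "t' \<in> T2"
    then obtain ps qs where ps: "trep FS FS t ps" and qs: "trep FS FS t' qs" by (auto simp: T2_def)
    show "Gh G (t + t') w = Gh G t w + Gh G t' w"
      using Gh_rep[OF G w trep_append[OF ps qs]] Gh_rep[OF G w ps] Gh_rep[OF G w qs] by simp
  next
    fix c and t :: "'a \<times> 'a \<Rightarrow> 'k" assume "t \<in> T2"
    then obtain ps where ps: "trep FS FS t ps" by (auto simp: T2_def)
    have e: "sum_list (map (\<lambda>(u1,u2). G u1 u2 w) (map (\<lambda>(u,w). (sc c u, w)) ps))
      = sc c (sum_list (map (\<lambda>(u1,u2). G u1 u2 w) ps))"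
      unfolding map_map
    proof (rule sum_list_map_sc)
      fix p assume p: "p \<in> set ps"
      obtain x y where pe: "p = (x,y)" by fastforce
      have "x \<in> FS" "y \<in> FS" using ps p pe by (auto simp: trep_def)
      then have fe: "G (sc c x) y w = sc c (G x y w)" using lin_sc[OF bil_l[OF b]] by blast
      show "((\<lambda>(u1,u2). G u1 u2 w) \<circ> (\<lambda>(u,w). (sc c u, w))) p = sc c ((\<lambda>(u1,u2). G u1 u2 w) p)"
        unfolding pe comp_apply prod.case fe ..
    qed
    show "Gh G (sc c t) w = sc c (Gh G t w)"
      using Gh_rep[OF G w trep_scale[OF sFS ps]] Gh_rep[OF G w ps] e by simp
  qed
next
  fix t :: "'a \<times> 'a \<Rightarrow> 'k" assume "t \<in> T2"
  then obtain ps where ps: "trep FS FS t ps" by (auto simp: T2_def)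
  have psF: "\<And>p. p \<in> set ps \<Longrightarrow> fst p \<in> FS \<and> snd p \<in> FS" using ps by (auto simp: trep_def)
  have l3: "\<And>x y. x \<in> FS \<Longrightarrow> y \<in> FS \<Longrightarrow> lin FS (\<lambda>z. G x y z)" using G by (simp add: tril_def)
  show "lin FS (\<lambda>w. Gh G t w)" unfolding lin_def
  proof (intro conjI ballI allI)
    fix w w' :: "'a \<Rightarrow> 'k" assume w: "w \<in> FS" and w': "w' \<in> FS"
    have "sum_list (map (\<lambda>(u1,u2). G u1 u2 (w + w')) ps)
        = sum_list (map (\<lambda>p. (\<lambda>(u1,u2). G u1 u2 w) p + (\<lambda>(u1,u2). G u1 u2 w') p) ps)"
      by (rule arg_cong[where f=sum_list], rule map_cong[OF refl])
        (use psF w w' in \<open>auto simp: lin_add[OF l3] split: prod.splits\<close>)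
    then show "Gh G t (w + w') = Gh G t w + Gh G t w'"
      using Gh_rep[OF G w ps] Gh_rep[OF G w' ps] Gh_rep[OF G subspace_add[OF sFS w w'] ps]
      by (simp add: sum_list_addf)
  next
    fix c and w :: "'a \<Rightarrow> 'k" assume w: "w \<in> FS"
    have "sum_list (map (\<lambda>(u1,u2). G u1 u2 (sc c w)) ps) = sc c (sum_list (map (\<lambda>(u1,u2). G u1 u2 w) ps))"
      by (rule sum_list_map_sc) (use psF w in \<open>auto simp: lin_sc[OF l3] split: prod.splits\<close>)
    then show "Gh G t (sc c w) = sc c (Gh G t w)"
      using Gh_rep[OF G w ps] Gh_rep[OF G subspace_sc[OF sFS w] ps] by simp
  qed
qed

lemma coassoc:
  assumes a: "a \<in> FS" and G: "tril FS G"
  shows "SW a (\<lambda>u w. SW u (\<lambda>u1 u2. G u1 u2 w)) = SW a (\<lambda>u w. SW w (\<lambda>w1 w2. G u w1 w2))"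
proof -
  define l1 where "l1 = map (\<lambda>(u,w). (Dl u, w)) (sw a)"
  define l2 where "l2 = concat (map (\<lambda>(u,w). map (\<lambda>(w1,w2). (tens u w1, w2)) (sw w)) (sw a))"
  have swa: "\<And>p. p \<in> set (sw a) \<Longrightarrow> fst p \<in> FS \<and> snd p \<in> FS" using sw_FS[OF a] by blast
  have s1: "set l1 \<subseteq> T2 \<times> FS"
    unfolding l1_def T2_def using swa sw_rep by fastforce
  have s2: "set l2 \<subseteq> T2 \<times> FS"
  proof
    fix p assume "p \<in> set l2"
    then obtain u w w1 w2 where uw: "(u,w) \<in> set (sw a)" and w12: "(w1,w2) \<in> set (sw w)"
      and p: "p = (tens u w1, w2)" unfolding l2_def by auto
    have u: "u \<in> FS" and w: "w \<in> FS" using swa[OF uw] by auto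
    have "w1 \<in> FS" "w2 \<in> FS" using sw_FS[OF w w12] by auto
    then have "trep FS FS (tens u w1) [(u,w1)]" using u by (simp add: trep_def)
    then show "p \<in> T2 \<times> FS" using p \<open>w2 \<in> FS\<close> by (auto simp: T2_def)
  qed
  have e1: "sum_list (map (\<lambda>(t,w). tens t w) l1) = sum_list (map (\<lambda>(u,w). tens (Dl u) w) (sw a))"
    unfolding l1_def by (simp add: case_prod_unfold o_def)
  have "sum_list (map (\<lambda>(t,w). tens t w) l2)
      = sum_list (map (\<lambda>(u,w). sum_list (map (\<lambda>(w1,w2). tens (tens u w1) w2) (sw w))) (sw a))"
    unfolding l2_def by (simp add: sum_list_concat_map case_prod_unfold o_def)
  also have "\<dots> = sum_list (map (\<lambda>(u,w). reassoc (tens u (Dl w))) (sw a))"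
  proof (rule arg_cong[where f=sum_list], rule map_cong[OF refl])
    fix p assume p: "p \<in> set (sw a)"
    obtain u w where pe: "p = (u,w)" by fastforce
    have w: "w \<in> FS" using swa[OF p] pe by auto
    have "reassoc (tens u (Dl w)) = reassoc (tens u (sum_list (map (\<lambda>(w1,w2). tens w1 w2) (sw w))))"
      using sw_rep[OF w] by (simp add: trep_def)
    also have "\<dots> = sum_list (map (\<lambda>(w1,w2). tens (tens u w1) w2) (sw w))"
      by (simp add: tens_sum_r reassoc_sum case_prod_unfold reassoc_tens)
    finally show "(\<lambda>(u,w). sum_list (map (\<lambda>(w1,w2). tens (tens u w1) w2) (sw w))) p
        = (\<lambda>(u,w). reassoc (tens u (Dl w))) p" using pe by simp
  qed
  also have "\<dots> = reassoc (sum_list (map (\<lambda>(u,w). tens u (Dl w)) (sw a)))"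
    by (simp add: reassoc_sum case_prod_unfold)
  finally have e2: "sum_list (map (\<lambda>(t,w). tens t w) l2) = reassoc (sum_list (map (\<lambda>(u,w). tens u (Dl w)) (sw a)))" .
  have eq: "sum_list (map (\<lambda>(t,w). tens t w) l1) = sum_list (map (\<lambda>(t,w). tens t w) l2)"
    using e1 e2 coassoc_ax[OF a sw_rep[OF a]] by simp
  have main: "sum_list (map (\<lambda>(t,w). Gh G t w) l1) = sum_list (map (\<lambda>(t,w). Gh G t w) l2)"
    by (rule tens_rep_eq[OF sT2 sFS Gh_bil[OF G] s1 s2 eq])
  have L: "sum_list (map (\<lambda>(t,w). Gh G t w) l1) = SW a (\<lambda>u w. SW u (\<lambda>u1 u2. G u1 u2 w))"
    unfolding l1_def SW_def map_map
  proof (rule arg_cong[where f=sum_list], rule map_cong[OF refl])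
    fix p assume p: "p \<in> set (sw a)"
    obtain u w where pe: "p = (u,w)" by fastforce
    have u: "u \<in> FS" and w: "w \<in> FS" using swa[OF p] pe by auto
    show "((\<lambda>(t,w). Gh G t w) \<circ> (\<lambda>(u,w). (Dl u, w))) p
       = (\<lambda>(u,w). sum_list (map (\<lambda>(u1,u2). G u1 u2 w) (sw u))) p"
      using Gh_rep[OF G w sw_rep[OF u]] pe by simp
  qed
  have R: "sum_list (map (\<lambda>(t,w). Gh G t w) l2) = SW a (\<lambda>u w. SW w (\<lambda>w1 w2. G u w1 w2))"
    unfolding l2_def SW_def sum_list_concat_map
  proof (rule arg_cong[where f=sum_list], rule map_cong[OF refl])
    fix p assume p: "p \<in> set (sw a)"
    obtain u w where pe: "p = (u,w)" by fastforce
    have u: "u \<in> FS" and w: "w \<in> FS" using swa[OF p] pe by auto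
    have "sum_list (map (\<lambda>(t,w). Gh G t w) (map (\<lambda>(w1,w2). (tens u w1, w2)) (sw w)))
       = sum_list (map (\<lambda>(w1,w2). G u w1 w2) (sw w))"
      unfolding map_map
    proof (rule arg_cong[where f=sum_list], rule map_cong[OF refl])
      fix q assume q: "q \<in> set (sw w)"
      obtain w1 w2 where qe: "q = (w1,w2)" by fastforce
      have "w1 \<in> FS" "w2 \<in> FS" using sw_FS[OF w q] qe by auto
      then have "trep FS FS (tens u w1) [(u,w1)]" using u by (simp add: trep_def)
      then show "((\<lambda>(t,w). Gh G t w) \<circ> (\<lambda>(w1,w2). (tens u w1, w2))) q = (\<lambda>(w1,w2). G u w1 w2) q"
        using Gh_rep[OF G \<open>w2 \<in> FS\<close>] qe by simp
    qed
    then show "sum_list (map (\<lambda>(t,w). Gh G t w) ((\<lambda>(u,w). map (\<lambda>(w1,w2). (tens u w1, w2)) (sw w)) p))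
       = (\<lambda>(u,w). sum_list (map (\<lambda>(w1,w2). G u w1 w2) (sw w))) p"
      using pe by simp
  qed
  show ?thesis using main L R by simp
qed

end


section \<open>span\<close>

declare zero_fun_apply[simp del] plus_fun_apply[simp del] uminus_apply[simp del] minus_apply[simp del]

lemma span_subspace: "subspace (span (G :: ('z \<Rightarrow> 'k::field) set))"
  unfolding subspace_def span_def
proof (intro conjI ballI allI; (elim CollectE exE conjE)?)
  show "0 \<in> {v. \<exists>ps. set (map snd ps) \<subseteq> G \<and> v = sum_list (map (\<lambda>(c, g). sc c g) ps)}"
    by (rule CollectI, rule exI[of _ "[]"]) simp
next
  fix u w :: "'z \<Rightarrow> 'k" and ps qs
  assume "set (map snd ps) \<subseteq> G" "u = sum_list (map (\<lambda>(c, g). sc c g) ps)"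
    "set (map snd qs) \<subseteq> G" "w = sum_list (map (\<lambda>(c, g). sc c g) qs)"
  then show "u + w \<in> {v. \<exists>ps. set (map snd ps) \<subseteq> G \<and> v = sum_list (map (\<lambda>(c, g). sc c g) ps)}"
    by (intro CollectI exI[of _ "ps @ qs"]) auto
next
  fix c and u :: "'z \<Rightarrow> 'k" and ps
  assume "set (map snd ps) \<subseteq> G" "u = sum_list (map (\<lambda>(c, g). sc c g) ps)"
  then show "sc c u \<in> {v. \<exists>ps. set (map snd ps) \<subseteq> G \<and> v = sum_list (map (\<lambda>(c, g). sc c g) ps)}"
    by (intro CollectI exI[of _ "map (\<lambda>(d,g). (c * d, g)) ps"])
      (auto simp: sc_sum_list o_def case_prod_unfold sc_sc)
qed

lemma span_gen: "g \<in> G \<Longrightarrow> g \<in> span G"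
  unfolding span_def by (intro CollectI exI[of _ "[(1,g)]"]) (simp add: sc_one)

lemma span_induct[consumes 1, case_names zero step]:
  assumes t: "t \<in> span G" and z: "P 0"
    and s: "\<And>c g y. g \<in> G \<Longrightarrow> y \<in> span G \<Longrightarrow> P y \<Longrightarrow> P (sc c g + y)"
  shows "P t"
proof -
  obtain ps where ps: "set (map snd ps) \<subseteq> G" and te: "t = sum_list (map (\<lambda>(c, g). sc c g) ps)"
    using t unfolding span_def by blast
  have "set (map snd ps) \<subseteq> G \<Longrightarrow> P (sum_list (map (\<lambda>(c, g). sc c g) ps)) \<and> sum_list (map (\<lambda>(c, g). sc c g) ps) \<in> span G"
  proof (induction ps)
    case Nil then show ?case using z subspace_zero[OF span_subspace] by simp
  next
    case (Cons p ps)
    obtain c g where p: "p = (c,g)" by fastforce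
    have g: "g \<in> G" using Cons.prems p by auto
    have IH: "P (sum_list (map (\<lambda>(c, g). sc c g) ps)) \<and> sum_list (map (\<lambda>(c, g). sc c g) ps) \<in> span G"
      using Cons by auto
    have "sc c g \<in> span G" by (rule subspace_sc[OF span_subspace span_gen[OF g]])
    then show ?case using s[OF g] IH p subspace_add[OF span_subspace] by auto
  qed
  then show ?thesis using ps te by blast
qed

lemma lin_eq_span:
  assumes f: "lin (span G) f" and g: "lin (span G) g" and e: "\<And>x. x \<in> G \<Longrightarrow> f x = g x"
    and t: "t \<in> span G"
  shows "f t = g t"
  using t
proof (induction rule: span_induct)
  case zero show ?case using lin_zero[OF span_subspace f] lin_zero[OF span_subspace g] by simp
next
  case (step c x y)
  have x: "sc c x \<in> span G" by (rule subspace_sc[OF span_subspace span_gen[OF step(1)]])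
  show ?case using step lin_add[OF f x step(2)] lin_add[OF g x step(2)] lin_sc[OF f span_gen] lin_sc[OF g span_gen] e
    by simp
qed

lemma linf_eq_span:
  assumes f: "linf (span G) f" and g: "linf (span G) g" and e: "\<And>x. x \<in> G \<Longrightarrow> f x = g x"
    and t: "t \<in> span G"
  shows "f t = g t"
  using t
proof (induction rule: span_induct)
  case zero show ?case using linf_zero[OF span_subspace f] linf_zero[OF span_subspace g] by simp
next
  case (step c x y)
  have x: "sc c x \<in> span G" by (rule subspace_sc[OF span_subspace span_gen[OF step(1)]])
  show ?case using step linf_add[OF f x step(2)] linf_add[OF g x step(2)] linf_sc[OF f span_gen] linf_sc[OF g span_gen] e
    by simp
qed

lemma lin_image_span:
  assumes f: "lin (span G) f" and W: "subspace W" and e: "\<And>x. x \<in> G \<Longrightarrow> f x \<in> W"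
    and t: "t \<in> span G"
  shows "f t \<in> W"
  using t
proof (induction rule: span_induct)
  case zero show ?case using lin_zero[OF span_subspace f] subspace_zero[OF W] by simp
next
  case (step c x y)
  have x: "sc c x \<in> span G" by (rule subspace_sc[OF span_subspace span_gen[OF step(1)]])
  show ?case using step lin_add[OF f x step(2)] lin_sc[OF f span_gen[OF step(1)]] e[OF step(1)] W
    by (simp add: subspace_add subspace_sc)
qed

lemma span_prop[consumes 1, case_names zero gen add scl]:
  assumes t: "t \<in> span G" and z: "P 0" and e: "\<And>x. x \<in> G \<Longrightarrow> P x"
    and add: "\<And>x y. x \<in> span G \<Longrightarrow> y \<in> span G \<Longrightarrow> P x \<Longrightarrow> P y \<Longrightarrow> P (x + y)"
    and scl: "\<And>c x. x \<in> span G \<Longrightarrow> P x \<Longrightarrow> P (sc c x)"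
  shows "P t"
  using t
proof (induction rule: span_induct)
  case zero then show ?case using z by simp
next
  case (step c g y)
  have "sc c g \<in> span G" by (rule subspace_sc[OF span_subspace span_gen[OF step(1)]])
  then show ?case using step add scl e span_gen by blast
qed


lemma app_apply: "app F c x = F (c,x)" by (simp add: app_def)
lemma app_end_of: "c \<in> FS \<Longrightarrow> app (end_of g) c = g c" by (rule ext) (simp add: app_def end_of_def)
lemma end_of_out: "c \<notin> FS \<Longrightarrow> end_of g (c,x) = 0" by (simp add: end_of_def)
lemma app_add: "app (F + G) c = app F c + app G c" by (rule ext) (simp add: app_def plus_fun_apply)
lemma app_sc: "app (sc d F) c = sc d (app F c)" by (rule ext) (simp add: app_def sc_apply)
lemma app_zero: "app 0 c = 0" by (rule ext) (simp add: app_def zero_fun_apply)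
lemma end_of_add: "end_of (\<lambda>c. g c + h c) = end_of g + end_of h" for g :: "('a \<Rightarrow> 'k::field) \<Rightarrow> 'a \<Rightarrow> 'k"
  by (rule ext) (auto simp: end_of_def plus_fun_apply)
lemma end_of_sc: "end_of (\<lambda>c. sc d (g c)) = sc d (end_of g)" for g :: "('a \<Rightarrow> 'k::field) \<Rightarrow> 'a \<Rightarrow> 'k"
  by (rule ext) (auto simp: end_of_def sc_apply)
lemma end_of_cong: "(\<And>c. c \<in> FS \<Longrightarrow> g c = h c) \<Longrightarrow> end_of g = end_of h"
  by (rule ext) (auto simp: end_of_def)
lemma end_of_eqI: "(\<And>c. c \<in> FS \<Longrightarrow> app F c = g c) \<Longrightarrow> (\<And>c x. c \<notin> FS \<Longrightarrow> F (c,x) = 0) \<Longrightarrow> F = end_of g"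
  by (rule ext) (auto simp: end_of_def app_def fun_eq_iff)

context hheap begin

abbreviation TN :: "(('a \<Rightarrow> 'k) \<times> 'a \<Rightarrow> 'k) set" where "TN \<equiv> Tn br"
abbreviation gens :: "(('a \<Rightarrow> 'k) \<times> 'a \<Rightarrow> 'k) set" where "gens \<equiv> {tau br a b | a b. a \<in> FS \<and> b \<in> FS}"

lemma TN_span: "TN = span gens" by (simp add: Tn_def)
lemma sTN: "subspace TN" by (simp add: Tn_def span_subspace)
lemma tau_TN: "a \<in> FS \<Longrightarrow> b \<in> FS \<Longrightarrow> tau br a b \<in> TN"
  unfolding Tn_def by (rule span_gen) blast

lemma tau_app: "c \<in> FS \<Longrightarrow> app (tau br a b) c = br c a b"
  by (simp add: tau_def app_end_of)
lemma tau_out: "c \<notin> FS \<Longrightarrow> tau br a b (c,x) = 0"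
  by (simp add: tau_def end_of_out)

lemma TN_props: "t \<in> TN \<Longrightarrow> end_of (app t) = t \<and> (\<forall>c\<in>FS. app t c \<in> FS) \<and> lin FS (app t)"
  unfolding TN_span
proof (induction t rule: span_prop)
  case zero
  have e1: "end_of (app 0) = (0 :: ('a \<Rightarrow> 'k) \<times> 'a \<Rightarrow> 'k)"
    by (rule ext) (simp add: end_of_def app_zero zero_fun_apply split: prod.splits)
  have e2: "\<forall>c\<in>FS. app (0 :: ('a \<Rightarrow> 'k) \<times> 'a \<Rightarrow> 'k) c \<in> FS" by (simp add: app_zero subspace_zero[OF sFS])
  have e3: "lin FS (app (0 :: ('a \<Rightarrow> 'k) \<times> 'a \<Rightarrow> 'k))" unfolding lin_def by (simp add: app_zero sc_zero_r)
  show ?case using e1 e2 e3 by blast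
next
  case (gen x)
  then obtain a b where x: "x = tau br a b" and a: "a \<in> FS" and b: "b \<in> FS" by blast
  have "end_of (app x) = x" unfolding x tau_def by (rule end_of_cong) (simp add: app_end_of)
  moreover have "\<forall>c\<in>FS. app x c \<in> FS" using x a b by (simp add: tau_app br_FS)
  moreover have "lin FS (app x)"
    using br_lin1[OF a b] unfolding lin_def x by (simp add: tau_app subspace_add[OF sFS] subspace_sc[OF sFS])
  ultimately show ?case by blast
next
  case (add x y)
  have ax: "app (x + y) = (\<lambda>c. app x c + app y c)" by (rule ext) (rule app_add)
  have "end_of (app (x + y)) = x + y"
    using add.IH unfolding ax end_of_add by simp
  moreover have "\<forall>c\<in>FS. app (x + y) c \<in> FS" using add.IH by (simp add: app_add subspace_add[OF sFS])
  moreover have "lin FS (app (x + y))"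
    unfolding lin_def
  proof (intro conjI ballI allI)
    fix u w :: "'a \<Rightarrow> 'k" assume u: "u \<in> FS" and w: "w \<in> FS"
    have lx: "lin FS (app x)" and ly: "lin FS (app y)" using add.IH by blast+
    show "app (x + y) (u + w) = app (x + y) u + app (x + y) w"
      unfolding app_add lin_add[OF lx u w] lin_add[OF ly u w] by (simp only: ac_simps)
  next
    fix c and u :: "'a \<Rightarrow> 'k" assume u: "u \<in> FS"
    have lx: "lin FS (app x)" and ly: "lin FS (app y)" using add.IH by blast+
    show "app (x + y) (sc c u) = sc c (app (x + y) u)"
      unfolding app_add lin_sc[OF lx u] lin_sc[OF ly u] sc_add ..
  qed
  ultimately show ?case by blast
next
  case (scl c x)
  have ax: "app (sc c x) = (\<lambda>d. sc c (app x d))" by (rule ext) (rule app_sc)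
  have "end_of (app (sc c x)) = sc c x"
    using scl.IH unfolding ax end_of_sc by simp
  moreover have "\<forall>d\<in>FS. app (sc c x) d \<in> FS" using scl.IH by (simp add: app_sc subspace_sc[OF sFS])
  moreover have "lin FS (app (sc c x))"
    unfolding lin_def
  proof (intro conjI ballI allI)
    fix u w :: "'a \<Rightarrow> 'k" assume u: "u \<in> FS" and w: "w \<in> FS"
    have lx: "lin FS (app x)" using scl.IH by blast
    show "app (sc c x) (u + w) = app (sc c x) u + app (sc c x) w"
      unfolding app_sc lin_add[OF lx u w] sc_add ..
  next
    fix d and u :: "'a \<Rightarrow> 'k" assume u: "u \<in> FS"
    have lx: "lin FS (app x)" using scl.IH by blast
    show "app (sc c x) (sc d u) = sc d (app (sc c x) u)"
      unfolding app_sc lin_sc[OF lx u] sc_sc by (simp only: mult.commute)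
  qed
  ultimately show ?case by blast
qed

lemma TN_end_of: "t \<in> TN \<Longrightarrow> end_of (app t) = t" using TN_props by blast
lemma TN_app_FS: "t \<in> TN \<Longrightarrow> c \<in> FS \<Longrightarrow> app t c \<in> FS" using TN_props by blast
lemma TN_app_lin: "t \<in> TN \<Longrightarrow> lin FS (app t)" using TN_props by blast
lemma TN_out: "t \<in> TN \<Longrightarrow> c \<notin> FS \<Longrightarrow> t (c,x) = 0"
  using TN_end_of end_of_out by metis
lemma TN_eqI: "s \<in> TN \<Longrightarrow> t \<in> TN \<Longrightarrow> (\<And>c. c \<in> FS \<Longrightarrow> app s c = app t c) \<Longrightarrow> s = t"
  by (metis TN_end_of end_of_cong)

lemma tau_lin1: "b \<in> FS \<Longrightarrow> lin FS (\<lambda>a. tau br a b)"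
  unfolding lin_def
proof (intro conjI ballI allI)
  fix u w :: "'a \<Rightarrow> 'k" assume b: "b \<in> FS" and u: "u \<in> FS" and w: "w \<in> FS"
  have "tau br (u + w) b = end_of (\<lambda>c. br c u b + br c w b)"
    unfolding tau_def by (rule end_of_cong) (simp add: lin_add[OF br_lin2[OF _ b] u w])
  then show "tau br (u + w) b = tau br u b + tau br w b" by (simp add: end_of_add tau_def)
next
  fix c and u :: "'a \<Rightarrow> 'k" assume b: "b \<in> FS" and u: "u \<in> FS"
  have "tau br (sc c u) b = end_of (\<lambda>d. sc c (br d u b))"
    unfolding tau_def by (rule end_of_cong) (simp add: lin_sc[OF br_lin2[OF _ b] u])
  then show "tau br (sc c u) b = sc c (tau br u b)" by (simp add: end_of_sc tau_def)
qed

lemma tau_lin2: "a \<in> FS \<Longrightarrow> lin FS (\<lambda>b. tau br a b)"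
  unfolding lin_def
proof (intro conjI ballI allI)
  fix u w :: "'a \<Rightarrow> 'k" assume a: "a \<in> FS" and u: "u \<in> FS" and w: "w \<in> FS"
  have "tau br a (u + w) = end_of (\<lambda>c. br c a u + br c a w)"
    unfolding tau_def by (rule end_of_cong) (simp add: lin_add[OF br_lin3[OF _ a] u w])
  then show "tau br a (u + w) = tau br a u + tau br a w" by (simp add: end_of_add tau_def)
next
  fix c and u :: "'a \<Rightarrow> 'k" assume a: "a \<in> FS" and u: "u \<in> FS"
  have "tau br a (sc c u) = end_of (\<lambda>d. sc c (br d a u))"
    unfolding tau_def by (rule end_of_cong) (simp add: lin_sc[OF br_lin3[OF _ a] u])
  then show "tau br a (sc c u) = sc c (tau br a u)" by (simp add: end_of_sc tau_def)
qed

lemma tn_mult_tau: "a \<in> FS \<Longrightarrow> b \<in> FS \<Longrightarrow> c \<in> FS \<Longrightarrow> d \<in> FS \<Longrightarrow>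
   tn_mult (tau br a b) (tau br c d) = tau br a (br b c d)"
  unfolding tn_mult_def tau_def
  by (rule end_of_cong) (simp add: app_end_of br_FS br_assoc)

lemma tn_mult_app: "s \<in> TN \<Longrightarrow> c \<in> FS \<Longrightarrow> app (tn_mult s t) c = app t (app s c)"
  by (simp add: tn_mult_def app_end_of)

end


lemma subspace_UNIV: "subspace (UNIV :: ('z \<Rightarrow> 'k::field) set)" by (simp add: subspace_def)

lemma lin_compose: "lin V f \<Longrightarrow> (\<And>x. x \<in> V \<Longrightarrow> f x \<in> W) \<Longrightarrow> lin W g \<Longrightarrow> lin V (\<lambda>x. g (f x))"
  unfolding lin_def by (metis)

lemma lin_tens_l: "lin V f \<Longrightarrow> lin V (\<lambda>x. tens (f x) w)"
  unfolding lin_def by (simp add: tens_add_l tens_sc_l)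
lemma lin_tens_r: "lin V f \<Longrightarrow> lin V (\<lambda>x. tens w (f x))"
  unfolding lin_def by (simp add: tens_add_r tens_sc_r)
lemma lin_addf: "lin V f \<Longrightarrow> lin V g \<Longrightarrow> lin V (\<lambda>x. f x + g x)"
  unfolding lin_def by (simp add: sc_add ac_simps)
lemma lin_scf: "lin V f \<Longrightarrow> lin V (\<lambda>x. sc c (f x))"
  unfolding lin_def by (simp add: sc_add sc_sc mult.commute)
lemma lin_sum_listf: "(\<And>i. i \<in> set xs \<Longrightarrow> lin V (\<lambda>x. f i x)) \<Longrightarrow> lin V (\<lambda>x. sum_list (map (\<lambda>i. f i x) xs))"
proof (induction xs)
  case Nil then show ?case by (simp add: lin_def sc_zero_r)
next
  case (Cons a xs)
  then show ?case using lin_addf[of V "\<lambda>x. f a x" "\<lambda>x. sum_list (map (\<lambda>i. f i x) xs)"] by simp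
qed

lemma reassoc_sc: "reassoc (sc c f) = sc c (reassoc f)"
  by (rule ext) (simp add: reassoc_def sc_apply split: prod.splits)
lemma lin_reassoc: "lin V f \<Longrightarrow> lin V (\<lambda>x. reassoc (f x))"
  unfolding lin_def by (simp add: reassoc_add reassoc_sc)

context hheap begin

lemma lin_SW: "(\<And>u w. u \<in> FS \<Longrightarrow> w \<in> FS \<Longrightarrow> lin V (\<lambda>x. F x u w)) \<Longrightarrow> a \<in> FS \<Longrightarrow> lin V (\<lambda>x. SW a (F x))"
  unfolding SW_def case_prod_unfold by (rule lin_sum_listf) (auto dest: sw_FS)

lemma lin_br1: "lin V f \<Longrightarrow> (\<And>x. x \<in> V \<Longrightarrow> f x \<in> FS) \<Longrightarrow> b \<in> FS \<Longrightarrow> c \<in> FS \<Longrightarrow> lin V (\<lambda>x. br (f x) b c)"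
  by (rule lin_compose[OF _ _ br_lin1])
lemma lin_br2: "lin V f \<Longrightarrow> (\<And>x. x \<in> V \<Longrightarrow> f x \<in> FS) \<Longrightarrow> a \<in> FS \<Longrightarrow> c \<in> FS \<Longrightarrow> lin V (\<lambda>x. br a (f x) c)"
  by (rule lin_compose[OF _ _ br_lin2])
lemma lin_br3: "lin V f \<Longrightarrow> (\<And>x. x \<in> V \<Longrightarrow> f x \<in> FS) \<Longrightarrow> a \<in> FS \<Longrightarrow> b \<in> FS \<Longrightarrow> lin V (\<lambda>x. br a b (f x))"
  by (rule lin_compose[OF _ _ br_lin3])

lemma ex_kk: "\<exists>k. k \<in> FS \<and> ep k = 1"
proof -
  obtain a :: "'a \<Rightarrow> 'k" where a: "a \<in> FS" "a \<noteq> 0" using FS_nz subspace_zero[OF sFS] by blast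
  have "\<exists>u\<in>FS. ep u \<noteq> 0"
  proof (rule ccontr)
    assume "\<not> ?thesis"
    then have "\<And>u. u \<in> FS \<Longrightarrow> ep u = 0" by blast
    then have e1: "SW a (\<lambda>u w. sc (ep u) w) = SW a (\<lambda>u w. 0)"
      by (intro SW_cong[OF a(1)]) (simp add: sc_zero_l)
    have e2: "SW a (\<lambda>u w. sc (ep u) w) = a" using counit_ax[OF a(1) sw_rep[OF a(1)]] by (simp add: SW_def)
    have "a = 0" using e1 e2 SW_zero[of a] by metis
    then show False using a(2) by simp
  qed
  then obtain u where u: "u \<in> FS" "ep u \<noteq> 0" by blast
  have "ep (sc (1 / ep u) u) = 1" using linf_sc[OF linep u(1)] u(2) by simp
  then show ?thesis using subspace_sc[OF sFS u(1)] by blast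
qed

definition kk :: "'a \<Rightarrow> 'k" where "kk = (SOME k. k \<in> FS \<and> ep k = 1)"
lemma kk: "kk \<in> FS" "ep kk = 1" using someI_ex[OF ex_kk] by (auto simp: kk_def)

lemma contract:
  assumes c: "c \<in> FS" and d: "d \<in> FS" and P: "bil FS FS Phi"
  shows "SW kk (\<lambda>k1 k'. SW k' (\<lambda>k2 k3. SW k3 (\<lambda>m1 m2. Phi (br c k2 m1) (br d k1 m2)))) = Phi c d"
proof -
  have P1: "\<And>Y. Y \<in> FS \<Longrightarrow> lin FS (\<lambda>X. Phi X Y)" and P2: "\<And>X. X \<in> FS \<Longrightarrow> lin FS (\<lambda>Y. Phi X Y)"
    using P by (auto simp: bil_def)
  have step: "SW k' (\<lambda>k2 k3. SW k3 (\<lambda>m1 m2. Phi (br c k2 m1) (br d k1 m2))) = Phi c (br d k1 k')"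
    if k1: "k1 \<in> FS" and k': "k' \<in> FS" for k1 k'
  proof -
    define G where "G = (\<lambda>k2 m1 m2. Phi (br c k2 m1) (br d k1 m2))"
    have G: "tril FS G" unfolding G_def
    proof (rule trilI)
      fix y z :: "'a \<Rightarrow> 'k" assume "y \<in> FS" "z \<in> FS"
      then show "lin FS (\<lambda>x. Phi (br c x y) (br d k1 z))"
        using c d k1 by (intro lin_compose[OF lin_br2[OF lin_idI] _ P1]) (auto intro: br_FS)
    next
      fix x z :: "'a \<Rightarrow> 'k" assume "x \<in> FS" "z \<in> FS"
      then show "lin FS (\<lambda>y. Phi (br c x y) (br d k1 z))"
        using c d k1 by (intro lin_compose[OF lin_br3[OF lin_idI] _ P1]) (auto intro: br_FS)
    next
      fix x y :: "'a \<Rightarrow> 'k" assume "x \<in> FS" "y \<in> FS"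
      then show "lin FS (\<lambda>z. Phi (br c x y) (br d k1 z))"
        using c d k1 by (intro lin_compose[OF lin_br3[OF lin_idI] _ P2]) (auto intro: br_FS)
    qed
    have "SW k' (\<lambda>k2 k3. SW k3 (\<lambda>m1 m2. Phi (br c k2 m1) (br d k1 m2)))
        = SW k' (\<lambda>u w. SW w (\<lambda>w1 w2. G u w1 w2))" by (simp add: G_def)
    also have "\<dots> = SW k' (\<lambda>u w. SW u (\<lambda>u1 u2. G u1 u2 w))" by (rule coassoc[OF k' G, symmetric])
    also have "\<dots> = SW k' (\<lambda>n m2. sc (ep n) (Phi c (br d k1 m2)))"
    proof (rule SW_cong[OF k'])
      fix n m2 :: "'a \<Rightarrow> 'k" assume n: "n \<in> FS" and m2: "m2 \<in> FS"
      show "SW n (\<lambda>u1 u2. G u1 u2 m2) = sc (ep n) (Phi c (br d k1 m2))"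
        unfolding G_def by (rule hcounit2[OF c n P1[OF br_FS[OF d k1 m2]]])
    qed
    also have "\<dots> = Phi c (br d k1 k')"
      by (rule counit1[OF k' subspace_UNIV lin_br3[OF lin_idI _ d k1, THEN lin_compose[OF _ _ P2[OF c]]]])
        (auto intro: br_FS d k1)
    finally show ?thesis .
  qed
  have "SW kk (\<lambda>k1 k'. SW k' (\<lambda>k2 k3. SW k3 (\<lambda>m1 m2. Phi (br c k2 m1) (br d k1 m2))))
     = SW kk (\<lambda>k1 k'. Phi c (br d k1 k'))"
    by (rule SW_cong[OF kk(1)]) (rule step)
  also have "\<dots> = sc (ep kk) (Phi c d)" by (rule hcounit2[OF d kk(1) P2[OF c]])
  finally show ?thesis by (simp add: kk(2) sc_one)
qed

end


lemma lin_app: "lin V (\<lambda>F. app F c)"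
  unfolding lin_def by (simp add: app_add app_sc)

context hheap begin

lemma SW_apply': "SW a F p = sum_list (map (\<lambda>(u,w). F u w p) (sw a))"
  unfolding SW_def by (simp add: sum_list_map_apply case_prod_unfold)

definition DC :: "(('a \<Rightarrow> 'k) \<times> 'a \<Rightarrow> 'k) \<Rightarrow> ('a \<Rightarrow> 'k) \<Rightarrow> ('a \<Rightarrow> 'k) \<Rightarrow> ('a \<times> 'a \<Rightarrow> 'k)" where
  "DC t c d = SW kk (\<lambda>k1 k'. SW k' (\<lambda>k2 k3. SW (app t k3) (\<lambda>v1 v2. tens (br c k2 v1) (br d k1 v2))))"

definition DTc :: "(('a \<Rightarrow> 'k) \<times> 'a \<Rightarrow> 'k) \<Rightarrow> ((('a \<Rightarrow> 'k) \<times> 'a) \<times> (('a \<Rightarrow> 'k) \<times> 'a) \<Rightarrow> 'k)" where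
  "DTc t = (\<lambda>((c,x),(d,y)). if c \<in> FS \<and> d \<in> FS then DC t c d (x,y) else 0)"

definition eTc :: "(('a \<Rightarrow> 'k) \<times> 'a \<Rightarrow> 'k) \<Rightarrow> 'k" where
  "eTc t = ep (app t kk)"

lemma bil_tens_br: "c \<in> FS \<Longrightarrow> d \<in> FS \<Longrightarrow> k1 \<in> FS \<Longrightarrow> k2 \<in> FS \<Longrightarrow>
   bil FS FS (\<lambda>v1 v2. tens (br c k2 v1) (br d k1 v2))"
  by (rule bilI) (auto intro!: lin_tens_l lin_tens_r lin_br3 lin_idI)

lemma bil_Phi: "a \<in> FS \<Longrightarrow> b \<in> FS \<Longrightarrow>
   bil FS FS (\<lambda>X Y. SW a (\<lambda>a1 a2. SW b (\<lambda>b1 b2. tens (br X a2 b1) (br Y a1 b2))))"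
  by (rule bilI) (auto intro!: lin_SW lin_tens_l lin_tens_r lin_br1 lin_idI)

lemma bil_tens: "bil FS FS (\<lambda>X Y. tens X Y)"
  by (rule bilI) (auto intro!: lin_tens_l lin_tens_r lin_idI)

lemma DC_tau:
  assumes a: "a \<in> FS" and b: "b \<in> FS" and c: "c \<in> FS" and d: "d \<in> FS"
  shows "DC (tau br a b) c d = SW a (\<lambda>a1 a2. SW b (\<lambda>b1 b2. tens (br c a2 b1) (br d a1 b2)))"
proof -
  define Phi where "Phi = (\<lambda>X Y. SW a (\<lambda>a1 a2. SW b (\<lambda>b1 b2. tens (br X a2 b1) (br Y a1 b2))))"
  have "DC (tau br a b) c d = SW kk (\<lambda>k1 k'. SW k' (\<lambda>k2 k3. SW k3 (\<lambda>m1 m2. Phi (br c k2 m1) (br d k1 m2))))"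
    unfolding DC_def
  proof (rule SW_cong[OF kk(1)], rule SW_cong)
    fix k1 k' k2 k3 :: "'a \<Rightarrow> 'k" assume k1: "k1 \<in> FS" and k': "k' \<in> FS" and k2: "k2 \<in> FS" and k3: "k3 \<in> FS"
    show "k' \<in> FS" by fact
    have "SW (app (tau br a b) k3) (\<lambda>v1 v2. tens (br c k2 v1) (br d k1 v2))
        = SW (br k3 a b) (\<lambda>v1 v2. tens (br c k2 v1) (br d k1 v2))" by (simp add: tau_app k3)
    also have "\<dots> = SW k3 (\<lambda>m1 m2. SW a (\<lambda>a1 a2. SW b (\<lambda>b1 b2.
          tens (br c k2 (br m1 a2 b1)) (br d k1 (br m2 a1 b2)))))"
      by (rule SW_br[OF bil_tens_br[OF c d k1 k2] k3 a b])
    also have "\<dots> = SW k3 (\<lambda>m1 m2. Phi (br c k2 m1) (br d k1 m2))"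
      unfolding Phi_def
      by (intro SW_cong[OF k3] SW_cong[OF a] SW_cong[OF b]) (simp add: br_assoc c d k1 k2)
    finally show "SW (app (tau br a b) k3) (\<lambda>v1 v2. tens (br c k2 v1) (br d k1 v2))
        = SW k3 (\<lambda>m1 m2. Phi (br c k2 m1) (br d k1 m2))" .
  qed
  also have "\<dots> = Phi c d" by (rule contract[OF c d]) (unfold Phi_def, rule bil_Phi[OF a b])
  finally show ?thesis by (simp add: Phi_def)
qed

end


context hheap begin

lemma trep_FS: "trep FS FS t ps \<Longrightarrow> p \<in> set ps \<Longrightarrow> fst p \<in> FS \<and> snd p \<in> FS"
  by (auto simp: trep_def)

lemma bil_sum_list: "(\<And>p. p \<in> set qs \<Longrightarrow> bil U W (\<lambda>u w. G u w p)) \<Longrightarrow>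
    bil U W (\<lambda>u w. sum_list (map (\<lambda>p. G u w p) qs))"
  by (rule bilI) (auto intro!: lin_sum_listf dest: bil_l bil_r)

lemma SW2_rep:
  assumes a: "a \<in> FS" and b: "b \<in> FS" and ps: "trep FS FS (Dl a) ps" and qs: "trep FS FS (Dl b) qs"
    and G1: "\<And>b1 b2. b1 \<in> FS \<Longrightarrow> b2 \<in> FS \<Longrightarrow> bil FS FS (\<lambda>a1 a2. G a1 a2 b1 b2)"
    and G2: "\<And>a1 a2. a1 \<in> FS \<Longrightarrow> a2 \<in> FS \<Longrightarrow> bil FS FS (\<lambda>b1 b2. G a1 a2 b1 b2)"
  shows "SW a (\<lambda>a1 a2. SW b (\<lambda>b1 b2. G a1 a2 b1 b2))
     = sum_list (map (\<lambda>(a1,a2). sum_list (map (\<lambda>(b1,b2). G a1 a2 b1 b2) qs)) ps)"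
proof -
  have "SW a (\<lambda>a1 a2. SW b (\<lambda>b1 b2. G a1 a2 b1 b2))
      = SW a (\<lambda>a1 a2. sum_list (map (\<lambda>(b1,b2). G a1 a2 b1 b2) qs))"
    by (rule SW_cong[OF a]) (rule SW_rep[OF G2 qs])
  also have "\<dots> = sum_list (map (\<lambda>(a1,a2). sum_list (map (\<lambda>(b1,b2). G a1 a2 b1 b2) qs)) ps)"
  proof (rule SW_rep[OF _ ps])
    show "bil FS FS (\<lambda>a1 a2. sum_list (map (\<lambda>(b1,b2). G a1 a2 b1 b2) qs))"
      unfolding case_prod_unfold
      by (rule bil_sum_list) (use G1 trep_FS[OF qs] in blast)
  qed
  finally show ?thesis .
qed

lemma DTc_tau:
  assumes a: "a \<in> FS" and b: "b \<in> FS" and ps: "trep FS FS (Dl a) ps" and qs: "trep FS FS (Dl b) qs"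
  shows "DTc (tau br a b) = sum_list (map (\<lambda>(a1,a2). sum_list (map (\<lambda>(b1,b2).
              tens (tau br a2 b1) (tau br a1 b2)) qs)) ps)"
proof (rule ext, clarify)
  fix c x d y
  have rhs: "sum_list (map (\<lambda>(a1,a2). sum_list (map (\<lambda>(b1,b2).
              tens (tau br a2 b1) (tau br a1 b2)) qs)) ps) ((c,x),(d,y))
     = sum_list (map (\<lambda>(a1,a2). sum_list (map (\<lambda>(b1,b2).
              tau br a2 b1 (c,x) * tau br a1 b2 (d,y)) qs)) ps)"
    by (simp add: sum_list_map_apply case_prod_unfold)
  show "DTc (tau br a b) ((c,x),(d,y)) = sum_list (map (\<lambda>(a1,a2). sum_list (map (\<lambda>(b1,b2).
              tens (tau br a2 b1) (tau br a1 b2)) qs)) ps) ((c,x),(d,y))"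
  proof (cases "c \<in> FS \<and> d \<in> FS")
    case True
    then have c: "c \<in> FS" and d: "d \<in> FS" by auto
    have "DTc (tau br a b) ((c,x),(d,y)) = DC (tau br a b) c d (x,y)" using True by (simp add: DTc_def)
    also have "DC (tau br a b) c d = sum_list (map (\<lambda>(a1,a2). sum_list (map (\<lambda>(b1,b2).
              tens (br c a2 b1) (br d a1 b2)) qs)) ps)"
      unfolding DC_tau[OF a b c d]
      by (rule SW2_rep[OF a b ps qs]) (auto intro!: bilI lin_tens_l lin_tens_r lin_br2 lin_br3 lin_idI c d)
    finally show ?thesis unfolding rhs
      by (simp add: sum_list_map_apply case_prod_unfold tau_def end_of_def c d app_def)
  next
    case False
    then have "DTc (tau br a b) ((c,x),(d,y)) = 0" by (auto simp: DTc_def)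
    moreover have "sum_list (map (\<lambda>(a1,a2). sum_list (map (\<lambda>(b1,b2).
              tau br a2 b1 (c,x) * tau br a1 b2 (d,y)) qs)) ps) = 0"
      using False by (induction ps) (auto simp: tau_out sum_list_zero case_prod_unfold)
    ultimately show ?thesis using rhs by simp
  qed
qed

lemma lin_DC: "c \<in> FS \<Longrightarrow> d \<in> FS \<Longrightarrow> lin TN (\<lambda>t. DC t c d)"
  unfolding DC_def
proof (intro lin_SW kk(1))
  fix k1 k' k2 k3 :: "'a \<Rightarrow> 'k"
  assume c: "c \<in> FS" and d: "d \<in> FS" and k1: "k1 \<in> FS" and k': "k' \<in> FS" and k2: "k2 \<in> FS" and k3: "k3 \<in> FS"
  show "lin TN (\<lambda>t. SW (app t k3) (\<lambda>v1 v2. tens (br c k2 v1) (br d k1 v2)))"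
    by (rule lin_compose[OF lin_app _ SW_lin_a[OF bil_tens_br[OF c d k1 k2]]]) (rule TN_app_FS[OF _ k3])
qed

lemma lin_DTc: "lin TN DTc"
  unfolding lin_def
proof (intro conjI ballI allI)
  fix t t' assume t: "t \<in> TN" and t': "t' \<in> TN"
  show "DTc (t + t') = DTc t + DTc t'"
    by (rule ext) (auto simp: DTc_def plus_fun_apply lin_add[OF lin_DC t t'] zero_fun_apply)
next
  fix e t assume t: "t \<in> TN"
  show "DTc (sc e t) = sc e (DTc t)"
    by (rule ext) (auto simp: DTc_def sc_apply lin_sc[OF lin_DC t])
qed

lemma linf_eTc: "linf TN eTc"
  unfolding linf_def eTc_def
  by (simp add: app_add app_sc linf_add[OF linep] linf_sc[OF linep] TN_app_FS kk(1))

lemma eTc_tau: "a \<in> FS \<Longrightarrow> b \<in> FS \<Longrightarrow> eTc (tau br a b) = ep a * ep b"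
  by (simp add: eTc_def tau_app kk ep_br)

lemma unit_SW: "tn_unit = SW kk (\<lambda>k1 k2. tau br k1 k2)"
proof (rule ext, clarify)
  fix c x
  show "tn_unit (c,x) = SW kk (\<lambda>k1 k2. tau br k1 k2) (c,x)"
  proof (cases "c \<in> FS")
    case True
    have "SW kk (\<lambda>k1 k2. tau br k1 k2) (c,x) = SW kk (\<lambda>k1 k2. br c k1 k2) x"
      unfolding SW_apply' using True by (simp add: tau_def end_of_def)
    also have "SW kk (\<lambda>k1 k2. br c k1 k2) = sc (ep kk) c"
      using hcounit2[OF True kk(1) lin_idI] by simp
    finally show ?thesis using True by (simp add: tn_unit_def end_of_def kk sc_apply)
  next
    case False
    then show ?thesis unfolding SW_apply'
      by (simp add: tn_unit_def end_of_def tau_out sum_list_zero case_prod_unfold)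
  qed
qed

lemma unit_TN: "tn_unit \<in> TN"
  unfolding unit_SW by (rule SW_mem[OF sTN kk(1)]) (rule tau_TN)

lemma DTc_unit: "DTc tn_unit = tens tn_unit tn_unit"
proof (rule ext, clarify)
  fix c x d y
  show "DTc tn_unit ((c,x),(d,y)) = tens tn_unit tn_unit ((c,x),(d,y))"
  proof (cases "c \<in> FS \<and> d \<in> FS")
    case True
    then have c: "c \<in> FS" and d: "d \<in> FS" by auto
    have "DC tn_unit c d = SW kk (\<lambda>k1 k'. SW k' (\<lambda>k2 k3. SW k3 (\<lambda>m1 m2. tens (br c k2 m1) (br d k1 m2))))"
      unfolding DC_def
      by (intro SW_cong[OF kk(1)] SW_cong) (simp_all add: tn_unit_def app_end_of)
    also have "\<dots> = tens c d" by (rule contract[OF c d bil_tens])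
    finally show ?thesis using True by (simp add: DTc_def tn_unit_def end_of_def)
  next
    case False
    then show ?thesis by (auto simp: DTc_def tn_unit_def end_of_def)
  qed
qed

lemma eTc_unit: "eTc tn_unit = 1"
  by (simp add: eTc_def tn_unit_def app_end_of kk)

end


lemma allrep:
  assumes V: "V = span G" and D: "lin V D" and ex: "\<And>t. t \<in> V \<Longrightarrow> \<exists>ps. trep V V (D t) ps"
    and F: "bil V V F" and Q: "lin V Q" and e: "\<And>g. g \<in> G \<Longrightarrow> RF V D F g = Q g"
    and t: "t \<in> V" and ps: "trep V V (D t) ps"
  shows "sum_list (map (\<lambda>(u,w). F u w) ps) = Q t"
proof -
  have sV: "subspace V" using V span_subspace by simp
  have "sum_list (map (\<lambda>(u,w). F u w) ps) = RF V D F t" using RF_rep[of V F D t, OF sV F ps] by simp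
  also have "\<dots> = Q t"
    using lin_eq_span[of G "RF V D F" Q t] RF_lin[OF sV D ex F] Q e t V by simp
  finally show ?thesis .
qed

lemma lin_scal: "linf V f \<Longrightarrow> lin V (\<lambda>x. sc (f x) w)"
  unfolding lin_def linf_def by (simp add: sc_add_l sc_sc)

context hheap begin

lemma canon_rep: "a \<in> FS \<Longrightarrow> b \<in> FS \<Longrightarrow> trep TN TN (DTc (tau br a b))
   (concat (map (\<lambda>(a1,a2). map (\<lambda>(b1,b2). (tau br a2 b1, tau br a1 b2)) (sw b)) (sw a)))"
  unfolding trep_def
proof
  assume a: "a \<in> FS" and b: "b \<in> FS"
  show "set (concat (map (\<lambda>(a1,a2). map (\<lambda>(b1,b2). (tau br a2 b1, tau br a1 b2)) (sw b)) (sw a))) \<subseteq> TN \<times> TN"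
    using sw_FS[OF a] sw_FS[OF b] by (fastforce intro!: tau_TN)
  show "DTc (tau br a b) = sum_list (map (\<lambda>(u,w). tens u w)
      (concat (map (\<lambda>(a1,a2). map (\<lambda>(b1,b2). (tau br a2 b1, tau br a1 b2)) (sw b)) (sw a))))"
    unfolding DTc_tau[OF a b sw_rep[OF a] sw_rep[OF b]]
    by (simp add: sum_list_concat_map case_prod_unfold o_def)
qed

lemma RF_tau: "a \<in> FS \<Longrightarrow> b \<in> FS \<Longrightarrow> bil TN TN F \<Longrightarrow>
   RF TN DTc F (tau br a b) = SW a (\<lambda>a1 a2. SW b (\<lambda>b1 b2. F (tau br a2 b1) (tau br a1 b2)))"
proof -
  assume a: "a \<in> FS" and b: "b \<in> FS" and F: "bil TN TN F"
  show ?thesis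
    using RF_rep[of TN F DTc "tau br a b", OF sTN F canon_rep[OF a b]] by (simp add: sum_list_concat_map case_prod_unfold o_def SW_def)
qed

lemma ex_rep_TN: assumes "t \<in> TN" shows "\<exists>ps. trep TN TN (DTc t) ps"
proof -
  have "t \<in> span gens" using assms TN_span by simp
  then show ?thesis
proof (induction t rule: span_prop)
  case zero
  have "DTc 0 = 0" using lin_zero[OF sTN lin_DTc] .
  then show ?case by (intro exI[of _ "[]"]) (simp add: trep_def)
next
  case (gen x)
  then obtain a b where "x = tau br a b" "a \<in> FS" "b \<in> FS" by blast
  then show ?case using canon_rep by blast
next
  case (add x y)
  then obtain ps qs where "trep TN TN (DTc x) ps" "trep TN TN (DTc y) qs" by blast
  moreover have "x \<in> TN" "y \<in> TN" using add.hyps TN_span by simp_all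
  ultimately have "trep TN TN (DTc (x + y)) (ps @ qs)" using trep_append lin_add[OF lin_DTc] by simp
  then show ?case by blast
next
  case (scl c x)
  then obtain ps where "trep TN TN (DTc x) ps" by blast
  moreover have "x \<in> TN" using scl.hyps TN_span by simp
  ultimately have "trep TN TN (DTc (sc c x)) (map (\<lambda>(u,w). (sc c u, w)) ps)" using trep_scale[OF sTN] lin_sc[OF lin_DTc] by simp
  then show ?case by blast
qed
qed

lemma unit_nz: "(tn_unit :: ('a \<Rightarrow> 'k) \<times> 'a \<Rightarrow> 'k) \<noteq> 0"
proof
  assume z: "(tn_unit :: ('a \<Rightarrow> 'k) \<times> 'a \<Rightarrow> 'k) = 0"
  obtain a :: "'a \<Rightarrow> 'k" where a: "a \<in> FS" "a \<noteq> 0" using FS_nz subspace_zero[OF sFS] by blast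
  then obtain x where "a x \<noteq> 0" by (auto simp: fun_eq_iff zero_fun_apply)
  moreover have "tn_unit (a,x) = a x" using a by (simp add: tn_unit_def end_of_def)
  moreover have "tn_unit (a,x) = 0" unfolding z by (simp add: zero_fun_apply)
  ultimately show False by simp
qed

lemma TN_nz: "TN \<noteq> {0}" using unit_TN unit_nz by blast

end


context hheap begin

lemma SW_cong_apply: "a \<in> FS \<Longrightarrow> (\<And>u w. u \<in> FS \<Longrightarrow> w \<in> FS \<Longrightarrow> F u w p = G u w q) \<Longrightarrow> SW a F p = SW a G q"
  unfolding SW_apply'
  by (rule arg_cong[where f=sum_list], rule map_cong[OF refl]) (auto dest: sw_FS split: prod.splits)

lemma tens_SW_l: "tens (SW a F) w = SW a (\<lambda>u v. tens (F u v) w)"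
  unfolding SW_def by (simp add: tens_sum_l case_prod_unfold)
lemma tens_SW_r: "tens w (SW a F) = SW a (\<lambda>u v. tens w (F u v))"
  unfolding SW_def by (simp add: tens_sum_r case_prod_unfold)

lemma CL3:
  assumes a: "a \<in> FS" and b: "b \<in> FS" and c: "c \<in> FS" and d: "d \<in> FS" and e: "e \<in> FS"
  shows "SW a (\<lambda>a1 a2. SW b (\<lambda>b1 b2. SW a2 (\<lambda>a21 a22. SW b1 (\<lambda>b11 b12.
            tens (tens (br c a22 b11) (br d a21 b12)) (br e a1 b2)))))
       = SW a (\<lambda>a1 a2. SW b (\<lambda>b1 b2. SW a1 (\<lambda>a11 a12. SW b2 (\<lambda>b21 b22.
            tens (tens (br c a2 b1) (br d a12 b21)) (br e a11 b22)))))"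
proof -
  define T where "T = (\<lambda>x1 x2 x3 y1 y2 y3. tens (tens (br c x3 y1) (br d x2 y2)) (br e x1 y3))"
  define Psi where "Psi = (\<lambda>x1 x2 x3. SW b (\<lambda>b1 b2. SW b1 (\<lambda>b11 b12. T x1 x2 x3 b11 b12 b2)))"
  define Psi' where "Psi' = (\<lambda>x1 x2 x3. SW b (\<lambda>b1 b2. SW b2 (\<lambda>b21 b22. T x1 x2 x3 b1 b21 b22)))"
  have trT: "tril FS (\<lambda>y1 y2 y3. T x1 x2 x3 y1 y2 y3)" if "x1 \<in> FS" "x2 \<in> FS" "x3 \<in> FS" for x1 x2 x3
    unfolding T_def using that c d e
    by (intro trilI) (auto intro!: lin_tens_l lin_tens_r lin_br3 lin_idI br_FS)
  have PP: "Psi x1 x2 x3 = Psi' x1 x2 x3" if "x1 \<in> FS" "x2 \<in> FS" "x3 \<in> FS" for x1 x2 x3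
    unfolding Psi_def Psi'_def using coassoc[OF b trT[OF that]] by simp
  have trPsi: "tril FS Psi" unfolding Psi_def T_def using b c d e
    by (intro trilI) (auto intro!: lin_SW lin_tens_l lin_tens_r lin_br2 lin_idI br_FS)
  have "SW a (\<lambda>a1 a2. SW b (\<lambda>b1 b2. SW a2 (\<lambda>a21 a22. SW b1 (\<lambda>b11 b12.
            tens (tens (br c a22 b11) (br d a21 b12)) (br e a1 b2)))))
      = SW a (\<lambda>a1 a2. SW a2 (\<lambda>a21 a22. Psi a1 a21 a22))"
    unfolding Psi_def T_def by (rule SW_cong[OF a]) (rule SW_swap)
  also have "\<dots> = SW a (\<lambda>u w. SW u (\<lambda>u1 u2. Psi u1 u2 w))"
    by (rule coassoc[OF a trPsi, symmetric])
  also have "\<dots> = SW a (\<lambda>u w. SW u (\<lambda>u1 u2. Psi' u1 u2 w))"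
    by (intro SW_cong[OF a] SW_cong) (auto simp: PP)
  also have "\<dots> = SW a (\<lambda>a1 a2. SW b (\<lambda>b1 b2. SW a1 (\<lambda>a11 a12. SW b2 (\<lambda>b21 b22.
            tens (tens (br c a2 b1) (br d a12 b21)) (br e a11 b22)))))"
    unfolding Psi'_def T_def by (rule SW_cong[OF a]) (rule SW_swap[symmetric])
  finally show ?thesis .
qed

lemma DTc_tau_pt: "a \<in> FS \<Longrightarrow> b \<in> FS \<Longrightarrow> c \<in> FS \<Longrightarrow> d \<in> FS \<Longrightarrow>
  DTc (tau br a b) ((c,x),(d,y)) = SW a (\<lambda>a1 a2. SW b (\<lambda>b1 b2. tens (br c a2 b1) (br d a1 b2))) (x,y)"
  by (simp add: DTc_def DC_tau)

lemma tau_pt: "c \<in> FS \<Longrightarrow> tau br a b (c,x) = br c a b x"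
  by (simp add: tau_def end_of_def)

lemma coassoc_gen:
  assumes a: "a \<in> FS" and b: "b \<in> FS"
  shows "SW a (\<lambda>a1 a2. SW b (\<lambda>b1 b2. tens (DTc (tau br a2 b1)) (tau br a1 b2)))
     = reassoc (SW a (\<lambda>a1 a2. SW b (\<lambda>b1 b2. tens (tau br a2 b1) (DTc (tau br a1 b2)))))"
proof (rule ext, clarify)
  fix c x d y e z
  show "SW a (\<lambda>a1 a2. SW b (\<lambda>b1 b2. tens (DTc (tau br a2 b1)) (tau br a1 b2))) (((c,x),(d,y)),(e,z))
     = reassoc (SW a (\<lambda>a1 a2. SW b (\<lambda>b1 b2. tens (tau br a2 b1) (DTc (tau br a1 b2))))) (((c,x),(d,y)),(e,z))"
  proof (cases "c \<in> FS \<and> d \<in> FS \<and> e \<in> FS")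
    case True
    then have c: "c \<in> FS" and d: "d \<in> FS" and e: "e \<in> FS" by auto
    have "SW a (\<lambda>a1 a2. SW b (\<lambda>b1 b2. tens (DTc (tau br a2 b1)) (tau br a1 b2))) (((c,x),(d,y)),(e,z))
      = SW a (\<lambda>a1 a2. SW b (\<lambda>b1 b2. SW a2 (\<lambda>a21 a22. SW b1 (\<lambda>b11 b12.
            tens (tens (br c a22 b11) (br d a21 b12)) (br e a1 b2))))) ((x,y),z)"
    proof (intro SW_cong_apply[OF a] SW_cong_apply[OF b])
      fix a1 a2 b1 b2 :: "'a \<Rightarrow> 'k" assume "a1 \<in> FS" "a2 \<in> FS" "b1 \<in> FS" "b2 \<in> FS"
      then show "tens (DTc (tau br a2 b1)) (tau br a1 b2) (((c,x),(d,y)),(e,z))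
         = SW a2 (\<lambda>a21 a22. SW b1 (\<lambda>b11 b12. tens (tens (br c a22 b11) (br d a21 b12)) (br e a1 b2))) ((x,y),z)"
        using c d e by (simp add: DTc_tau_pt tau_pt SW_apply' sum_list_map_apply case_prod_unfold sum_list_multc)
    qed
    also have "\<dots> = SW a (\<lambda>a1 a2. SW b (\<lambda>b1 b2. SW a1 (\<lambda>a11 a12. SW b2 (\<lambda>b21 b22.
            tens (tens (br c a2 b1) (br d a12 b21)) (br e a11 b22))))) ((x,y),z)"
      by (simp add: CL3[OF a b c d e])
    also have "\<dots> = reassoc (SW a (\<lambda>a1 a2. SW b (\<lambda>b1 b2. tens (tau br a2 b1) (DTc (tau br a1 b2))))) (((c,x),(d,y)),(e,z))"
      unfolding reassoc_def prod.case
    proof (intro SW_cong_apply[OF a] SW_cong_apply[OF b])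
      fix a1 a2 b1 b2 :: "'a \<Rightarrow> 'k" assume "a1 \<in> FS" "a2 \<in> FS" "b1 \<in> FS" "b2 \<in> FS"
      then show "SW a1 (\<lambda>a11 a12. SW b2 (\<lambda>b21 b22. tens (tens (br c a2 b1) (br d a12 b21)) (br e a11 b22))) ((x,y),z)
         = tens (tau br a2 b1) (DTc (tau br a1 b2)) ((c,x),((d,y),(e,z)))"
        using c d e
        by (simp add: DTc_tau_pt tau_pt tens_SW_r SW_apply' sum_list_map_apply case_prod_unfold
            sum_list_cmult mult.assoc)
    qed
    finally show ?thesis .
  next
    case False
    have "SW a (\<lambda>a1 a2. SW b (\<lambda>b1 b2. tens (DTc (tau br a2 b1)) (tau br a1 b2))) (((c,x),(d,y)),(e,z))
      = SW a (\<lambda>a1 a2. SW b (\<lambda>b1 b2. \<lambda>_. 0)) x"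
      by (intro SW_cong_apply[OF a] SW_cong_apply[OF b]) (use False in \<open>auto simp: DTc_def tau_out\<close>)
    moreover have "reassoc (SW a (\<lambda>a1 a2. SW b (\<lambda>b1 b2. tens (tau br a2 b1) (DTc (tau br a1 b2))))) (((c,x),(d,y)),(e,z))
      = SW a (\<lambda>a1 a2. SW b (\<lambda>b1 b2. \<lambda>_. 0)) x"
      unfolding reassoc_def prod.case
      by (intro SW_cong_apply[OF a] SW_cong_apply[OF b]) (use False in \<open>auto simp: DTc_def tau_out\<close>)
    ultimately show ?thesis by simp
  qed
qed

end


context hheap begin

lemma RF_lin_TN: "bil TN TN F \<Longrightarrow> lin TN (RF TN DTc F)"
  by (rule RF_lin[OF sTN lin_DTc ex_rep_TN])

lemma RF_rep_TN: "bil TN TN F \<Longrightarrow> trep TN TN (DTc t) ps \<Longrightarrow> RF TN DTc F t = sum_list (map (\<lambda>(u,w). F u w) ps)"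
  by (rule RF_rep[of TN F DTc t, OF sTN])

lemma allrep_TN: "bil TN TN F \<Longrightarrow> lin TN Q \<Longrightarrow>
   (\<And>a b. a \<in> FS \<Longrightarrow> b \<in> FS \<Longrightarrow> SW a (\<lambda>a1 a2. SW b (\<lambda>b1 b2. F (tau br a2 b1) (tau br a1 b2))) = Q (tau br a b))
   \<Longrightarrow> t \<in> TN \<Longrightarrow> trep TN TN (DTc t) ps \<Longrightarrow> sum_list (map (\<lambda>(u,w). F u w) ps) = Q t"
  by (rule allrep[OF TN_span lin_DTc ex_rep_TN]) (auto simp: RF_tau)

lemma counit_gen1:
  fixes a b :: "'a \<Rightarrow> 'k" assumes a: "a \<in> FS" and b: "b \<in> FS"
  shows "SW a (\<lambda>a1 a2. SW b (\<lambda>b1 b2. sc (eTc (tau br a2 b1)) (tau br a1 b2))) = tau br a b"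
proof -
  have "SW a (\<lambda>a1 a2. SW b (\<lambda>b1 b2. sc (eTc (tau br a2 b1)) (tau br a1 b2)))
     = SW a (\<lambda>a1 a2. sc (ep a2) (SW b (\<lambda>b1 b2. sc (ep b1) (tau br a1 b2))))"
  proof (rule SW_cong[OF a])
    fix a1 a2 :: "'a \<Rightarrow> 'k" assume a1: "a1 \<in> FS" and a2: "a2 \<in> FS"
    have "SW b (\<lambda>b1 b2. sc (eTc (tau br a2 b1)) (tau br a1 b2)) = SW b (\<lambda>b1 b2. sc (ep a2) (sc (ep b1) (tau br a1 b2)))"
      by (rule SW_cong[OF b]) (simp add: eTc_tau a2 sc_sc)
    also have "\<dots> = sc (ep a2) (SW b (\<lambda>b1 b2. sc (ep b1) (tau br a1 b2)))" by (rule SW_sc)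
    finally show "SW b (\<lambda>b1 b2. sc (eTc (tau br a2 b1)) (tau br a1 b2)) = sc (ep a2) (SW b (\<lambda>b1 b2. sc (ep b1) (tau br a1 b2)))" .
  qed
  also have "\<dots> = SW a (\<lambda>a1 a2. sc (ep a2) (tau br a1 b))"
    by (rule SW_cong[OF a]) (simp add: counit1[OF b subspace_UNIV tau_lin2])
  also have "\<dots> = tau br a b" by (rule counit2[OF a tau_lin1[OF b]])
  finally show ?thesis .
qed

lemma counit_gen2:
  fixes a b :: "'a \<Rightarrow> 'k" assumes a: "a \<in> FS" and b: "b \<in> FS"
  shows "SW a (\<lambda>a1 a2. SW b (\<lambda>b1 b2. sc (eTc (tau br a1 b2)) (tau br a2 b1))) = tau br a b"
proof -
  have "SW a (\<lambda>a1 a2. SW b (\<lambda>b1 b2. sc (eTc (tau br a1 b2)) (tau br a2 b1)))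
     = SW a (\<lambda>a1 a2. sc (ep a1) (SW b (\<lambda>b1 b2. sc (ep b2) (tau br a2 b1))))"
  proof (rule SW_cong[OF a])
    fix a1 a2 :: "'a \<Rightarrow> 'k" assume a1: "a1 \<in> FS" and a2: "a2 \<in> FS"
    have "SW b (\<lambda>b1 b2. sc (eTc (tau br a1 b2)) (tau br a2 b1)) = SW b (\<lambda>b1 b2. sc (ep a1) (sc (ep b2) (tau br a2 b1)))"
      by (rule SW_cong[OF b]) (simp add: eTc_tau a1 sc_sc)
    also have "\<dots> = sc (ep a1) (SW b (\<lambda>b1 b2. sc (ep b2) (tau br a2 b1)))" by (rule SW_sc)
    finally show "SW b (\<lambda>b1 b2. sc (eTc (tau br a1 b2)) (tau br a2 b1)) = sc (ep a1) (SW b (\<lambda>b1 b2. sc (ep b2) (tau br a2 b1)))" .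
  qed
  also have "\<dots> = SW a (\<lambda>a1 a2. sc (ep a1) (tau br a2 b))"
    by (rule SW_cong[OF a]) (simp add: counit2[OF b tau_lin2])
  also have "\<dots> = tau br a b" by (rule counit1[OF a subspace_UNIV tau_lin1[OF b]]) simp
  finally show ?thesis .
qed

lemma coalg_TN: "coalgebra TN DTc eTc"
  unfolding coalgebra_def
proof (intro conjI ballI allI impI)
  show "subspace TN" by (rule sTN)
  show "TN \<noteq> {0}" by (rule TN_nz)
  show "lin TN DTc" by (rule lin_DTc)
  show "linf TN eTc" by (rule linf_eTc)
  fix t assume t: "t \<in> TN"
  show "\<exists>ps. trep TN TN (DTc t) ps" using ex_rep_TN[OF t] .
  fix ps assume ps: "trep TN TN (DTc t) ps"
  have b1: "bil TN TN (\<lambda>u w. tens (DTc u) w)" by (intro bilI lin_tens_l lin_tens_r lin_DTc lin_idI)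
  have b2: "bil TN TN (\<lambda>u w. tens u (DTc w))" by (intro bilI lin_tens_l lin_tens_r lin_DTc lin_idI)
  have b3: "bil TN TN (\<lambda>u w. sc (eTc u) w)" by (intro bilI lin_scal linf_eTc lin_scf lin_idI)
  have b4: "bil TN TN (\<lambda>u w. sc (eTc w) u)" by (intro bilI lin_scal linf_eTc lin_scf lin_idI)
  have "sum_list (map (\<lambda>(u,w). tens (DTc u) w) ps) = reassoc (RF TN DTc (\<lambda>u w. tens u (DTc w)) t)"
  proof (rule allrep_TN[OF b1 lin_reassoc[OF RF_lin_TN[OF b2]] _ t ps])
    fix a b :: "'a \<Rightarrow> 'k" assume a: "a \<in> FS" and b: "b \<in> FS"
    show "SW a (\<lambda>a1 a2. SW b (\<lambda>b1 b2. tens (DTc (tau br a2 b1)) (tau br a1 b2)))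
       = reassoc (RF TN DTc (\<lambda>u w. tens u (DTc w)) (tau br a b))"
      by (simp add: RF_tau[OF a b b2] coassoc_gen[OF a b])
  qed
  also have "RF TN DTc (\<lambda>u w. tens u (DTc w)) t = sum_list (map (\<lambda>(u,w). tens u (DTc w)) ps)"
    by (rule RF_rep_TN[OF b2 ps])
  finally show "sum_list (map (\<lambda>(u,w). tens (DTc u) w) ps) = reassoc (sum_list (map (\<lambda>(u,w). tens u (DTc w)) ps))" .
  show "sum_list (map (\<lambda>(u,w). sc (eTc u) w) ps) = t"
    by (rule allrep_TN[OF b3 lin_idI _ t ps]) (rule counit_gen1)
  show "sum_list (map (\<lambda>(u,w). sc (eTc w) u) ps) = t"
    by (rule allrep_TN[OF b4 lin_idI _ t ps]) (rule counit_gen2)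
qed

end


lemma bil_eq_span:
  assumes F1: "\<And>b. b \<in> span G \<Longrightarrow> lin (span G) (\<lambda>a. F a b)" and F2: "\<And>a. a \<in> span G \<Longrightarrow> lin (span G) (\<lambda>b. F a b)"
    and H1: "\<And>b. b \<in> span G \<Longrightarrow> lin (span G) (\<lambda>a. H a b)" and H2: "\<And>a. a \<in> span G \<Longrightarrow> lin (span G) (\<lambda>b. H a b)"
    and e: "\<And>g h. g \<in> G \<Longrightarrow> h \<in> G \<Longrightarrow> F g h = H g h"
    and a: "a \<in> span G" and b: "b \<in> span G"
  shows "F a b = H a b"
proof -
  have g: "F g b = H g b" if "g \<in> G" for g
    using lin_eq_span[OF F2[OF span_gen[OF that]] H2[OF span_gen[OF that]] e[OF that] b] .
  show ?thesis using lin_eq_span[OF F1[OF b] H1[OF b] g a] .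
qed

lemma bil_eq_spanf:
  assumes F1: "\<And>b. b \<in> span G \<Longrightarrow> linf (span G) (\<lambda>a. F a b)" and F2: "\<And>a. a \<in> span G \<Longrightarrow> linf (span G) (\<lambda>b. F a b)"
    and H1: "\<And>b. b \<in> span G \<Longrightarrow> linf (span G) (\<lambda>a. H a b)" and H2: "\<And>a. a \<in> span G \<Longrightarrow> linf (span G) (\<lambda>b. H a b)"
    and e: "\<And>g h. g \<in> G \<Longrightarrow> h \<in> G \<Longrightarrow> F g h = H g h"
    and a: "a \<in> span G" and b: "b \<in> span G"
  shows "F a b = H a b"
proof -
  have g: "F g b = H g b" if "g \<in> G" for g
    using linf_eq_span[OF F2[OF span_gen[OF that]] H2[OF span_gen[OF that]] e[OF that] b] .
  show ?thesis using linf_eq_span[OF F1[OF b] H1[OF b] g a] .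
qed

lemma linf_compose: "lin V f \<Longrightarrow> (\<And>x. x \<in> V \<Longrightarrow> f x \<in> W) \<Longrightarrow> linf W g \<Longrightarrow> linf V (\<lambda>x. g (f x))"
  unfolding lin_def linf_def by metis

lemma linf_mult_const: "linf V f \<Longrightarrow> linf V (\<lambda>x. f x * c)"
  unfolding linf_def by (simp add: algebra_simps)
lemma linf_const_mult: "linf V f \<Longrightarrow> linf V (\<lambda>x. c * f x)"
  unfolding linf_def by (simp add: algebra_simps)

context hheap begin

lemma mult_lin1: "b \<in> TN \<Longrightarrow> lin TN (\<lambda>a. tn_mult a b)"
  unfolding lin_def
proof (intro conjI ballI allI)
  fix a a' assume b: "b \<in> TN" and a: "a \<in> TN" and a': "a' \<in> TN"
  show "tn_mult (a + a') b = tn_mult a b + tn_mult a' b"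
    unfolding tn_mult_def end_of_add[symmetric]
    by (rule end_of_cong) (simp add: app_add lin_add[OF TN_app_lin[OF b]] TN_app_FS a a')
next
  fix c a assume b: "b \<in> TN" and a: "a \<in> TN"
  show "tn_mult (sc c a) b = sc c (tn_mult a b)"
    unfolding tn_mult_def end_of_sc[symmetric]
    by (rule end_of_cong) (simp add: app_sc lin_sc[OF TN_app_lin[OF b]] TN_app_FS a)
qed

lemma mult_lin2: "lin TN (\<lambda>b. tn_mult a b)"
  unfolding lin_def tn_mult_def end_of_add[symmetric] end_of_sc[symmetric]
  by (simp add: app_add app_sc)

lemma mult_TN: "a \<in> TN \<Longrightarrow> b \<in> TN \<Longrightarrow> tn_mult a b \<in> TN"
proof -
  assume a: "a \<in> TN" and b: "b \<in> TN"
  have g: "tn_mult g b \<in> TN" if "g \<in> gens" for g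
  proof -
    obtain p q where g: "g = tau br p q" "p \<in> FS" "q \<in> FS" using \<open>g \<in> gens\<close> by blast
    have "tn_mult (tau br p q) b \<in> span gens"
    proof (rule lin_image_span[of gens "tn_mult (tau br p q)" "span gens" b, OF _ span_subspace])
      show "lin (span gens) (tn_mult (tau br p q))" using mult_lin2 TN_span by simp
      show "b \<in> span gens" using b TN_span by simp
      fix h assume "h \<in> gens"
      then obtain r s where h: "h = tau br r s" "r \<in> FS" "s \<in> FS" by blast
      have "tn_mult (tau br p q) h = tau br p (br q r s)" using h g tn_mult_tau by simp
      moreover have "tau br p (br q r s) \<in> TN" using h g by (simp add: tau_TN br_FS)
      ultimately show "tn_mult (tau br p q) h \<in> span gens" using TN_span by simp
    qed
    then show ?thesis using g TN_span by simp
  qed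
  have "tn_mult a b \<in> span gens"
    by (rule lin_image_span[of gens "\<lambda>a. tn_mult a b" "span gens" a, OF _ span_subspace])
      (use mult_lin1[OF b] TN_span g a in simp_all)
  then show ?thesis using TN_span by simp
qed

lemma mult_assoc: "a \<in> TN \<Longrightarrow> b \<in> TN \<Longrightarrow> c \<in> TN \<Longrightarrow> tn_mult (tn_mult a b) c = tn_mult a (tn_mult b c)"
  unfolding tn_mult_def
  by (rule end_of_cong) (simp add: app_end_of TN_app_FS)

lemma mult_unit1: "a \<in> TN \<Longrightarrow> tn_mult tn_unit a = a"
  unfolding tn_mult_def tn_unit_def
  by (subst TN_end_of[symmetric], assumption, rule end_of_cong) (simp add: app_end_of)

lemma mult_unit2: "a \<in> TN \<Longrightarrow> tn_mult a tn_unit = a"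
  unfolding tn_mult_def tn_unit_def
  by (subst TN_end_of[symmetric], assumption, rule end_of_cong) (simp add: app_end_of TN_app_FS)

lemma eTc_mult: "a \<in> TN \<Longrightarrow> b \<in> TN \<Longrightarrow> eTc (tn_mult a b) = eTc a * eTc b"
proof -
  assume a: "a \<in> TN" and b: "b \<in> TN"
  show ?thesis
  proof (rule bil_eq_spanf[of gens "\<lambda>a b. eTc (tn_mult a b)" "\<lambda>a b. eTc a * eTc b", folded TN_span, OF _ _ _ _ _ a b])
    fix b assume bb: "b \<in> TN"
    show "linf TN (\<lambda>a. eTc (tn_mult a b))" by (rule linf_compose[OF mult_lin1[OF bb] _ linf_eTc]) (rule mult_TN[OF _ bb])
    show "linf TN (\<lambda>a. eTc a * eTc b)" by (rule linf_mult_const[OF linf_eTc])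
  next
    fix a assume "a \<in> TN"
    then show "linf TN (\<lambda>b. eTc (tn_mult a b))" by (intro linf_compose[OF mult_lin2 _ linf_eTc] mult_TN)
    show "linf TN (\<lambda>b. eTc a * eTc b)" by (rule linf_const_mult[OF linf_eTc])
  next
    fix g h assume "g \<in> gens" "h \<in> gens"
    then obtain p q r s where "g = tau br p q" "h = tau br r s" "p \<in> FS" "q \<in> FS" "r \<in> FS" "s \<in> FS" by blast
    then show "eTc (tn_mult g h) = eTc g * eTc h"
      by (simp add: tn_mult_tau eTc_tau br_FS ep_br mult.assoc)
  qed
qed

end


context hheap begin

definition brL :: "('a \<Rightarrow> 'k) \<Rightarrow> ('a \<Rightarrow> 'k) \<Rightarrow> ('a \<Rightarrow> 'k) \<Rightarrow> (('a \<Rightarrow> 'k) \<times> ('a \<Rightarrow> 'k)) list" where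
  "brL a b c = concat (map (\<lambda>(a1,a2). concat (map (\<lambda>(b1,b2).
     map (\<lambda>(c1,c2). (br a1 b2 c1, br a2 b1 c2)) (sw c)) (sw b))) (sw a))"

lemma br_rep: assumes a: "a \<in> FS" and b: "b \<in> FS" and c: "c \<in> FS"
  shows "trep FS FS (Dl (br a b c)) (brL a b c)"
  unfolding trep_def
proof
  show "set (brL a b c) \<subseteq> FS \<times> FS"
  proof
    fix p assume "p \<in> set (brL a b c)"
    then obtain a1 a2 b1 b2 c1 c2 where "(a1,a2) \<in> set (sw a)" "(b1,b2) \<in> set (sw b)" "(c1,c2) \<in> set (sw c)"
      and p: "p = (br a1 b2 c1, br a2 b1 c2)" unfolding brL_def by auto
    then show "p \<in> FS \<times> FS" using sw_FS[OF a] sw_FS[OF b] sw_FS[OF c] by (force intro!: br_FS)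
  qed
  show "Dl (br a b c) = sum_list (map (\<lambda>(u,w). tens u w) (brL a b c))"
    unfolding Dl_br[OF a b c sw_rep[OF a] sw_rep[OF b] sw_rep[OF c]] brL_def
    by (simp add: sum_list_concat_map case_prod_unfold o_def)
qed

lemma RF_some_rep: "b \<in> TN \<Longrightarrow> trep TN TN (DTc b) (SOME ps. trep TN TN (DTc b) ps)"
  using ex_rep_TN by (metis someI_ex)

lemma RF_param_lin:
  assumes G: "\<And>u w. u \<in> TN \<Longrightarrow> w \<in> TN \<Longrightarrow> lin W (\<lambda>x. G x u w)" and b: "b \<in> TN"
  shows "lin W (\<lambda>x. RF TN DTc (G x) b)"
proof -
  define L where "L = (SOME ps. trep TN TN (DTc b) ps)"
  have "trep TN TN (DTc b) L" using RF_some_rep[OF b] unfolding L_def .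
  then have L: "set L \<subseteq> TN \<times> TN" by (simp add: trep_def)
  show ?thesis
    unfolding RF_def L_def[symmetric] case_prod_unfold
    by (rule lin_sum_listf) (use L G in auto)
qed

definition Gi where "Gi a1 a2 = (\<lambda>b1 b2. tens (tn_mult a1 b1) (tn_mult a2 b2))"
definition Mu where "Mu a b = RF TN DTc (\<lambda>a1 a2. RF TN DTc (Gi a1 a2) b) a"

lemma bil_Gi: "a1 \<in> TN \<Longrightarrow> a2 \<in> TN \<Longrightarrow> bil TN TN (Gi a1 a2)"
  unfolding Gi_def by (intro bilI lin_tens_l lin_tens_r mult_lin2)

lemma bil_outer: "b \<in> TN \<Longrightarrow> bil TN TN (\<lambda>a1 a2. RF TN DTc (Gi a1 a2) b)"
proof (rule bilI)
  fix w assume b: "b \<in> TN" and w: "w \<in> TN"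
  show "lin TN (\<lambda>u. RF TN DTc (Gi u w) b)"
    by (rule RF_param_lin[OF _ b]) (unfold Gi_def, intro lin_tens_l mult_lin1)
next
  fix u assume b: "b \<in> TN" and u: "u \<in> TN"
  show "lin TN (\<lambda>w. RF TN DTc (Gi u w) b)"
    by (rule RF_param_lin[OF _ b]) (unfold Gi_def, intro lin_tens_r mult_lin1)
qed

lemma DTc_mult_Mu: "a \<in> TN \<Longrightarrow> b \<in> TN \<Longrightarrow> DTc (tn_mult a b) = Mu a b"
proof -
  assume a: "a \<in> TN" and b: "b \<in> TN"
  show ?thesis
  proof (rule bil_eq_span[of gens "\<lambda>a b. DTc (tn_mult a b)" Mu, folded TN_span, OF _ _ _ _ _ a b])
    fix b assume bb: "b \<in> TN"
    show "lin TN (\<lambda>a. DTc (tn_mult a b))" by (rule lin_compose[OF mult_lin1[OF bb] _ lin_DTc]) (rule mult_TN[OF _ bb])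
    show "lin TN (\<lambda>a. Mu a b)" unfolding Mu_def by (rule RF_lin_TN[OF bil_outer[OF bb]])
  next
    fix a assume aa: "a \<in> TN"
    show "lin TN (\<lambda>b. DTc (tn_mult a b))" by (rule lin_compose[OF mult_lin2 _ lin_DTc]) (rule mult_TN[OF aa])
    show "lin TN (\<lambda>b. Mu a b)" unfolding Mu_def
      by (rule RF_param_lin[OF _ aa]) (rule RF_lin_TN[OF bil_Gi])
  next
    fix g h assume "g \<in> gens" "h \<in> gens"
    then obtain p q r s where gh: "g = tau br p q" "h = tau br r s" and
      p: "p \<in> FS" and q: "q \<in> FS" and r: "r \<in> FS" and s: "s \<in> FS" by blast
    have "DTc (tn_mult g h) = DTc (tau br p (br q r s))" using gh tn_mult_tau p q r s by simp
    also have "\<dots> = SW p (\<lambda>p1 p2. SW q (\<lambda>q1 q2. SW r (\<lambda>r1 r2. SW s (\<lambda>s1 s2.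
        tens (tau br p2 (br q1 r2 s1)) (tau br p1 (br q2 r1 s2))))))"
      unfolding DTc_tau[OF p br_FS[OF q r s] sw_rep[OF p] br_rep[OF q r s]]
      by (simp add: brL_def SW_def sum_list_concat_map case_prod_unfold o_def)
    also have "\<dots> = Mu g h"
      unfolding Mu_def gh
    proof (subst RF_tau[OF p q bil_outer[OF tau_TN[OF r s]]], intro SW_cong[OF p] SW_cong[OF q])
      fix p1 p2 q1 q2 :: "'a \<Rightarrow> 'k" assume p1: "p1 \<in> FS" and p2: "p2 \<in> FS" and q1: "q1 \<in> FS" and q2: "q2 \<in> FS"
      show "SW r (\<lambda>r1 r2. SW s (\<lambda>s1 s2. tens (tau br p2 (br q1 r2 s1)) (tau br p1 (br q2 r1 s2))))
         = RF TN DTc (Gi (tau br p2 q1) (tau br p1 q2)) (tau br r s)"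
        unfolding RF_tau[OF r s bil_Gi[OF tau_TN[OF p2 q1] tau_TN[OF p1 q2]]]
        unfolding Gi_def
        by (intro SW_cong[OF r] SW_cong[OF s]) (simp add: tn_mult_tau p1 p2 q1 q2)
    qed
    finally show "DTc (tn_mult g h) = Mu g h" .
  qed
qed

lemma reps_Mu: "a \<in> TN \<Longrightarrow> b \<in> TN \<Longrightarrow> trep TN TN (DTc a) ps \<Longrightarrow> trep TN TN (DTc b) qs \<Longrightarrow>
   sum_list (map (\<lambda>(a1,a2). sum_list (map (\<lambda>(b1,b2). tens (tn_mult a1 b1) (tn_mult a2 b2)) qs)) ps) = Mu a b"
proof -
  assume a: "a \<in> TN" and b: "b \<in> TN" and ps: "trep TN TN (DTc a) ps" and qs: "trep TN TN (DTc b) qs"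
  have "sum_list (map (\<lambda>(a1,a2). sum_list (map (\<lambda>(b1,b2). tens (tn_mult a1 b1) (tn_mult a2 b2)) qs)) ps)
      = sum_list (map (\<lambda>(a1,a2). RF TN DTc (Gi a1 a2) b) ps)"
  proof (rule arg_cong[where f=sum_list], rule map_cong[OF refl])
    fix p assume p: "p \<in> set ps"
    obtain a1 a2 where pe: "p = (a1,a2)" by fastforce
    have "a1 \<in> TN" "a2 \<in> TN" using ps p pe by (auto simp: trep_def)
    then have "RF TN DTc (Gi a1 a2) b = sum_list (map (\<lambda>(b1,b2). Gi a1 a2 b1 b2) qs)"
      by (intro RF_rep_TN[OF bil_Gi qs])
    then show "(\<lambda>(a1,a2). sum_list (map (\<lambda>(b1,b2). tens (tn_mult a1 b1) (tn_mult a2 b2)) qs)) p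
       = (\<lambda>(a1,a2). RF TN DTc (Gi a1 a2) b) p" using pe by (simp add: Gi_def)
  qed
  also have "\<dots> = Mu a b" unfolding Mu_def by (rule RF_rep_TN[OF bil_outer[OF b] ps, symmetric])
  finally show ?thesis .
qed

lemma bialg_TN: "bialgebra TN tn_mult tn_unit DTc eTc"
  unfolding bialgebra_def
proof (intro conjI ballI allI impI)
  show "coalgebra TN DTc eTc" by (rule coalg_TN)
  show "tn_unit \<in> TN" by (rule unit_TN)
  show "DTc tn_unit = tens tn_unit tn_unit" by (rule DTc_unit)
  show "eTc tn_unit = 1" by (rule eTc_unit)
  fix a assume a: "a \<in> TN"
  show "lin TN (\<lambda>x. tn_mult x a)" by (rule mult_lin1[OF a])
  show "lin TN (tn_mult a)" using mult_lin2 by simp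
  show "tn_mult tn_unit a = a" by (rule mult_unit1[OF a])
  show "tn_mult a tn_unit = a" by (rule mult_unit2[OF a])
  fix b assume b: "b \<in> TN"
  show "tn_mult a b \<in> TN" by (rule mult_TN[OF a b])
  show "eTc (tn_mult a b) = eTc a * eTc b" by (rule eTc_mult[OF a b])
  fix c assume c: "c \<in> TN"
  show "tn_mult (tn_mult a b) c = tn_mult a (tn_mult b c)" by (rule mult_assoc[OF a b c])
next
  fix a b ps qs assume a: "a \<in> TN" and b: "b \<in> TN" and ps: "trep TN TN (DTc a) ps" and qs: "trep TN TN (DTc b) qs"
  show "DTc (tn_mult a b) = sum_list (map (\<lambda>(a1,a2). sum_list (map (\<lambda>(b1,b2).
                          tens (tn_mult a1 b1) (tn_mult a2 b2)) qs)) ps)"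
    using DTc_mult_Mu[OF a b] reps_Mu[OF a b ps qs] by simp
qed

end


lemma sum_pairs_cong: "(\<And>u w. (u,w) \<in> set ps \<Longrightarrow> f u w = g u w) \<Longrightarrow>
  sum_list (map (\<lambda>(u,w). f u w) ps) = sum_list (map (\<lambda>(u,w). g u w) ps)"
  by (rule arg_cong[where f=sum_list], rule map_cong[OF refl]) auto

lemma coalgebra_transfer:
  assumes C: "coalgebra V D1 e1" and D: "\<And>t. t \<in> V \<Longrightarrow> D1 t = D2 t" and E: "\<And>t. t \<in> V \<Longrightarrow> e1 t = e2 t"
  shows "coalgebra V D2 e2"
proof -
  have sV: "subspace V" and nz: "V \<noteq> {0}" and l: "lin V D1" and lf: "linf V e1"
    and ex: "\<And>a. a \<in> V \<Longrightarrow> \<exists>ps. trep V V (D1 a) ps"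
    and ax: "\<And>a ps. a \<in> V \<Longrightarrow> trep V V (D1 a) ps \<Longrightarrow>
        sum_list (map (\<lambda>(u,w). tens (D1 u) w) ps) = reassoc (sum_list (map (\<lambda>(u,w). tens u (D1 w)) ps))
      \<and> sum_list (map (\<lambda>(u,w). sc (e1 u) w) ps) = a
      \<and> sum_list (map (\<lambda>(u,w). sc (e1 w) u) ps) = a"
    using C unfolding coalgebra_def by blast+
  show ?thesis unfolding coalgebra_def
  proof (intro conjI ballI allI impI)
    show "subspace V" "V \<noteq> {0}" by fact+
    show "lin V D2" using l sV unfolding lin_def by (simp add: D[symmetric] subspace_add subspace_sc)
    show "linf V e2" using lf sV unfolding linf_def by (simp add: E[symmetric] subspace_add subspace_sc)
    fix a assume a: "a \<in> V"
    show "\<exists>ps. trep V V (D2 a) ps" using ex[OF a] D[OF a] by simp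
    fix ps assume ps: "trep V V (D2 a) ps"
    then have ps1: "trep V V (D1 a) ps" using D[OF a] by simp
    have psV: "\<And>u w. (u,w) \<in> set ps \<Longrightarrow> u \<in> V \<and> w \<in> V" using ps by (auto simp: trep_def)
    note ax = ax[OF a ps1]
    show "sum_list (map (\<lambda>(u,w). tens (D2 u) w) ps) = reassoc (sum_list (map (\<lambda>(u,w). tens u (D2 w)) ps))"
      using ax sum_pairs_cong[of ps "\<lambda>u w. tens (D1 u) w" "\<lambda>u w. tens (D2 u) w"]
        sum_pairs_cong[of ps "\<lambda>u w. tens u (D1 w)" "\<lambda>u w. tens u (D2 w)"] psV D by auto
    show "sum_list (map (\<lambda>(u,w). sc (e2 u) w) ps) = a"
      using ax sum_pairs_cong[of ps "\<lambda>u w. sc (e1 u) w" "\<lambda>u w. sc (e2 u) w"] psV E by auto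
    show "sum_list (map (\<lambda>(u,w). sc (e2 w) u) ps) = a"
      using ax sum_pairs_cong[of ps "\<lambda>u w. sc (e1 w) u" "\<lambda>u w. sc (e2 w) u"] psV E by auto
  qed
qed

lemma bialgebra_transfer:
  assumes B: "bialgebra A m u D1 e1" and D: "\<And>t. t \<in> A \<Longrightarrow> D1 t = D2 t" and E: "\<And>t. t \<in> A \<Longrightarrow> e1 t = e2 t"
  shows "bialgebra A m u D2 e2"
proof -
  have C: "coalgebra A D1 e1" and u: "u \<in> A" and cl: "\<And>a b. a \<in> A \<Longrightarrow> b \<in> A \<Longrightarrow> m a b \<in> A"
    and r: "\<forall>b\<in>A. lin A (\<lambda>a. m a b)" "\<forall>a\<in>A. lin A (m a)"
    and as: "\<forall>a\<in>A. \<forall>b\<in>A. \<forall>c\<in>A. m (m a b) c = m a (m b c)"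
    and un: "\<forall>a\<in>A. m u a = a \<and> m a u = a"
    and du: "D1 u = tens u u" and eu: "e1 u = 1"
    and mu: "\<And>a b. a \<in> A \<Longrightarrow> b \<in> A \<Longrightarrow> e1 (m a b) = e1 a * e1 b \<and>
       (\<forall>ps qs. trep A A (D1 a) ps \<longrightarrow> trep A A (D1 b) qs \<longrightarrow>
          D1 (m a b) = sum_list (map (\<lambda>(a1,a2). sum_list (map (\<lambda>(b1,b2).
                          tens (m a1 b1) (m a2 b2)) qs)) ps))"
    using B unfolding bialgebra_def by blast+
  show ?thesis unfolding bialgebra_def
  proof (intro conjI ballI allI impI)
    show "coalgebra A D2 e2" by (rule coalgebra_transfer[OF C D E])
    show "u \<in> A" by fact
    show "D2 u = tens u u" using du D[OF u] by simp
    show "e2 u = 1" using eu E[OF u] by simp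
    fix a assume a: "a \<in> A"
    show "lin A (\<lambda>x. m x a)" "lin A (m a)" using r a by blast+
    show "m u a = a" "m a u = a" using un a by blast+
    fix b assume b: "b \<in> A"
    show "m a b \<in> A" by (rule cl[OF a b])
    show "e2 (m a b) = e2 a * e2 b" using mu[OF a b] E a b cl[OF a b] by simp
    { fix c assume "c \<in> A"
      then show "m (m a b) c = m a (m b c)" using as a b by blast }
    fix ps qs assume ps: "trep A A (D2 a) ps" and qs: "trep A A (D2 b) qs"
    then show "D2 (m a b) = sum_list (map (\<lambda>(a1,a2). sum_list (map (\<lambda>(b1,b2).
                          tens (m a1 b1) (m a2 b2)) qs)) ps)"
      using mu[OF a b] D a b cl[OF a b] by simp
  qed
qed

lemma hopf_transfer:
  assumes Hp: "hopf_algebra A m u D1 e1 S" and D: "\<And>t. t \<in> A \<Longrightarrow> D1 t = D2 t" and E: "\<And>t. t \<in> A \<Longrightarrow> e1 t = e2 t"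
  shows "hopf_algebra A m u D2 e2 S"
proof -
  have B: "bialgebra A m u D1 e1" and l: "lin A S" and SA: "\<forall>a\<in>A. S a \<in> A"
    and ax: "\<And>a ps. a \<in> A \<Longrightarrow> trep A A (D1 a) ps \<Longrightarrow>
        sum_list (map (\<lambda>(x,y). m (S x) y) ps) = sc (e1 a) u
      \<and> sum_list (map (\<lambda>(x,y). m x (S y)) ps) = sc (e1 a) u"
    using Hp unfolding hopf_algebra_def by blast+
  show ?thesis unfolding hopf_algebra_def
  proof (intro conjI ballI allI impI)
    show "bialgebra A m u D2 e2" by (rule bialgebra_transfer[OF B D E])
    show "lin A S" by fact
    fix a assume a: "a \<in> A"
    show "S a \<in> A" using SA a by blast
    fix ps assume "trep A A (D2 a) ps"
    then have ps: "trep A A (D1 a) ps" using D[OF a] by simp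
    show "sum_list (map (\<lambda>(x,y). m (S x) y) ps) = sc (e2 a) u" using ax[OF a ps] E[OF a] by simp
    show "sum_list (map (\<lambda>(x,y). m x (S y)) ps) = sc (e2 a) u" using ax[OF a ps] E[OF a] by simp
  qed
qed

context hheap begin

lemma tn_struct_c: "tn_struct br Dl ep DTc eTc"
  unfolding tn_struct_def using lin_DTc linf_eTc eTc_tau DTc_tau by blast

lemma tn_struct_eq:
  assumes T: "tn_struct br Dl ep DT eT" and t: "t \<in> TN"
  shows "DT t = DTc t" "eT t = eTc t"
proof -
  have l: "lin TN DT" and lf: "linf TN eT"
    and g: "\<And>a b. a \<in> FS \<Longrightarrow> b \<in> FS \<Longrightarrow> eT (tau br a b) = ep a * ep b \<and>
      (\<forall>ps qs. trep FS FS (Dl a) ps \<longrightarrow> trep FS FS (Dl b) qs \<longrightarrow>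
         DT (tau br a b) = sum_list (map (\<lambda>(a1,a2). sum_list (map (\<lambda>(b1,b2).
              tens (tau br a2 b1) (tau br a1 b2)) qs)) ps))"
    using T unfolding tn_struct_def by blast+
  have tt: "t \<in> span gens" using t TN_span by simp
  show "DT t = DTc t"
  proof (rule lin_eq_span[of gens DT DTc t, folded TN_span, OF l lin_DTc _ t])
    fix x assume "x \<in> gens"
    then obtain a b where x: "x = tau br a b" "a \<in> FS" "b \<in> FS" by blast
    then show "DT x = DTc x" using g[OF x(2,3)] DTc_tau[OF x(2,3) sw_rep[OF x(2)] sw_rep[OF x(3)]] sw_rep by simp
  qed
  show "eT t = eTc t"
  proof (rule linf_eq_span[of gens eT eTc t, folded TN_span, OF lf linf_eTc _ t])
    fix x assume "x \<in> gens"
    then obtain a b where x: "x = tau br a b" "a \<in> FS" "b \<in> FS" by blast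
    then show "eT x = eTc x" using g[OF x(2,3)] eTc_tau[OF x(2,3)] by simp
  qed
qed

lemma bialg_struct: "tn_struct br Dl ep DT eT \<Longrightarrow> bialgebra TN tn_mult tn_unit DT eT"
  by (rule bialgebra_transfer[OF bialg_TN]) (simp_all add: tn_struct_eq)

end


lemma lin_end_of: "(\<And>c. c \<in> FS \<Longrightarrow> lin V (\<lambda>t. F t c)) \<Longrightarrow> lin V (\<lambda>t. end_of (F t))"
  unfolding lin_def
proof (intro conjI ballI allI)
  fix u w assume h: "\<And>c. c \<in> FS \<Longrightarrow> (\<forall>u\<in>V. \<forall>w\<in>V. F (u + w) c = F u c + F w c) \<and> (\<forall>d. \<forall>u\<in>V. F (sc d u) c = sc d (F u c))"
    and u: "u \<in> V" and w: "w \<in> V"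
  show "end_of (F (u + w)) = end_of (F u) + end_of (F w)"
    unfolding end_of_add[symmetric] by (rule end_of_cong) (use h u w in blast)
next
  fix d u assume h: "\<And>c. c \<in> FS \<Longrightarrow> (\<forall>u\<in>V. \<forall>w\<in>V. F (u + w) c = F u c + F w c) \<and> (\<forall>d. \<forall>u\<in>V. F (sc d u) c = sc d (F u c))"
    and u: "u \<in> V"
  show "end_of (F (sc d u)) = sc d (end_of (F u))"
    unfolding end_of_sc[symmetric] by (rule end_of_cong) (use h u in blast)
qed

context hheap begin

definition Sc :: "(('a \<Rightarrow> 'k) \<times> 'a \<Rightarrow> 'k) \<Rightarrow> (('a \<Rightarrow> 'k) \<times> 'a \<Rightarrow> 'k)" where
  "Sc t = end_of (\<lambda>c. SW kk (\<lambda>g1 g2. br c (app t g1) g2))"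

lemma lin_Sc: "lin TN Sc"
  unfolding Sc_def
  by (rule lin_end_of, rule lin_SW[OF _ kk(1)], rule lin_br2[OF lin_app])
     (auto intro: TN_app_FS)

lemma app_SW: "app (SW a F) c = SW a (\<lambda>u w. app (F u w) c)"
  by (rule ext) (simp add: app_apply SW_apply')

lemma SW_SW_kk: "c \<in> FS \<Longrightarrow> SW kk (\<lambda>k1 k2. br c k1 k2) = c"
  using hcounit2[OF _ kk(1) lin_idI, of c] by (simp add: kk sc_one)

context
  fixes \<theta> assumes G: "grunspan Dl ep br \<theta>"
begin

lemma th_cm: "coalg_map Dl ep Dl ep \<theta>" using G unfolding grunspan_def by (rule conjunct1)
lemma th_lin: "lin FS \<theta>" using th_cm unfolding coalg_map_def by (rule conjunct1)
lemma th_FS: "a \<in> FS \<Longrightarrow> \<theta> a \<in> FS" using th_cm unfolding coalg_map_def by blast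
lemma gr: "a \<in> FS \<Longrightarrow> b \<in> FS \<Longrightarrow> c \<in> FS \<Longrightarrow> d \<in> FS \<Longrightarrow> e \<in> FS \<Longrightarrow>
     br (br a b (\<theta> c)) d e = br a (br d c b) e"
  using G unfolding grunspan_def by blast

lemma Sc_tau: "a \<in> FS \<Longrightarrow> b \<in> FS \<Longrightarrow> Sc (tau br a b) = tau br b (\<theta> a)"
  unfolding Sc_def tau_def
proof (rule end_of_cong)
  fix c :: "'a \<Rightarrow> 'k" assume a: "a \<in> FS" and b: "b \<in> FS" and c: "c \<in> FS"
  have "SW kk (\<lambda>g1 g2. br c (app (end_of (\<lambda>c. br c a b)) g1) g2) = SW kk (\<lambda>g1 g2. br (br c b (\<theta> a)) g1 g2)"
    by (rule SW_cong[OF kk(1)]) (simp add: app_end_of gr a b c)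
  also have "\<dots> = br c b (\<theta> a)" by (rule SW_SW_kk) (simp add: br_FS a b c th_FS)
  finally show "SW kk (\<lambda>g1 g2. br c (app (end_of (\<lambda>c. br c a b)) g1) g2) = br c b (\<theta> a)" .
qed

lemma Sc_TN: "t \<in> TN \<Longrightarrow> Sc t \<in> TN"
proof -
  assume t: "t \<in> TN"
  have "Sc t \<in> span gens"
  proof (rule lin_image_span[of gens Sc "span gens" t, OF _ span_subspace])
    show "lin (span gens) Sc" using lin_Sc TN_span by simp
    show "t \<in> span gens" using t TN_span by simp
    fix x assume "x \<in> gens"
    then obtain a b where x: "x = tau br a b" "a \<in> FS" "b \<in> FS" by blast
    then have "Sc x \<in> TN" by (simp add: Sc_tau tau_TN th_FS)
    then show "Sc x \<in> span gens" using TN_span by simp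
  qed
  then show ?thesis using TN_span by simp
qed

lemma antipode_gen1:
  assumes a: "a \<in> FS" and b: "b \<in> FS"
  shows "SW a (\<lambda>a1 a2. SW b (\<lambda>b1 b2. tn_mult (Sc (tau br a2 b1)) (tau br a1 b2))) = sc (ep a * ep b) tn_unit"
proof -
  have L: "SW a (\<lambda>a1 a2. SW b (\<lambda>b1 b2. tn_mult (Sc (tau br a2 b1)) (tau br a1 b2)))
     = SW a (\<lambda>a1 a2. SW b (\<lambda>b1 b2. tau br b1 (br (\<theta> a2) a1 b2)))"
    by (intro SW_cong[OF a] SW_cong[OF b]) (simp add: Sc_tau tn_mult_tau th_FS)
  have mem: "SW a (\<lambda>a1 a2. SW b (\<lambda>b1 b2. tau br b1 (br (\<theta> a2) a1 b2))) \<in> TN"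
    by (intro SW_mem[OF sTN a] SW_mem[OF sTN b] tau_TN br_FS th_FS)
  have mem2: "sc (ep a * ep b) tn_unit \<in> TN" by (rule subspace_sc[OF sTN unit_TN])
  show ?thesis unfolding L
  proof (rule TN_eqI[OF mem mem2])
    fix c :: "'a \<Rightarrow> 'k" assume c: "c \<in> FS"
    have "app (SW a (\<lambda>a1 a2. SW b (\<lambda>b1 b2. tau br b1 (br (\<theta> a2) a1 b2)))) c
       = SW a (\<lambda>a1 a2. SW b (\<lambda>b1 b2. br c (br a1 a2 b1) b2))"
      unfolding app_SW
      by (intro SW_cong[OF a] SW_cong[OF b]) (simp add: tau_app c br_assoc[symmetric] gr th_FS br_FS)
    also have "\<dots> = SW b (\<lambda>b1 b2. SW a (\<lambda>a1 a2. br c (br a1 a2 b1) b2))" by (rule SW_swap)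
    also have "\<dots> = SW b (\<lambda>b1 b2. sc (ep a) (br c b1 b2))"
      by (intro SW_cong[OF b]) (rule hcounit1[OF _ a br_lin2], auto intro: c)
    also have "\<dots> = sc (ep a) (sc (ep b) c)" by (simp add: SW_sc hcounit2[OF c b lin_idI])
    also have "\<dots> = app (sc (ep a * ep b) tn_unit) c" by (simp add: app_sc tn_unit_def app_end_of c sc_sc)
    finally show "app (SW a (\<lambda>a1 a2. SW b (\<lambda>b1 b2. tau br b1 (br (\<theta> a2) a1 b2)))) c = app (sc (ep a * ep b) tn_unit) c" .
  qed
qed

lemma antipode_gen2:
  assumes a: "a \<in> FS" and b: "b \<in> FS"
  shows "SW a (\<lambda>a1 a2. SW b (\<lambda>b1 b2. tn_mult (tau br a2 b1) (Sc (tau br a1 b2)))) = sc (ep a * ep b) tn_unit"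
proof -
  have L: "SW a (\<lambda>a1 a2. SW b (\<lambda>b1 b2. tn_mult (tau br a2 b1) (Sc (tau br a1 b2))))
     = SW a (\<lambda>a1 a2. SW b (\<lambda>b1 b2. tau br a2 (br b1 b2 (\<theta> a1))))"
    by (intro SW_cong[OF a] SW_cong[OF b]) (simp add: Sc_tau tn_mult_tau th_FS)
  have mem: "SW a (\<lambda>a1 a2. SW b (\<lambda>b1 b2. tau br a2 (br b1 b2 (\<theta> a1)))) \<in> TN"
    by (intro SW_mem[OF sTN a] SW_mem[OF sTN b] tau_TN br_FS th_FS)
  have mem2: "sc (ep a * ep b) tn_unit \<in> TN" by (rule subspace_sc[OF sTN unit_TN])
  show ?thesis unfolding L
  proof (rule TN_eqI[OF mem mem2])
    fix c :: "'a \<Rightarrow> 'k" assume c: "c \<in> FS"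
    have "app (SW a (\<lambda>a1 a2. SW b (\<lambda>b1 b2. tau br a2 (br b1 b2 (\<theta> a1))))) c
       = SW a (\<lambda>a1 a2. SW b (\<lambda>b1 b2. br c a2 (br b1 b2 (\<theta> a1))))"
      unfolding app_SW by (intro SW_cong[OF a] SW_cong[OF b]) (simp add: tau_app c)
    also have "\<dots> = SW a (\<lambda>a1 a2. sc (ep b) (br c a2 (\<theta> a1)))"
      by (intro SW_cong[OF a]) (rule hcounit1[OF _ b br_lin3], auto intro: c th_FS)
    also have "\<dots> = sc (ep b) (SW a (\<lambda>a1 a2. br c a2 (\<theta> a1)))" by (rule SW_sc)
    also have "SW a (\<lambda>a1 a2. br c a2 (\<theta> a1)) = SW a (\<lambda>a1 a2. SW kk (\<lambda>k1 k2. br c (br k1 a1 a2) k2))"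
    proof (rule SW_cong[OF a])
      fix a1 a2 :: "'a \<Rightarrow> 'k" assume a1: "a1 \<in> FS" and a2: "a2 \<in> FS"
      have "br c a2 (\<theta> a1) = SW kk (\<lambda>k1 k2. br (br c a2 (\<theta> a1)) k1 k2)"
        by (rule SW_SW_kk[symmetric]) (simp add: br_FS c a2 th_FS a1)
      also have "\<dots> = SW kk (\<lambda>k1 k2. br c (br k1 a1 a2) k2)"
        by (rule SW_cong[OF kk(1)]) (simp add: gr c a1 a2)
      finally show "br c a2 (\<theta> a1) = SW kk (\<lambda>k1 k2. br c (br k1 a1 a2) k2)" .
    qed
    also have "\<dots> = SW kk (\<lambda>k1 k2. SW a (\<lambda>a1 a2. br c (br k1 a1 a2) k2))" by (rule SW_swap)
    also have "\<dots> = SW kk (\<lambda>k1 k2. sc (ep a) (br c k1 k2))"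
      by (intro SW_cong[OF kk(1)]) (rule hcounit2[OF _ a br_lin2], auto intro: c)
    also have "\<dots> = sc (ep a) c" by (simp add: SW_sc SW_SW_kk c)
    finally show "app (SW a (\<lambda>a1 a2. SW b (\<lambda>b1 b2. tau br a2 (br b1 b2 (\<theta> a1))))) c = app (sc (ep a * ep b) tn_unit) c"
      by (simp add: app_sc tn_unit_def app_end_of c sc_sc mult.commute)
  qed
qed

lemma hopf_TN: "hopf_algebra TN tn_mult tn_unit DTc eTc Sc"
  unfolding hopf_algebra_def
proof (intro conjI ballI allI impI)
  show "bialgebra TN tn_mult tn_unit DTc eTc" by (rule bialg_TN)
  show "lin TN Sc" by (rule lin_Sc)
  fix t assume t: "t \<in> TN"
  show "Sc t \<in> TN" by (rule Sc_TN[OF t])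
  fix ps assume ps: "trep TN TN (DTc t) ps"
  have Q: "lin TN (\<lambda>t. sc (eTc t) tn_unit)" by (rule lin_scal[OF linf_eTc])
  show "sum_list (map (\<lambda>(x,y). tn_mult (Sc x) y) ps) = sc (eTc t) tn_unit"
  proof (rule allrep_TN[OF _ Q _ t ps])
    show "bil TN TN (\<lambda>x y. tn_mult (Sc x) y)"
      by (intro bilI lin_compose[OF lin_Sc _ mult_lin1] mult_lin2) (auto intro: Sc_TN)
    fix a b :: "'a \<Rightarrow> 'k" assume a: "a \<in> FS" and b: "b \<in> FS"
    show "SW a (\<lambda>a1 a2. SW b (\<lambda>b1 b2. tn_mult (Sc (tau br a2 b1)) (tau br a1 b2))) = sc (eTc (tau br a b)) tn_unit"
      by (simp add: antipode_gen1[OF a b] eTc_tau a b)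
  qed
  show "sum_list (map (\<lambda>(x,y). tn_mult x (Sc y)) ps) = sc (eTc t) tn_unit"
  proof (rule allrep_TN[OF _ Q _ t ps])
    show "bil TN TN (\<lambda>x y. tn_mult x (Sc y))"
      by (intro bilI lin_compose[OF lin_Sc _ mult_lin2] mult_lin1) (auto intro: Sc_TN)
    fix a b :: "'a \<Rightarrow> 'k" assume a: "a \<in> FS" and b: "b \<in> FS"
    show "SW a (\<lambda>a1 a2. SW b (\<lambda>b1 b2. tn_mult (tau br a2 b1) (Sc (tau br a1 b2)))) = sc (eTc (tau br a b)) tn_unit"
      by (simp add: antipode_gen2[OF a b] eTc_tau a b)
  qed
qed

lemma antipode_Sc: "tn_antipode br \<theta> Sc"
  unfolding tn_antipode_def using lin_Sc Sc_tau by blast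

end
end


locale hmorph = C: hheap Dl ep br + D: hheap Dl' ep' br'
  for Dl :: "('a \<Rightarrow> 'k::field) \<Rightarrow> ('a \<times> 'a \<Rightarrow> 'k)" and ep and br
  and Dl' :: "('b \<Rightarrow> 'k) \<Rightarrow> ('b \<times> 'b \<Rightarrow> 'k)" and ep' and br' +
  fixes f :: "('a \<Rightarrow> 'k) \<Rightarrow> ('b \<Rightarrow> 'k)"
  assumes M: "heap_morph Dl ep br Dl' ep' br' f"
begin

lemma f_cm: "coalg_map Dl ep Dl' ep' f" using M unfolding heap_morph_def by (rule conjunct1)
lemma f_lin: "lin FS f" using f_cm unfolding coalg_map_def by (rule conjunct1)
lemma f_FS: "a \<in> FS \<Longrightarrow> f a \<in> FS" using f_cm unfolding coalg_map_def by blast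
lemma f_ep: "a \<in> FS \<Longrightarrow> ep' (f a) = ep a" using f_cm unfolding coalg_map_def by blast
lemma f_Dl: "a \<in> FS \<Longrightarrow> trep FS FS (Dl a) ps \<Longrightarrow> Dl' (f a) = sum_list (map (\<lambda>(u,w). tens (f u) (f w)) ps)"
  using f_cm unfolding coalg_map_def by blast
lemma f_br: "a \<in> FS \<Longrightarrow> b \<in> FS \<Longrightarrow> c \<in> FS \<Longrightarrow> f (br a b c) = br' (f a) (f b) (f c)"
  using M unfolding heap_morph_def by blast

lemma f_rep: "a \<in> FS \<Longrightarrow> trep FS FS (Dl a) ps \<Longrightarrow> trep FS FS (Dl' (f a)) (map (\<lambda>(u,w). (f u, f w)) ps)"
  unfolding trep_def
proof (intro conjI)
  assume a: "a \<in> FS" and ps: "set ps \<subseteq> FS \<times> FS \<and> Dl a = sum_list (map (\<lambda>(u,w). tens u w) ps)"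
  show "set (map (\<lambda>(u,w). (f u, f w)) ps) \<subseteq> FS \<times> FS" using ps by (auto intro: f_FS)
  show "Dl' (f a) = sum_list (map (\<lambda>(u,w). tens u w) (map (\<lambda>(u,w). (f u, f w)) ps))"
    using f_Dl[OF a] ps by (simp add: trep_def case_prod_unfold o_def)
qed

lemma fcount2: "a \<in> FS \<Longrightarrow> d \<in> FS \<Longrightarrow> C.SW a (\<lambda>u w. br' d (f u) (f w)) = sc (ep a) d"
proof -
  assume a: "a \<in> FS" and d: "d \<in> FS"
  have "sum_list (map (\<lambda>(c1,c2). br' d c1 c2) (map (\<lambda>(u,w). (f u, f w)) (C.sw a))) = sc (ep' (f a)) d"
    using D.hcounit_ax[OF d f_FS[OF a] f_rep[OF a C.sw_rep[OF a]]] by blast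
  then show ?thesis by (simp add: C.SW_def case_prod_unfold o_def f_ep a)
qed

lemma fcount1: "a \<in> FS \<Longrightarrow> d \<in> FS \<Longrightarrow> C.SW a (\<lambda>u w. br' (f u) (f w) d) = sc (ep a) d"
proof -
  assume a: "a \<in> FS" and d: "d \<in> FS"
  have "sum_list (map (\<lambda>(c1,c2). br' c1 c2 d) (map (\<lambda>(u,w). (f u, f w)) (C.sw a))) = sc (ep' (f a)) d"
    using D.hcounit_ax[OF d f_FS[OF a] f_rep[OF a C.sw_rep[OF a]]] by blast
  then show ?thesis by (simp add: C.SW_def case_prod_unfold o_def f_ep a)
qed

lemma fkk: "d \<in> FS \<Longrightarrow> C.SW C.kk (\<lambda>u w. br' d (f u) (f w)) = d"
  using fcount2[OF C.kk(1)] by (simp add: C.kk sc_one)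

definition Phic :: "(('a \<Rightarrow> 'k) \<times> 'a \<Rightarrow> 'k) \<Rightarrow> (('b \<Rightarrow> 'k) \<times> 'b \<Rightarrow> 'k)" where
  "Phic t = end_of (\<lambda>d. C.SW C.kk (\<lambda>g1 g2. br' d (f g1) (f (app t g2))))"

lemma lin_Phic: "lin C.TN Phic"
  unfolding Phic_def
proof (rule lin_end_of, rule C.lin_SW[OF _ C.kk(1)])
  fix d :: "'b \<Rightarrow> 'k" and g1 g2 :: "'a \<Rightarrow> 'k" assume d: "d \<in> FS" and g1: "g1 \<in> FS" and g2: "g2 \<in> FS"
  show "lin C.TN (\<lambda>t. br' d (f g1) (f (app t g2)))"
    by (rule lin_compose[OF lin_compose[OF lin_app _ f_lin] _ D.br_lin3[OF d f_FS[OF g1]]])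
      (auto intro: f_FS C.TN_app_FS g2)
qed

lemma Phic_tau: "a \<in> FS \<Longrightarrow> b \<in> FS \<Longrightarrow> Phic (tau br a b) = tau br' (f a) (f b)"
  unfolding Phic_def tau_def
proof (rule end_of_cong)
  fix d :: "'b \<Rightarrow> 'k" assume a: "a \<in> FS" and b: "b \<in> FS" and d: "d \<in> FS"
  have "C.SW C.kk (\<lambda>g1 g2. br' d (f g1) (f (app (end_of (\<lambda>c. br c a b)) g2)))
      = C.SW C.kk (\<lambda>g1 g2. br' (br' d (f g1) (f g2)) (f a) (f b))"
    by (rule C.SW_cong[OF C.kk(1)]) (simp add: app_end_of f_br a b D.br_assoc d f_FS)
  also have "\<dots> = br' (C.SW C.kk (\<lambda>g1 g2. br' d (f g1) (f g2))) (f a) (f b)"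
    by (rule C.SW_map[OF D.sFS D.br_lin1 C.kk(1), symmetric]) (auto intro: D.br_FS f_FS d a b)
  also have "\<dots> = br' d (f a) (f b)" by (simp add: fkk d)
  finally show "C.SW C.kk (\<lambda>g1 g2. br' d (f g1) (f (app (end_of (\<lambda>c. br c a b)) g2))) = br' d (f a) (f b)" .
qed

lemma tn_map_Phic: "tn_map br br' f Phic"
  unfolding tn_map_def using lin_Phic Phic_tau by blast

end


lemma bialg_map_transfer:
  assumes BM: "bialg_map A m u D1 e1 B m' u' D1' e1' \<phi>"
    and D: "\<And>t. t \<in> A \<Longrightarrow> D1 t = D2 t" and E: "\<And>t. t \<in> A \<Longrightarrow> e1 t = e2 t"
    and D': "\<And>t. t \<in> B \<Longrightarrow> D1' t = D2' t" and E': "\<And>t. t \<in> B \<Longrightarrow> e1' t = e2' t"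
  shows "bialg_map A m u D2 e2 B m' u' D2' e2' \<phi>"
proof -
  have l: "lin A \<phi>" and im: "\<phi> ` A \<subseteq> B" and mm: "\<forall>a\<in>A. \<forall>b\<in>A. \<phi> (m a b) = m' (\<phi> a) (\<phi> b)"
    and un: "\<phi> u = u'"
    and r: "\<And>a. a \<in> A \<Longrightarrow> e1' (\<phi> a) = e1 a \<and>
       (\<forall>ps. trep A A (D1 a) ps \<longrightarrow> D1' (\<phi> a) = sum_list (map (\<lambda>(x,y). tens (\<phi> x) (\<phi> y)) ps))"
    using BM unfolding bialg_map_def by blast+
  show ?thesis unfolding bialg_map_def
  proof (intro conjI ballI allI impI)
    show "lin A \<phi>" "\<phi> ` A \<subseteq> B" "\<phi> u = u'" by fact+
    fix a assume a: "a \<in> A"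
    have pa: "\<phi> a \<in> B" using im a by blast
    show "e2' (\<phi> a) = e2 a" using r[OF a] E[OF a] E'[OF pa] by simp
    { fix b assume "b \<in> A" then show "\<phi> (m a b) = m' (\<phi> a) (\<phi> b)" using mm a by blast }
    fix ps assume "trep A A (D2 a) ps"
    then have "trep A A (D1 a) ps" using D[OF a] by simp
    then show "D2' (\<phi> a) = sum_list (map (\<lambda>(x,y). tens (\<phi> x) (\<phi> y)) ps)" using r[OF a] D'[OF pa] by simp
  qed
qed

context hmorph begin

context fixes Phi assumes P: "tn_map br br' f Phi"
begin

lemma P_lin: "lin C.TN Phi" using P unfolding tn_map_def by blast
lemma P_tau: "a \<in> FS \<Longrightarrow> b \<in> FS \<Longrightarrow> Phi (tau br a b) = tau br' (f a) (f b)" using P unfolding tn_map_def by blast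

lemma P_TN: "t \<in> C.TN \<Longrightarrow> Phi t \<in> D.TN"
proof -
  assume t: "t \<in> C.TN"
  show ?thesis
  proof (rule lin_image_span[of C.gens Phi D.TN t, OF _ D.sTN])
    show "lin (span C.gens) Phi" using P_lin C.TN_span by simp
    show "t \<in> span C.gens" using t C.TN_span by simp
    fix x assume "x \<in> C.gens"
    then obtain a b where x: "x = tau br a b" "a \<in> FS" "b \<in> FS" by blast
    then show "Phi x \<in> D.TN" by (simp add: P_tau D.tau_TN f_FS)
  qed
qed

lemma P_mult: "a \<in> C.TN \<Longrightarrow> b \<in> C.TN \<Longrightarrow> Phi (tn_mult a b) = tn_mult (Phi a) (Phi b)"
proof -
  assume a: "a \<in> C.TN" and b: "b \<in> C.TN"
  show ?thesis
  proof (rule bil_eq_span[of C.gens "\<lambda>a b. Phi (tn_mult a b)" "\<lambda>a b. tn_mult (Phi a) (Phi b)",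
        folded C.TN_span, OF _ _ _ _ _ a b])
    fix b assume bb: "b \<in> C.TN"
    show "lin C.TN (\<lambda>a. Phi (tn_mult a b))" by (rule lin_compose[OF C.mult_lin1[OF bb] _ P_lin]) (rule C.mult_TN[OF _ bb])
    show "lin C.TN (\<lambda>a. tn_mult (Phi a) (Phi b))"
      by (rule lin_compose[OF P_lin _ D.mult_lin1[OF P_TN[OF bb]]]) (rule P_TN)
  next
    fix a assume aa: "a \<in> C.TN"
    show "lin C.TN (\<lambda>b. Phi (tn_mult a b))" by (rule lin_compose[OF C.mult_lin2 _ P_lin]) (rule C.mult_TN[OF aa])
    show "lin C.TN (\<lambda>b. tn_mult (Phi a) (Phi b))"
      by (rule lin_compose[OF P_lin _ D.mult_lin2]) (rule P_TN)
  next
    fix g h assume "g \<in> C.gens" "h \<in> C.gens"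
    then obtain p q r s where gh: "g = tau br p q" "h = tau br r s" and
      p: "p \<in> FS" and q: "q \<in> FS" and r: "r \<in> FS" and s: "s \<in> FS" by blast
    show "Phi (tn_mult g h) = tn_mult (Phi g) (Phi h)"
      using gh p q r s by (simp add: C.tn_mult_tau D.tn_mult_tau P_tau f_FS C.br_FS f_br)
  qed
qed

lemma P_unit: "Phi tn_unit = tn_unit"
proof -
  have "Phi tn_unit = C.SW C.kk (\<lambda>k1 k2. Phi (tau br k1 k2))"
    unfolding C.unit_SW by (rule C.SW_map[OF C.sTN P_lin C.kk(1)]) (rule C.tau_TN)
  also have "\<dots> = C.SW C.kk (\<lambda>k1 k2. tau br' (f k1) (f k2))"
    by (rule C.SW_cong[OF C.kk(1)]) (simp add: P_tau)
  also have "\<dots> = tn_unit"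
  proof (rule D.TN_eqI[OF _ D.unit_TN])
    show "C.SW C.kk (\<lambda>k1 k2. tau br' (f k1) (f k2)) \<in> D.TN"
      by (rule C.SW_mem[OF D.sTN C.kk(1)]) (simp add: D.tau_TN f_FS)
    fix d :: "'b \<Rightarrow> 'k" assume d: "d \<in> FS"
    have "app (C.SW C.kk (\<lambda>k1 k2. tau br' (f k1) (f k2))) d = C.SW C.kk (\<lambda>k1 k2. br' d (f k1) (f k2))"
      unfolding C.app_SW by (rule C.SW_cong[OF C.kk(1)]) (simp add: D.tau_app d)
    also have "\<dots> = d" by (rule fkk[OF d])
    finally show "app (C.SW C.kk (\<lambda>k1 k2. tau br' (f k1) (f k2))) d = app tn_unit d"
      by (simp add: tn_unit_def app_end_of d)
  qed
  finally show ?thesis .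
qed

lemma P_eT: "a \<in> C.TN \<Longrightarrow> D.eTc (Phi a) = C.eTc a"
proof -
  assume a: "a \<in> C.TN"
  show ?thesis
  proof (rule linf_eq_span[of C.gens "\<lambda>a. D.eTc (Phi a)" C.eTc, folded C.TN_span, OF _ C.linf_eTc _ a])
    show "linf C.TN (\<lambda>a. D.eTc (Phi a))" by (rule linf_compose[OF P_lin _ D.linf_eTc]) (rule P_TN)
    fix x assume "x \<in> C.gens"
    then obtain p q where x: "x = tau br p q" "p \<in> FS" "q \<in> FS" by blast
    then show "D.eTc (Phi x) = C.eTc x" by (simp add: P_tau D.eTc_tau C.eTc_tau f_FS f_ep)
  qed
qed

lemma P_DT: "a \<in> C.TN \<Longrightarrow> trep C.TN C.TN (C.DTc a) ps \<Longrightarrow>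
   D.DTc (Phi a) = sum_list (map (\<lambda>(x,y). tens (Phi x) (Phi y)) ps)"
proof -
  assume a: "a \<in> C.TN" and ps: "trep C.TN C.TN (C.DTc a) ps"
  have "sum_list (map (\<lambda>(x,y). tens (Phi x) (Phi y)) ps) = D.DTc (Phi a)"
  proof (rule C.allrep_TN[OF _ _ _ a ps])
    show "bil C.TN C.TN (\<lambda>x y. tens (Phi x) (Phi y))" by (intro bilI lin_tens_l lin_tens_r P_lin)
    show "lin C.TN (\<lambda>a. D.DTc (Phi a))" by (rule lin_compose[OF P_lin _ D.lin_DTc]) (rule P_TN)
    fix p q :: "'a \<Rightarrow> 'k" assume p: "p \<in> FS" and q: "q \<in> FS"
    have "D.DTc (Phi (tau br p q)) = D.DTc (tau br' (f p) (f q))" by (simp add: P_tau p q)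
    also have "\<dots> = sum_list (map (\<lambda>(a1,a2). sum_list (map (\<lambda>(b1,b2).
              tens (tau br' a2 b1) (tau br' a1 b2)) (map (\<lambda>(u,w). (f u, f w)) (C.sw q)))) (map (\<lambda>(u,w). (f u, f w)) (C.sw p)))"
      by (rule D.DTc_tau[OF f_FS[OF p] f_FS[OF q] f_rep[OF p C.sw_rep[OF p]] f_rep[OF q C.sw_rep[OF q]]])
    also have "\<dots> = C.SW p (\<lambda>a1 a2. C.SW q (\<lambda>b1 b2. tens (Phi (tau br a2 b1)) (Phi (tau br a1 b2))))"
    proof -
      have "C.SW p (\<lambda>a1 a2. C.SW q (\<lambda>b1 b2. tens (Phi (tau br a2 b1)) (Phi (tau br a1 b2))))
         = C.SW p (\<lambda>a1 a2. C.SW q (\<lambda>b1 b2. tens (tau br' (f a2) (f b1)) (tau br' (f a1) (f b2))))"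
        by (intro C.SW_cong[OF p] C.SW_cong[OF q]) (simp add: P_tau)
      then show ?thesis by (simp add: C.SW_def case_prod_unfold o_def)
    qed
    finally show "C.SW p (\<lambda>a1 a2. C.SW q (\<lambda>b1 b2. tens (Phi (tau br a2 b1)) (Phi (tau br a1 b2)))) = D.DTc (Phi (tau br p q))" ..
  qed
  then show ?thesis by simp
qed

lemma P_bialg_c: "bialg_map C.TN tn_mult tn_unit C.DTc C.eTc D.TN tn_mult tn_unit D.DTc D.eTc Phi"
  unfolding bialg_map_def
  using P_lin P_TN P_mult P_unit P_eT P_DT by blast

end
end


context hmorph begin

lemma morph_theta:
  assumes G: "grunspan Dl ep br \<theta>" and G': "grunspan Dl' ep' br' \<theta>'"
    and a: "a \<in> FS" and b: "b \<in> FS" and d: "d \<in> FS"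
  shows "br' d (f b) (f (\<theta> a)) = br' d (f b) (\<theta>' (f a))"
proof -
  note kk = C.kk(1)
  have ta: "\<theta> a \<in> FS" by (rule C.th_FS[OF G a])
  have fta: "\<theta>' (f a) \<in> FS" by (rule D.th_FS[OF G' f_FS[OF a]])
  have R: "br' d (f b) (\<theta>' (f a)) = C.SW C.kk (\<lambda>k1 k2. br' d (f (br k1 a b)) (f k2))"
  proof -
    have "br' d (f b) (\<theta>' (f a)) = C.SW C.kk (\<lambda>k1 k2. br' (br' d (f b) (\<theta>' (f a))) (f k1) (f k2))"
      by (rule fkk[symmetric]) (simp add: D.br_FS d f_FS b fta)
    also have "\<dots> = C.SW C.kk (\<lambda>k1 k2. br' d (f (br k1 a b)) (f k2))"
      by (rule C.SW_cong[OF kk]) (simp add: D.gr[OF G'] d f_FS a b f_br)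
    finally show ?thesis .
  qed
  have inner: "f (br g2 b (\<theta> a)) = C.SW C.kk (\<lambda>k1 k2. br' (f g2) (f (br k1 a b)) (f k2))" if g2: "g2 \<in> FS" for g2
  proof -
    have "br g2 b (\<theta> a) = C.SW C.kk (\<lambda>k1 k2. br (br g2 b (\<theta> a)) k1 k2)"
      by (rule C.SW_SW_kk[symmetric]) (simp add: C.br_FS g2 b ta)
    also have "\<dots> = C.SW C.kk (\<lambda>k1 k2. br g2 (br k1 a b) k2)"
      by (rule C.SW_cong[OF kk]) (simp add: C.gr[OF G] g2 a b)
    finally have "f (br g2 b (\<theta> a)) = f (C.SW C.kk (\<lambda>k1 k2. br g2 (br k1 a b) k2))" by simp
    also have "\<dots> = C.SW C.kk (\<lambda>k1 k2. f (br g2 (br k1 a b) k2))"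
      by (rule C.SW_map[OF C.sFS f_lin kk]) (simp add: C.br_FS g2 a b)
    also have "\<dots> = C.SW C.kk (\<lambda>k1 k2. br' (f g2) (f (br k1 a b)) (f k2))"
      by (rule C.SW_cong[OF kk]) (simp add: f_br C.br_FS g2 a b)
    finally show ?thesis .
  qed
  have "br' d (f b) (f (\<theta> a)) = br' (C.SW C.kk (\<lambda>g1 g2. br' d (f g1) (f g2))) (f b) (f (\<theta> a))"
    by (simp add: fkk d)
  also have "\<dots> = C.SW C.kk (\<lambda>g1 g2. br' (br' d (f g1) (f g2)) (f b) (f (\<theta> a)))"
    by (rule C.SW_map[OF D.sFS D.br_lin1 kk]) (auto intro: D.br_FS f_FS d b ta)
  also have "\<dots> = C.SW C.kk (\<lambda>g1 g2. C.SW C.kk (\<lambda>k1 k2. br' (br' d (f g1) (f g2)) (f (br k1 a b)) (f k2)))"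
  proof (rule C.SW_cong[OF kk])
    fix g1 g2 :: "'a \<Rightarrow> 'k" assume g1: "g1 \<in> FS" and g2: "g2 \<in> FS"
    have "br' (br' d (f g1) (f g2)) (f b) (f (\<theta> a)) = br' d (f g1) (f (br g2 b (\<theta> a)))"
      by (simp add: D.br_assoc d f_FS g1 g2 b ta f_br)
    also have "\<dots> = br' d (f g1) (C.SW C.kk (\<lambda>k1 k2. br' (f g2) (f (br k1 a b)) (f k2)))"
      by (simp add: inner g2)
    also have "\<dots> = C.SW C.kk (\<lambda>k1 k2. br' d (f g1) (br' (f g2) (f (br k1 a b)) (f k2)))"
      by (rule C.SW_map[OF D.sFS D.br_lin3[OF d f_FS[OF g1]] kk]) (auto intro: D.br_FS f_FS g2 C.br_FS a b)
    also have "\<dots> = C.SW C.kk (\<lambda>k1 k2. br' (br' d (f g1) (f g2)) (f (br k1 a b)) (f k2))"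
      by (rule C.SW_cong[OF kk]) (simp add: D.br_assoc d f_FS g1 g2 C.br_FS a b)
    finally show "br' (br' d (f g1) (f g2)) (f b) (f (\<theta> a))
        = C.SW C.kk (\<lambda>k1 k2. br' (br' d (f g1) (f g2)) (f (br k1 a b)) (f k2))" .
  qed
  also have "\<dots> = C.SW C.kk (\<lambda>k1 k2. C.SW C.kk (\<lambda>g1 g2. br' (br' d (f g1) (f g2)) (f (br k1 a b)) (f k2)))"
    by (rule C.SW_swap)
  also have "\<dots> = C.SW C.kk (\<lambda>k1 k2. br' (C.SW C.kk (\<lambda>g1 g2. br' d (f g1) (f g2))) (f (br k1 a b)) (f k2))"
  proof (rule C.SW_cong[OF kk])
    fix k1 k2 :: "'a \<Rightarrow> 'k" assume k1: "k1 \<in> FS" and k2: "k2 \<in> FS"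
    show "C.SW C.kk (\<lambda>g1 g2. br' (br' d (f g1) (f g2)) (f (br k1 a b)) (f k2))
       = br' (C.SW C.kk (\<lambda>g1 g2. br' d (f g1) (f g2))) (f (br k1 a b)) (f k2)"
      by (rule C.SW_map[OF D.sFS D.br_lin1 kk, symmetric]) (auto intro: D.br_FS f_FS d k1 k2 C.br_FS a b)
  qed
  also have "\<dots> = C.SW C.kk (\<lambda>k1 k2. br' d (f (br k1 a b)) (f k2))" by (simp add: fkk d)
  finally show ?thesis using R by simp
qed

context fixes Phi assumes P: "tn_map br br' f Phi"
begin

lemma P_S:
  assumes G: "grunspan Dl ep br \<theta>" and G': "grunspan Dl' ep' br' \<theta>'"
    and S: "tn_antipode br \<theta> S" and S': "tn_antipode br' \<theta>' S'" and t: "t \<in> C.TN"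
  shows "Phi (S t) = S' (Phi t)"
proof -
  have Sl: "lin C.TN S" and St: "\<And>a b. a \<in> FS \<Longrightarrow> b \<in> FS \<Longrightarrow> S (tau br a b) = tau br b (\<theta> a)"
    using S unfolding tn_antipode_def by blast+
  have S'l: "lin D.TN S'" and S't: "\<And>a b. a \<in> FS \<Longrightarrow> b \<in> FS \<Longrightarrow> S' (tau br' a b) = tau br' b (\<theta>' a)"
    using S' unfolding tn_antipode_def by blast+
  have SSc: "S x = C.Sc x" if "x \<in> C.TN" for x
  proof (rule lin_eq_span[of C.gens S C.Sc x, folded C.TN_span, OF Sl C.lin_Sc _ that])
    fix y assume "y \<in> C.gens"
    then obtain a b where "y = tau br a b" "a \<in> FS" "b \<in> FS" by blast
    then show "S y = C.Sc y" by (simp add: St C.Sc_tau[OF G])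
  qed
  have S'Sc: "S' x = D.Sc x" if "x \<in> D.TN" for x
  proof (rule lin_eq_span[of D.gens S' D.Sc x, folded D.TN_span, OF S'l D.lin_Sc _ that])
    fix y assume "y \<in> D.gens"
    then obtain a b where "y = tau br' a b" "a \<in> FS" "b \<in> FS" by blast
    then show "S' y = D.Sc y" by (simp add: S't D.Sc_tau[OF G'])
  qed
  have "Phi (C.Sc t) = D.Sc (Phi t)"
  proof (rule lin_eq_span[of C.gens "\<lambda>t. Phi (C.Sc t)" "\<lambda>t. D.Sc (Phi t)" t, folded C.TN_span, OF _ _ _ t])
    show "lin C.TN (\<lambda>t. Phi (C.Sc t))" by (rule lin_compose[OF C.lin_Sc _ P_lin[OF P]]) (rule C.Sc_TN[OF G])
    show "lin C.TN (\<lambda>t. D.Sc (Phi t))" by (rule lin_compose[OF P_lin[OF P] _ D.lin_Sc]) (rule P_TN[OF P])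
    fix y assume "y \<in> C.gens"
    then obtain a b where y: "y = tau br a b" "a \<in> FS" "b \<in> FS" by blast
    have "Phi (C.Sc y) = tau br' (f b) (f (\<theta> a))" using y by (simp add: C.Sc_tau[OF G] P_tau[OF P] C.th_FS[OF G])
    also have "\<dots> = tau br' (f b) (\<theta>' (f a))"
      unfolding tau_def by (rule end_of_cong) (rule morph_theta[OF G G' y(2,3)])
    also have "\<dots> = D.Sc (Phi y)" using y by (simp add: D.Sc_tau[OF G'] P_tau[OF P] f_FS)
    finally show "Phi (C.Sc y) = D.Sc (Phi y)" .
  qed
  then show ?thesis using SSc[OF t] S'Sc[OF P_TN[OF P t]] by simp
qed

end
end

lemma heap_morph_comp:
  fixes f :: "('a \<Rightarrow> 'k::field) \<Rightarrow> ('b \<Rightarrow> 'k)" and g :: "('b \<Rightarrow> 'k) \<Rightarrow> ('c \<Rightarrow> 'k)"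
  assumes H1: "hopf_heap Dl ep br" and H2: "hopf_heap Dl' ep' br'" and H3: "hopf_heap Dl'' ep'' br''"
    and f: "heap_morph Dl ep br Dl' ep' br' f" and g: "heap_morph Dl' ep' br' Dl'' ep'' br'' g"
  shows "heap_morph Dl ep br Dl'' ep'' br'' (g \<circ> f)"
proof -
  interpret F: hmorph Dl ep br Dl' ep' br' f using H1 H2 f by (simp add: hmorph_def hheap_def hmorph_axioms_def)
  interpret G: hmorph Dl' ep' br' Dl'' ep'' br'' g using H2 H3 g by (simp add: hmorph_def hheap_def hmorph_axioms_def)
  show ?thesis unfolding heap_morph_def coalg_map_def
  proof (intro conjI ballI allI impI)
    show "lin FS (g \<circ> f)" unfolding comp_def by (rule lin_compose[OF F.f_lin _ G.f_lin]) (rule F.f_FS)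
    show "(g \<circ> f) ` FS \<subseteq> FS" by (auto intro: F.f_FS G.f_FS)
    fix a :: "'a \<Rightarrow> 'k" assume a: "a \<in> FS"
    show "ep'' ((g \<circ> f) a) = ep a" by (simp add: G.f_ep F.f_FS F.f_ep a)
    { fix ps assume ps: "trep FS FS (Dl a) ps"
      show "Dl'' ((g \<circ> f) a) = sum_list (map (\<lambda>(u,w). tens ((g \<circ> f) u) ((g \<circ> f) w)) ps)"
        using G.f_Dl[OF F.f_FS[OF a] F.f_rep[OF a ps]] by (simp add: case_prod_unfold o_def) }
    fix b c :: "'a \<Rightarrow> 'k" assume b: "b \<in> FS" and c: "c \<in> FS"
    show "(g \<circ> f) (br a b c) = br'' ((g \<circ> f) a) ((g \<circ> f) b) ((g \<circ> f) c)"
      by (simp add: F.f_br G.f_br F.f_FS a b c)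
  qed
qed


context hheap begin
lemma tn_map_id: "tn_map br br (\<lambda>x. x) Phi \<Longrightarrow> t \<in> TN \<Longrightarrow> Phi t = t"
proof -
  assume P: "tn_map br br (\<lambda>x. x) Phi" and t: "t \<in> TN"
  have l: "lin TN Phi" and g: "\<And>a b. a \<in> FS \<Longrightarrow> b \<in> FS \<Longrightarrow> Phi (tau br a b) = tau br a b"
    using P unfolding tn_map_def by blast+
  show ?thesis
  proof (rule lin_eq_span[of gens Phi "\<lambda>x. x" t, folded TN_span, OF l lin_idI _ t])
    fix x assume "x \<in> gens"
    then show "Phi x = x" using g by blast
  qed
qed
end

lemma tn_map_comp:
  fixes f :: "('a \<Rightarrow> 'k::field) \<Rightarrow> ('b \<Rightarrow> 'k)" and g :: "('b \<Rightarrow> 'k) \<Rightarrow> ('c \<Rightarrow> 'k)"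
  assumes H1: "hopf_heap Dl ep br" and H2: "hopf_heap Dl' ep' br'" and H3: "hopf_heap Dl'' ep'' br''"
    and f: "heap_morph Dl ep br Dl' ep' br' f" and g: "heap_morph Dl' ep' br' Dl'' ep'' br'' g"
    and Pf: "tn_map br br' f Pf" and Pg: "tn_map br' br'' g Pg" and Pgf: "tn_map br br'' (g \<circ> f) Pgf"
    and t: "t \<in> Tn br"
  shows "Pgf t = Pg (Pf t)"
proof -
  interpret F: hmorph Dl ep br Dl' ep' br' f using H1 H2 f by (simp add: hmorph_def hheap_def hmorph_axioms_def)
  interpret G: hmorph Dl' ep' br' Dl'' ep'' br'' g using H2 H3 g by (simp add: hmorph_def hheap_def hmorph_axioms_def)
  show ?thesis
  proof (rule lin_eq_span[of F.C.gens Pgf "\<lambda>t. Pg (Pf t)" t, folded F.C.TN_span, OF _ _ _ t])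
    show "lin F.C.TN Pgf" using Pgf unfolding tn_map_def by blast
    show "lin F.C.TN (\<lambda>t. Pg (Pf t))"
      by (rule lin_compose[OF F.P_lin[OF Pf] _ G.P_lin[OF Pg]]) (rule F.P_TN[OF Pf])
    fix x assume "x \<in> F.C.gens"
    then obtain a b where x: "x = tau br a b" "a \<in> FS" "b \<in> FS" by blast
    then show "Pgf x = Pg (Pf x)"
      using F.P_tau[OF Pf] G.P_tau[OF Pg] Pgf F.f_FS unfolding tn_map_def by simp
  qed
qed

theorem mainTheorem3:
  fixes Dl :: "('a \<Rightarrow> 'k::field) \<Rightarrow> ('a \<times> 'a \<Rightarrow> 'k)"
    and ep :: "('a \<Rightarrow> 'k) \<Rightarrow> 'k"
    and br :: "('a \<Rightarrow> 'k) \<Rightarrow> ('a \<Rightarrow> 'k) \<Rightarrow> ('a \<Rightarrow> 'k) \<Rightarrow> ('a \<Rightarrow> 'k)"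
  assumes heap: "hopf_heap Dl ep br"
  shows
   \<comment> \<open>(1) multiplication rule and bialgebra structure\<close>
   "(\<forall>a\<in>FS. \<forall>b\<in>FS. \<forall>c\<in>FS. \<forall>d\<in>FS. tn_mult (tau br a b) (tau br c d) = tau br a (br b c d))
    \<and> (\<exists>DT eT. tn_struct br Dl ep DT eT \<and> bialgebra (Tn br) tn_mult tn_unit DT eT)
    \<and> (\<forall>DT eT. tn_struct br Dl ep DT eT \<longrightarrow> bialgebra (Tn br) tn_mult tn_unit DT eT)
   \<comment> \<open>(2) Hopf algebra in presence of a Grunspan map\<close>
    \<and> (\<forall>\<theta> DT eT. grunspan Dl ep br \<theta> \<longrightarrow> tn_struct br Dl ep DT eT \<longrightarrow>
         (\<exists>S. tn_antipode br \<theta> S \<and> hopf_algebra (Tn br) tn_mult tn_unit DT eT S))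
   \<comment> \<open>(3) functoriality on morphisms\<close>
    \<and> (\<forall>(Dl' :: ('b \<Rightarrow> 'k) \<Rightarrow> ('b \<times> 'b \<Rightarrow> 'k)) ep' br' f.
         hopf_heap Dl' ep' br' \<longrightarrow> heap_morph Dl ep br Dl' ep' br' f \<longrightarrow>
           (\<exists>\<Phi>. tn_map br br' f \<Phi>) \<and>
           (\<forall>\<Phi> DT eT DT' eT'. tn_map br br' f \<Phi> \<longrightarrow>
              tn_struct br Dl ep DT eT \<longrightarrow> tn_struct br' Dl' ep' DT' eT' \<longrightarrow>
                bialg_map (Tn br) tn_mult tn_unit DT eT (Tn br') tn_mult tn_unit DT' eT' \<Phi> \<and>
                (\<forall>\<theta> \<theta>' S S'. grunspan Dl ep br \<theta> \<longrightarrow> grunspan Dl' ep' br' \<theta>' \<longrightarrow>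
                   tn_antipode br \<theta> S \<longrightarrow> tn_antipode br' \<theta>' S' \<longrightarrow>
                   (\<forall>t\<in>Tn br. \<Phi> (S t) = S' (\<Phi> t)))))
   \<comment> \<open>(4) functor laws\<close>
    \<and> (\<forall>\<Phi>. tn_map br br (\<lambda>x. x) \<Phi> \<longrightarrow> (\<forall>t\<in>Tn br. \<Phi> t = t))
    \<and> (\<forall>(Dl' :: ('b \<Rightarrow> 'k) \<Rightarrow> ('b \<times> 'b \<Rightarrow> 'k)) ep' br' (Dl'' :: ('c \<Rightarrow> 'k) \<Rightarrow> ('c \<times> 'c \<Rightarrow> 'k)) ep'' br'' f g.
         hopf_heap Dl' ep' br' \<longrightarrow> hopf_heap Dl'' ep'' br'' \<longrightarrow>
         heap_morph Dl ep br Dl' ep' br' f \<longrightarrow> heap_morph Dl' ep' br' Dl'' ep'' br'' g \<longrightarrow>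
           heap_morph Dl ep br Dl'' ep'' br'' (g \<circ> f) \<and>
           (\<forall>\<Phi>f \<Phi>g \<Phi>gf. tn_map br br' f \<Phi>f \<longrightarrow> tn_map br' br'' g \<Phi>g \<longrightarrow> tn_map br br'' (g \<circ> f) \<Phi>gf \<longrightarrow>
              (\<forall>t\<in>Tn br. \<Phi>gf t = \<Phi>g (\<Phi>f t))))"
proof -
  interpret C: hheap Dl ep br using heap by (simp add: hheap_def)
  have p1: "\<forall>a\<in>FS. \<forall>b\<in>FS. \<forall>c\<in>FS. \<forall>d\<in>FS. tn_mult (tau br a b) (tau br c d) = tau br a (br b c d)"
    using C.tn_mult_tau by blast
  have p2: "\<exists>DT eT. tn_struct br Dl ep DT eT \<and> bialgebra (Tn br) tn_mult tn_unit DT eT"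
    using C.tn_struct_c C.bialg_TN by blast
  have p3: "\<forall>DT eT. tn_struct br Dl ep DT eT \<longrightarrow> bialgebra (Tn br) tn_mult tn_unit DT eT"
    using C.bialg_struct by blast
  have p4: "\<forall>\<theta> DT eT. grunspan Dl ep br \<theta> \<longrightarrow> tn_struct br Dl ep DT eT \<longrightarrow>
         (\<exists>S. tn_antipode br \<theta> S \<and> hopf_algebra (Tn br) tn_mult tn_unit DT eT S)"
  proof (intro allI impI)
    fix \<theta> DT eT assume G: "grunspan Dl ep br \<theta>" and T: "tn_struct br Dl ep DT eT"
    have "hopf_algebra (Tn br) tn_mult tn_unit DT eT C.Sc"
      by (rule hopf_transfer[OF C.hopf_TN[OF G]]) (simp_all add: C.tn_struct_eq[OF T])
    then show "\<exists>S. tn_antipode br \<theta> S \<and> hopf_algebra (Tn br) tn_mult tn_unit DT eT S"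
      using C.antipode_Sc[OF G] by blast
  qed
  have p5: "\<forall>(Dl' :: ('b \<Rightarrow> 'k) \<Rightarrow> ('b \<times> 'b \<Rightarrow> 'k)) ep' br' f.
         hopf_heap Dl' ep' br' \<longrightarrow> heap_morph Dl ep br Dl' ep' br' f \<longrightarrow>
           (\<exists>\<Phi>. tn_map br br' f \<Phi>) \<and>
           (\<forall>\<Phi> DT eT DT' eT'. tn_map br br' f \<Phi> \<longrightarrow>
              tn_struct br Dl ep DT eT \<longrightarrow> tn_struct br' Dl' ep' DT' eT' \<longrightarrow>
                bialg_map (Tn br) tn_mult tn_unit DT eT (Tn br') tn_mult tn_unit DT' eT' \<Phi> \<and>
                (\<forall>\<theta> \<theta>' S S'. grunspan Dl ep br \<theta> \<longrightarrow> grunspan Dl' ep' br' \<theta>' \<longrightarrow>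
                   tn_antipode br \<theta> S \<longrightarrow> tn_antipode br' \<theta>' S' \<longrightarrow>
                   (\<forall>t\<in>Tn br. \<Phi> (S t) = S' (\<Phi> t))))"
  proof (intro allI impI)
    fix Dl' :: "('b \<Rightarrow> 'k) \<Rightarrow> ('b \<times> 'b \<Rightarrow> 'k)" and ep' br' f
    assume H': "hopf_heap Dl' ep' br'" and f: "heap_morph Dl ep br Dl' ep' br' f"
    interpret M: hmorph Dl ep br Dl' ep' br' f using heap H' f by (simp add: hmorph_def hheap_def hmorph_axioms_def)
    have e: "\<exists>\<Phi>. tn_map br br' f \<Phi>" using M.tn_map_Phic by blast
    have r: "\<forall>\<Phi> DT eT DT' eT'. tn_map br br' f \<Phi> \<longrightarrow>
              tn_struct br Dl ep DT eT \<longrightarrow> tn_struct br' Dl' ep' DT' eT' \<longrightarrow>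
                bialg_map (Tn br) tn_mult tn_unit DT eT (Tn br') tn_mult tn_unit DT' eT' \<Phi> \<and>
                (\<forall>\<theta> \<theta>' S S'. grunspan Dl ep br \<theta> \<longrightarrow> grunspan Dl' ep' br' \<theta>' \<longrightarrow>
                   tn_antipode br \<theta> S \<longrightarrow> tn_antipode br' \<theta>' S' \<longrightarrow>
                   (\<forall>t\<in>Tn br. \<Phi> (S t) = S' (\<Phi> t)))"
    proof (intro allI impI)
      fix \<Phi> DT eT DT' eT'
      assume P: "tn_map br br' f \<Phi>" and T: "tn_struct br Dl ep DT eT" and T': "tn_struct br' Dl' ep' DT' eT'"
      have b: "bialg_map (Tn br) tn_mult tn_unit DT eT (Tn br') tn_mult tn_unit DT' eT' \<Phi>"
        by (rule bialg_map_transfer[OF M.P_bialg_c[OF P]])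
          (simp_all add: C.tn_struct_eq[OF T] M.D.tn_struct_eq[OF T'])
      have s: "\<forall>\<theta> \<theta>' S S'. grunspan Dl ep br \<theta> \<longrightarrow> grunspan Dl' ep' br' \<theta>' \<longrightarrow>
                   tn_antipode br \<theta> S \<longrightarrow> tn_antipode br' \<theta>' S' \<longrightarrow>
                   (\<forall>t\<in>Tn br. \<Phi> (S t) = S' (\<Phi> t))"
        using M.P_S[OF P] by blast
      show "bialg_map (Tn br) tn_mult tn_unit DT eT (Tn br') tn_mult tn_unit DT' eT' \<Phi> \<and>
                (\<forall>\<theta> \<theta>' S S'. grunspan Dl ep br \<theta> \<longrightarrow> grunspan Dl' ep' br' \<theta>' \<longrightarrow>
                   tn_antipode br \<theta> S \<longrightarrow> tn_antipode br' \<theta>' S' \<longrightarrow>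
                   (\<forall>t\<in>Tn br. \<Phi> (S t) = S' (\<Phi> t)))" using b s by blast
    qed
    show "(\<exists>\<Phi>. tn_map br br' f \<Phi>) \<and> (\<forall>\<Phi> DT eT DT' eT'. tn_map br br' f \<Phi> \<longrightarrow>
              tn_struct br Dl ep DT eT \<longrightarrow> tn_struct br' Dl' ep' DT' eT' \<longrightarrow>
                bialg_map (Tn br) tn_mult tn_unit DT eT (Tn br') tn_mult tn_unit DT' eT' \<Phi> \<and>
                (\<forall>\<theta> \<theta>' S S'. grunspan Dl ep br \<theta> \<longrightarrow> grunspan Dl' ep' br' \<theta>' \<longrightarrow>
                   tn_antipode br \<theta> S \<longrightarrow> tn_antipode br' \<theta>' S' \<longrightarrow>
                   (\<forall>t\<in>Tn br. \<Phi> (S t) = S' (\<Phi> t))))" using e r by blast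
  qed
  have p6: "\<forall>\<Phi>. tn_map br br (\<lambda>x. x) \<Phi> \<longrightarrow> (\<forall>t\<in>Tn br. \<Phi> t = t)"
    using C.tn_map_id by blast
  have p7: "\<forall>(Dl' :: ('b \<Rightarrow> 'k) \<Rightarrow> ('b \<times> 'b \<Rightarrow> 'k)) ep' br' (Dl'' :: ('c \<Rightarrow> 'k) \<Rightarrow> ('c \<times> 'c \<Rightarrow> 'k)) ep'' br'' f g.
         hopf_heap Dl' ep' br' \<longrightarrow> hopf_heap Dl'' ep'' br'' \<longrightarrow>
         heap_morph Dl ep br Dl' ep' br' f \<longrightarrow> heap_morph Dl' ep' br' Dl'' ep'' br'' g \<longrightarrow>
           heap_morph Dl ep br Dl'' ep'' br'' (g \<circ> f) \<and>
           (\<forall>\<Phi>f \<Phi>g \<Phi>gf. tn_map br br' f \<Phi>f \<longrightarrow> tn_map br' br'' g \<Phi>g \<longrightarrow> tn_map br br'' (g \<circ> f) \<Phi>gf \<longrightarrow>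
              (\<forall>t\<in>Tn br. \<Phi>gf t = \<Phi>g (\<Phi>f t)))"
  proof (intro allI impI conjI ballI)
    fix Dl' :: "('b \<Rightarrow> 'k) \<Rightarrow> ('b \<times> 'b \<Rightarrow> 'k)" and ep' br' and Dl'' :: "('c \<Rightarrow> 'k) \<Rightarrow> ('c \<times> 'c \<Rightarrow> 'k)"
      and ep'' br'' f g
    assume H2: "hopf_heap Dl' ep' br'" and H3: "hopf_heap Dl'' ep'' br''"
      and f: "heap_morph Dl ep br Dl' ep' br' f" and g: "heap_morph Dl' ep' br' Dl'' ep'' br'' g"
    show "heap_morph Dl ep br Dl'' ep'' br'' (g \<circ> f)" by (rule heap_morph_comp[OF heap H2 H3 f g])
    fix Pf Pg Pgf t
    assume "tn_map br br' f Pf" "tn_map br' br'' g Pg" "tn_map br br'' (g \<circ> f) Pgf" "t \<in> Tn br"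
    then show "Pgf t = Pg (Pf t)" by (rule tn_map_comp[OF heap H2 H3 f g])
  qed
  show ?thesis using p1 p2 p3 p4 p5 p6 p7 by blast
qed


end
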